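(* Let $T$ be a $k$-IET on $I=[\ell,r)$ over the ordered alphabet $\mathcal{A}$. For every $w\in\mathcal{L}(T)$ there exists a finite sequence of steps, each a right Rauzy step $\rho$, a left Rauzy step $\lambda$, or a splitting step $\sigma$, such that the IET $\chi(T)$ obtained by applying this sequence to $T$ is the first-return map of $T$ to the cylinder $I_w$.
   Context: A $k$-IET $T$ on $[\ell,r)$ over $\mathcal{A}=\{a_1<\dots<a_k\}$ is given by a partition of $[\ell,r)$ into left-closed right-open intervals $(I_a)_{a\in\mathcal{A}}$ of positive length ordered left to right by the order of $\mathcal{A}$ and a permutation $\pi$ of $\mathcal{A}$, with $T(x)=x+\tau_a$ on $I_a$, $\tau_a=\sum_{b:\,\pi^{-1}(b)<\pi^{-1}(a)}|I_b|-\sum_{b<a}|I_b|$ (images $T(I_{\pi(a_1)}),\dots,T(I_{\pi(a_k)})$ from left to right). No minimality or regularity is assumed. Trajectories: $\Omega_T(x)=w_0w_1\cdots$ with $w_i=a$ iff $T^i(x)\in I_a$; $\mathcal{L}(T)$ is the set of finite factors of all trajectories. For $w=w_0\cdots w_{n-1}\in\mathcal{L}(T)$ the cylinder is $I_w=I_{w_0}\cap T^{-1}(I_{w_1})\cap\dots\cap T^{-(n-1)}(I_{w_{n-1}})$, with $I_\varepsilon=I$. The first-return (induced) map of $T$ to $J\subset I$ is $x\mapsto T^{\nu(x)}(x)$, $\nu(x)=\min\{n>0:T^n(x)\in J\}$. Steps, applied to a current IET $S$ on $[\ell_S,r_S)$ over an alphabet $\{c_1<\dots<c_m\}$ with permutation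 $\pi_S$: the right Rauzy step $\rho$ (defined when $\pi_S(c_m)\neq c_m$) replaces $S$ by its induced map on $[\ell_S,r_S')$, where $r_S'=r_S-\min(|I_{c_m}|,|I_{\pi_S(c_m)}|)$ is the rightmost formal discontinuity of $S$ or $S^{-1}$; the left Rauzy step $\lambda$ (defined when $\pi_S(c_1)\neq c_1$) replaces $S$ by its induced map on $[\ell_S',r_S)$ with $\ell_S'=\ell_S+\min(|I_{c_1}|,|I_{\pi_S(c_1)}|)$ (when the two lengths are equal, the resulting IET has one fewer letter); the splitting step $\sigma_{\mathcal{B}}$, for a proper nonempty sub-alphabet $\mathcal{B}$ whose intervals form an interval $I_{\mathcal{B}}$ with $S(I_{\mathcal{B}})=I_{\mathcal{B}}$, replaces $S$ by one of $S|_{I_{\mathcal{B}}}$ or the restriction of $S$ to the complement of $I_{\mathcal{B}}$ (when this complement is disconnected it is made into an interval by translating its right part left by $|I_{\mathcal{B}}|$; points are identified with the original points of $I$ through this translation). *)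

theory Defs
  imports Complex_Main
begin

(* An IET is represented by its left endpoint, the list of letters in the
   left-to-right order of the intervals I_a (this list IS the order of the
   alphabet a_1 < ... < a_k), the list of letters in the left-to-right order of
   the images (i.e. [pi(a_1), ..., pi(a_k)]), and the lengths. *)
record 'a iet =
  iet_left :: real
  iet_top  :: "'a list"
  iet_bot  :: "'a list"
  iet_len  :: "'a \<Rightarrow> real"

definition iet_wf :: "'a iet \<Rightarrow> bool" where
  "iet_wf S \<longleftrightarrow> iet_top S \<noteq> [] \<and> distinct (iet_top S) \<and> distinct (iet_bot S)
     \<and> set (iet_bot S) = set (iet_top S) \<and> (\<forall>a\<in>set (iet_top S). iet_len S a > 0)"

definition iet_right :: "'a iet \<Rightarrow> real" where
  "iet_right S = iet_left S + sum_list (map (iet_len S) (iet_top S))"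

definition iet_dom :: "'a iet \<Rightarrow> real set" where
  "iet_dom S = {iet_left S ..< iet_right S}"

definition off_top :: "'a iet \<Rightarrow> 'a \<Rightarrow> real" where
  "off_top S a = sum_list (map (iet_len S) (takeWhile (\<lambda>b. b \<noteq> a) (iet_top S)))"

definition off_bot :: "'a iet \<Rightarrow> 'a \<Rightarrow> real" where
  "off_bot S a = sum_list (map (iet_len S) (takeWhile (\<lambda>b. b \<noteq> a) (iet_bot S)))"

definition ivl :: "'a iet \<Rightarrow> 'a \<Rightarrow> real set" where
  "ivl S a = {iet_left S + off_top S a ..< iet_left S + off_top S a + iet_len S a}"

definition iet_map :: "'a iet \<Rightarrow> real \<Rightarrow> real" where
  "iet_map S x = (case find (\<lambda>a. x \<in> ivl S a) (iet_top S) of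
                    None \<Rightarrow> x
                  | Some a \<Rightarrow> x + off_bot S a - off_top S a)"

definition iet_lang :: "'a iet \<Rightarrow> 'a list set" where
  "iet_lang S = {w. \<exists>x\<in>iet_dom S. \<exists>i. \<forall>j<length w.
                    (iet_map S ^^ (i + j)) x \<in> ivl S (w ! j) \<and> w ! j \<in> set (iet_top S)}"

definition cyl :: "'a iet \<Rightarrow> 'a list \<Rightarrow> real set" where
  "cyl S w = {x \<in> iet_dom S. \<forall>j<length w. (iet_map S ^^ j) x \<in> ivl S (w ! j)}"

definition return_time :: "(real \<Rightarrow> real) \<Rightarrow> real set \<Rightarrow> real \<Rightarrow> nat" where
  "return_time f J x = (LEAST n. n > 0 \<and> (f ^^ n) x \<in> J)"

definition first_return :: "(real \<Rightarrow> real) \<Rightarrow> real set \<Rightarrow> real \<Rightarrow> real" where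
  "first_return f J x = (f ^^ return_time f J x) x"

definition ins_before :: "'a \<Rightarrow> 'a \<Rightarrow> 'a list \<Rightarrow> 'a list" where
  "ins_before b a xs = concat (map (\<lambda>c. if c = a then [b, a] else [c]) xs)"

definition ins_after :: "'a \<Rightarrow> 'a \<Rightarrow> 'a list \<Rightarrow> 'a list" where
  "ins_after b a xs = concat (map (\<lambda>c. if c = a then [a, b] else [c]) xs)"

definition repl :: "'a \<Rightarrow> 'a \<Rightarrow> 'a list \<Rightarrow> 'a list" where
  "repl a b xs = map (\<lambda>c. if c = a then b else c) xs"

definition rauzy_right :: "'a iet \<Rightarrow> 'a iet" where
  "rauzy_right S = (let a = last (iet_top S); b = last (iet_bot S); L = iet_len S in
     if L a > L b then
       S\<lparr> iet_bot := ins_after b a (butlast (iet_bot S)), iet_len := L(a := L a - L b) \<rparr>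
     else if L b > L a then
       S\<lparr> iet_top := ins_after a b (butlast (iet_top S)), iet_len := L(b := L b - L a) \<rparr>
     else
       S\<lparr> iet_top := butlast (iet_top S), iet_bot := repl a b (butlast (iet_bot S)) \<rparr>)"

definition rauzy_left :: "'a iet \<Rightarrow> 'a iet" where
  "rauzy_left S = (let a = hd (iet_top S); b = hd (iet_bot S); L = iet_len S in
     if L a > L b then
       S\<lparr> iet_left := iet_left S + L b,
          iet_bot := ins_before b a (tl (iet_bot S)), iet_len := L(a := L a - L b) \<rparr>
     else if L b > L a then
       S\<lparr> iet_left := iet_left S + L a,
          iet_top := ins_before a b (tl (iet_top S)), iet_len := L(b := L b - L a) \<rparr>
     else
       S\<lparr> iet_left := iet_left S + L a,
          iet_top := tl (iet_top S), iet_bot := repl a b (tl (iet_bot S)) \<rparr>)"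

(* A state is a current IET together with the identification of its points
   with points of the original interval I. *)
type_synonym 'a state = "'a iet \<times> (real \<Rightarrow> real)"

inductive iet_step :: "'a state \<Rightarrow> 'a state \<Rightarrow> bool" where
  right: "last (iet_top S) \<noteq> last (iet_bot S) \<Longrightarrow> iet_step (S, e) (rauzy_right S, e)"
| left: "hd (iet_top S) \<noteq> hd (iet_bot S) \<Longrightarrow> iet_step (S, e) (rauzy_left S, e)"
| split_in: "\<lbrakk> iet_top S = p @ q @ s; q \<noteq> []; p @ s \<noteq> [];
     lB = iet_left S + sum_list (map (iet_len S) p);
     rB = lB + sum_list (map (iet_len S) q);
     iet_map S ` {lB..<rB} = {lB..<rB} \<rbrakk> \<Longrightarrow>
     iet_step (S, e)
       (S\<lparr> iet_left := lB, iet_top := q, iet_bot := filter (\<lambda>c. c \<in> set q) (iet_bot S) \<rparr>, e)"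
| split_out: "\<lbrakk> iet_top S = p @ q @ s; q \<noteq> []; p @ s \<noteq> [];
     lB = iet_left S + sum_list (map (iet_len S) p);
     rB = lB + sum_list (map (iet_len S) q);
     iet_map S ` {lB..<rB} = {lB..<rB} \<rbrakk> \<Longrightarrow>
     iet_step (S, e)
       (S\<lparr> iet_top := p @ s, iet_bot := filter (\<lambda>c. c \<notin> set q) (iet_bot S) \<rparr>,
        (\<lambda>x. if x < lB then e x else e (x + (rB - lB))))"

definition iet_reach :: "'a state \<Rightarrow> 'a state \<Rightarrow> bool" where
  "iet_reach = iet_step\<^sup>*\<^sup>*"

end

theory Submission
  imports Defs
begin

abbreviation sl :: "('a \<Rightarrow> real) \<Rightarrow> 'a list \<Rightarrow> real" where
  "sl L xs \<equiv> sum_list (map L xs)"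

abbreviation tw :: "'a \<Rightarrow> 'a list \<Rightarrow> 'a list" where
  "tw c xs \<equiv> takeWhile (\<lambda>b. b \<noteq> c) xs"

lemma tw_split: "c \<notin> set as \<Longrightarrow> tw c (as @ c # bs) = as"
  by (induction as) auto

lemma tw_app1: "c \<in> set xs \<Longrightarrow> tw c (xs @ ys) = tw c xs"
  by (induction xs) auto

lemma tw_app2: "c \<notin> set xs \<Longrightarrow> tw c (xs @ ys) = xs @ tw c ys"
  by (induction xs) auto

lemma tw_notin: "c \<notin> set xs \<Longrightarrow> tw c xs = xs"
  by (induction xs) auto

lemma sl_nonneg: "(\<forall>c\<in>set xs. L c \<ge> 0) \<Longrightarrow> sl L xs \<ge> 0"
  by (induction xs) auto

lemma sl_tw_nonneg: "(\<forall>c\<in>set xs. L c \<ge> 0) \<Longrightarrow> sl L (tw d xs) \<ge> 0"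
  by (rule sl_nonneg) (auto dest: set_takeWhileD)

lemma sl_tw_le: "(\<forall>c\<in>set xs. L c \<ge> 0) \<Longrightarrow> c \<in> set xs \<Longrightarrow> sl L (tw c xs) + L c \<le> sl L xs"
  by (induction xs) (auto simp: sl_nonneg)

lemma sl_tw_mono: "(\<forall>c\<in>set xs. L c \<ge> 0) \<Longrightarrow> c \<in> set (tw d xs) \<Longrightarrow> sl L (tw c xs) + L c \<le> sl L (tw d xs)"
  by (induction xs) (auto simp: sl_nonneg sl_tw_nonneg split: if_splits)

lemma tw_order: "c \<in> set xs \<Longrightarrow> d \<in> set xs \<Longrightarrow> c = d \<or> c \<in> set (tw d xs) \<or> d \<in> set (tw c xs)"
  by (induction xs) auto

lemma seg_disj:
  assumes "\<forall>c\<in>set xs. L c \<ge> 0" "c \<in> set xs" "d \<in> set xs" "c \<noteq> d"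
    "l + sl L (tw c xs) \<le> x" "x < l + sl L (tw c xs) + L c"
    "l + sl L (tw d xs) \<le> x" "x < l + sl L (tw d xs) + L d"
  shows False
proof -
  from tw_order[OF assms(2,3)] assms(4) have "c \<in> set (tw d xs) \<or> d \<in> set (tw c xs)" by auto
  then show False
  proof
    assume "c \<in> set (tw d xs)"
    from sl_tw_mono[OF assms(1) this] assms show False by linarith
  next
    assume "d \<in> set (tw c xs)"
    from sl_tw_mono[OF assms(1) this] assms show False by linarith
  qed
qed

lemma seg_cover:
  assumes "distinct xs" "\<forall>c\<in>set xs. L c > 0" "l \<le> x" "x < l + sl L xs"
  shows "\<exists>c\<in>set xs. l + sl L (tw c xs) \<le> x \<and> x < l + sl L (tw c xs) + L c"
  using assms
proof (induction xs arbitrary: l)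
  case Nil then show ?case by simp
next
  case (Cons a xs)
  show ?case
  proof (cases "x < l + L a")
    case True then show ?thesis using Cons.prems by (intro bexI[of _ a]) auto
  next
    case False
    then obtain c where c: "c \<in> set xs" "l + L a + sl L (tw c xs) \<le> x" "x < l + L a + sl L (tw c xs) + L c"
      using Cons.IH[of "l + L a"] Cons.prems by auto
    have "c \<noteq> a" using c Cons.prems by auto
    then show ?thesis using c by (intro bexI[of _ c]) (auto simp: algebra_simps)
  qed
qed

lemma find_unique: "c \<in> set xs \<Longrightarrow> P c \<Longrightarrow> (\<forall>d\<in>set xs. P d \<longrightarrow> d = c) \<Longrightarrow> find P xs = Some c"
proof (induction xs)
  case Nil then show ?case by simp
next
  case (Cons a xs)
  show ?case
  proof (cases "a = c")
    case True then show ?thesis using Cons.prems(2) by simp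
  next
    case False
    have np: "\<not> P a" using Cons.prems(3) False by (meson list.set_intros(1))
    have "c \<in> set xs" using Cons.prems(1) False by auto
    moreover have "\<forall>d\<in>set xs. P d \<longrightarrow> d = c" using Cons.prems(3) by (meson list.set_intros(2))
    ultimately have "find P xs = Some c" using Cons.IH Cons.prems(2) by blast
    then show ?thesis using np by simp
  qed
qed

lemma sl_distinct_set: "distinct xs \<Longrightarrow> distinct ys \<Longrightarrow> set xs = set ys \<Longrightarrow> sl L xs = sl L ys"
  by (simp add: sum_list_distinct_conv_sum_set)

lemma sl_cong: "(\<forall>c\<in>set xs. L c = L' c) \<Longrightarrow> sl L xs = sl L' xs"
  by (induction xs) auto

section \<open>Basic IET semantics\<close>

definition bivl :: "'a iet \<Rightarrow> 'a \<Rightarrow> real set" where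
  "bivl S a = {iet_left S + off_bot S a ..< iet_left S + off_bot S a + iet_len S a}"

lemma wf_pos: "iet_wf S \<Longrightarrow> c \<in> set (iet_top S) \<Longrightarrow> iet_len S c > 0"
  unfolding iet_wf_def by blast

lemma wf_nonneg: "iet_wf S \<Longrightarrow> \<forall>c\<in>set (iet_top S). iet_len S c \<ge> 0"
  using wf_pos[of S] by (meson less_imp_le)

lemma wf_set_bot: "iet_wf S \<Longrightarrow> set (iet_bot S) = set (iet_top S)"
  unfolding iet_wf_def by blast

lemma wf_nonneg_bot: "iet_wf S \<Longrightarrow> \<forall>c\<in>set (iet_bot S). iet_len S c \<ge> 0"
  using wf_nonneg[of S] wf_set_bot[of S] by simp

lemma sum_bot: "iet_wf S \<Longrightarrow> sl (iet_len S) (iet_bot S) = sl (iet_len S) (iet_top S)"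
proof -
  assume "iet_wf S"
  then have "distinct (iet_bot S)" "distinct (iet_top S)" "set (iet_bot S) = set (iet_top S)"
    unfolding iet_wf_def by blast+
  then show ?thesis by (rule sl_distinct_set)
qed

lemma ivl_sub_dom: "iet_wf S \<Longrightarrow> c \<in> set (iet_top S) \<Longrightarrow> ivl S c \<subseteq> iet_dom S"
proof
  fix x assume w: "iet_wf S" "c \<in> set (iet_top S)" and "x \<in> ivl S c"
  then have x: "iet_left S + off_top S c \<le> x" "x < iet_left S + off_top S c + iet_len S c"
    by (simp_all add: ivl_def)
  have "off_top S c \<ge> 0" "off_top S c + iet_len S c \<le> sl (iet_len S) (iet_top S)"
    unfolding off_top_def using sl_tw_le[OF wf_nonneg[OF w(1)] w(2)] sl_tw_nonneg[OF wf_nonneg[OF w(1)]]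
    by simp_all
  with x show "x \<in> iet_dom S" by (simp add: iet_dom_def iet_right_def)
qed

lemma bivl_sub_dom: "iet_wf S \<Longrightarrow> c \<in> set (iet_top S) \<Longrightarrow> bivl S c \<subseteq> iet_dom S"
proof
  fix x assume w: "iet_wf S" "c \<in> set (iet_top S)" and "x \<in> bivl S c"
  then have x: "iet_left S + off_bot S c \<le> x" "x < iet_left S + off_bot S c + iet_len S c"
    by (simp_all add: bivl_def)
  have cb: "c \<in> set (iet_bot S)" using w wf_set_bot by blast
  have "off_bot S c \<ge> 0" "off_bot S c + iet_len S c \<le> sl (iet_len S) (iet_bot S)"
    unfolding off_bot_def using sl_tw_le[OF wf_nonneg_bot[OF w(1)] cb] sl_tw_nonneg[OF wf_nonneg_bot[OF w(1)]]
    by simp_all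
  with x sum_bot[OF w(1)] show "x \<in> iet_dom S" by (simp add: iet_dom_def iet_right_def)
qed

lemma ivl_notin: "c \<notin> set (iet_top S) \<Longrightarrow> ivl S c \<inter> iet_dom S = {}"
  by (auto simp: ivl_def iet_dom_def iet_right_def off_top_def tw_notin)

lemma ivl_unique:
  assumes "iet_wf S" "x \<in> ivl S c" "x \<in> ivl S d" "x \<in> iet_dom S"
  shows "c = d"
proof (rule ccontr)
  assume "c \<noteq> d"
  have c: "c \<in> set (iet_top S)" using ivl_notin[of c S] assms by auto
  have d: "d \<in> set (iet_top S)" using ivl_notin[of d S] assms by auto
  show False
    by (rule seg_disj[OF wf_nonneg[OF assms(1)] c d \<open>c \<noteq> d\<close>, of "iet_left S" x])
       (use assms in \<open>auto simp: ivl_def off_top_def\<close>)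
qed

lemma bivl_unique:
  assumes "iet_wf S" "x \<in> bivl S c" "x \<in> bivl S d" "c \<in> set (iet_top S)" "d \<in> set (iet_top S)"
  shows "c = d"
proof (rule ccontr)
  assume "c \<noteq> d"
  have c: "c \<in> set (iet_bot S)" "d \<in> set (iet_bot S)" using assms by (auto simp: iet_wf_def)
  show False
    by (rule seg_disj[OF wf_nonneg_bot[OF assms(1)] c \<open>c \<noteq> d\<close>, of "iet_left S" x])
       (use assms in \<open>auto simp: bivl_def off_bot_def\<close>)
qed

lemma dom_cover: "iet_wf S \<Longrightarrow> x \<in> iet_dom S \<Longrightarrow> \<exists>c\<in>set (iet_top S). x \<in> ivl S c"
proof -
  assume w: "iet_wf S" "x \<in> iet_dom S"
  then have d: "distinct (iet_top S)" unfolding iet_wf_def by blast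
  have p: "\<forall>c\<in>set (iet_top S). iet_len S c > 0" using wf_pos[OF w(1)] by blast
  have x: "iet_left S \<le> x" "x < iet_left S + sl (iet_len S) (iet_top S)"
    using w(2) by (simp_all add: iet_dom_def iet_right_def)
  from seg_cover[OF d p x] show ?thesis unfolding ivl_def off_top_def by simp
qed

lemma dom_cover_bot: "iet_wf S \<Longrightarrow> x \<in> iet_dom S \<Longrightarrow> \<exists>c\<in>set (iet_top S). x \<in> bivl S c"
proof -
  assume w: "iet_wf S" "x \<in> iet_dom S"
  then have d: "distinct (iet_bot S)" unfolding iet_wf_def by blast
  have p: "\<forall>c\<in>set (iet_bot S). iet_len S c > 0" using wf_pos[OF w(1)] wf_set_bot[OF w(1)] by simp
  have x: "iet_left S \<le> x" "x < iet_left S + sl (iet_len S) (iet_bot S)"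
    using w(2) sum_bot[OF w(1)] by (simp_all add: iet_dom_def iet_right_def)
  from seg_cover[OF d p x] show ?thesis unfolding bivl_def off_bot_def using wf_set_bot[OF w(1)] by simp
qed

lemma map_ivl:
  assumes "iet_wf S" "c \<in> set (iet_top S)" "x \<in> ivl S c"
  shows "iet_map S x = x + off_bot S c - off_top S c"
proof -
  have "find (\<lambda>a. x \<in> ivl S a) (iet_top S) = Some c"
  proof (rule find_unique[OF assms(2)])
    show "x \<in> ivl S c" by fact
    have xd: "x \<in> iet_dom S" using ivl_sub_dom[OF assms(1,2)] assms(3) by blast
    show "\<forall>d\<in>set (iet_top S). x \<in> ivl S d \<longrightarrow> d = c"
      using ivl_unique[OF assms(1) _ assms(3) xd] by blast
  qed
  then show ?thesis by (simp add: iet_map_def)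
qed

lemma map_ivl_bivl:
  assumes "iet_wf S" "c \<in> set (iet_top S)" "x \<in> ivl S c"
  shows "iet_map S x \<in> bivl S c"
  using assms map_ivl[OF assms] by (auto simp: ivl_def bivl_def)

lemma map_dom: "iet_wf S \<Longrightarrow> x \<in> iet_dom S \<Longrightarrow> iet_map S x \<in> iet_dom S"
proof -
  assume a: "iet_wf S" "x \<in> iet_dom S"
  then obtain c where c: "c \<in> set (iet_top S)" "x \<in> ivl S c" using dom_cover by blast
  show ?thesis using map_ivl_bivl[OF a(1) c] bivl_sub_dom[OF a(1) c(1)] by blast
qed

lemma funpow_dom: "iet_wf S \<Longrightarrow> x \<in> iet_dom S \<Longrightarrow> (iet_map S ^^ n) x \<in> iet_dom S"
  by (induction n) (auto simp: map_dom)

lemma map_inj: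
  assumes "iet_wf S" "x \<in> iet_dom S" "y \<in> iet_dom S" "iet_map S x = iet_map S y"
  shows "x = y"
proof -
  obtain c where c: "c \<in> set (iet_top S)" "x \<in> ivl S c" using dom_cover[OF assms(1,2)] by blast
  obtain d where d: "d \<in> set (iet_top S)" "y \<in> ivl S d" using dom_cover[OF assms(1,3)] by blast
  have "iet_map S x \<in> bivl S d" using map_ivl_bivl[OF assms(1) d] assms(4) by simp
  then have "c = d" using bivl_unique[OF assms(1) map_ivl_bivl[OF assms(1) c] _ c(1) d(1)] by blast
  have "x + off_bot S c - off_top S c = y + off_bot S d - off_top S d"
    using map_ivl[OF assms(1) c] map_ivl[OF assms(1) d] assms(4) by linarith
  then show ?thesis using \<open>c = d\<close> by simp
qed

lemma map_image_ivl:
  assumes "iet_wf S" "c \<in> set (iet_top S)"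
  shows "iet_map S ` ivl S c = bivl S c"
proof
  show "iet_map S ` ivl S c \<subseteq> bivl S c" using map_ivl_bivl[OF assms] by auto
  show "bivl S c \<subseteq> iet_map S ` ivl S c"
  proof
    fix y assume "y \<in> bivl S c"
    then have "y - off_bot S c + off_top S c \<in> ivl S c" by (auto simp: ivl_def bivl_def)
    moreover have "iet_map S (y - off_bot S c + off_top S c) = y" using map_ivl[OF assms calculation] by simp
    ultimately show "y \<in> iet_map S ` ivl S c" by force
  qed
qed

section \<open>Towers\<close>

definition tower :: "'a iet \<Rightarrow> 'a iet \<Rightarrow> bool" where
  "tower T S \<longleftrightarrow> (\<forall>c\<in>set (iet_top S). \<exists>h>0. \<exists>ws. length ws = h \<and>
     (\<forall>x\<in>ivl S c. (\<forall>j<h. (iet_map T ^^ j) x \<in> ivl T (ws ! j))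
        \<and> (\<forall>j. 0 < j \<and> j < h \<longrightarrow> (iet_map T ^^ j) x \<notin> iet_dom S)
        \<and> (iet_map T ^^ h) x = iet_map S x))"

definition Inv :: "'a iet \<Rightarrow> 'a iet \<Rightarrow> bool" where
  "Inv T S \<longleftrightarrow> iet_wf S \<and> iet_dom S \<subseteq> iet_dom T \<and> tower T S"

definition step2 :: "'a iet \<Rightarrow> 'a iet \<Rightarrow> bool" where
  "step2 S S' \<longleftrightarrow> (\<forall>c\<in>set (iet_top S').
     (\<exists>d. \<forall>x\<in>ivl S' c. x \<in> ivl S d \<and> iet_map S' x = iet_map S x) \<or>
     (\<exists>d1 d2. \<forall>x\<in>ivl S' c. x \<in> ivl S d1 \<and> iet_map S x \<in> ivl S d2 \<and> iet_map S x \<notin> iet_dom S'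
        \<and> iet_map S' x = iet_map S (iet_map S x)))"

lemma start_in_ivl: "iet_wf S \<Longrightarrow> c \<in> set (iet_top S) \<Longrightarrow> iet_left S + off_top S c \<in> ivl S c"
  using wf_pos[of S c] by (simp add: ivl_def)

lemma ivl_letter:
  assumes "iet_wf S" "x \<in> ivl S d" "x \<in> iet_dom S" shows "d \<in> set (iet_top S)"
  using ivl_notin[of d S] assms by blast

lemma tower_refl: "iet_wf T \<Longrightarrow> tower T T"
  unfolding tower_def
proof
  fix c assume "c \<in> set (iet_top T)"
  show "\<exists>h>0. \<exists>ws. length ws = h \<and> (\<forall>x\<in>ivl T c. (\<forall>j<h. (iet_map T ^^ j) x \<in> ivl T (ws ! j))
        \<and> (\<forall>j. 0 < j \<and> j < h \<longrightarrow> (iet_map T ^^ j) x \<notin> iet_dom T) \<and> (iet_map T ^^ h) x = iet_map T x)"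
    by (rule exI[of _ 1], simp, rule exI[of _ "[c]"], simp)
qed

lemma Inv_refl: "iet_wf T \<Longrightarrow> Inv T T"
  by (simp add: Inv_def tower_refl)

lemma Inv_step:
  assumes I: "Inv T S" and w': "iet_wf S'" and sub: "iet_dom S' \<subseteq> iet_dom S" and st: "step2 S S'"
  shows "Inv T S'"
proof -
  have wS: "iet_wf S" and subT: "iet_dom S \<subseteq> iet_dom T" and tw: "tower T S" using I by (auto simp: Inv_def)
  have "tower T S'"
    unfolding tower_def
  proof
    fix c assume c: "c \<in> set (iet_top S')"
    define x0 where "x0 = iet_left S' + off_top S' c"
    have x0: "x0 \<in> ivl S' c" "x0 \<in> iet_dom S'" using start_in_ivl[OF w' c] ivl_sub_dom[OF w' c] by (auto simp: x0_def)
    from st c have "(\<exists>d. \<forall>x\<in>ivl S' c. x \<in> ivl S d \<and> iet_map S' x = iet_map S x) \<or>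
     (\<exists>d1 d2. \<forall>x\<in>ivl S' c. x \<in> ivl S d1 \<and> iet_map S x \<in> ivl S d2 \<and> iet_map S x \<notin> iet_dom S'
        \<and> iet_map S' x = iet_map S (iet_map S x))" unfolding step2_def by blast
    then show "\<exists>h>0. \<exists>ws. length ws = h \<and> (\<forall>x\<in>ivl S' c. (\<forall>j<h. (iet_map T ^^ j) x \<in> ivl T (ws ! j))
        \<and> (\<forall>j. 0 < j \<and> j < h \<longrightarrow> (iet_map T ^^ j) x \<notin> iet_dom S') \<and> (iet_map T ^^ h) x = iet_map S' x)"
    proof
      assume "\<exists>d. \<forall>x\<in>ivl S' c. x \<in> ivl S d \<and> iet_map S' x = iet_map S x"
      then obtain d where d: "\<forall>x\<in>ivl S' c. x \<in> ivl S d \<and> iet_map S' x = iet_map S x" by blast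
      have dS: "d \<in> set (iet_top S)" using ivl_letter[OF wS, of x0 d] d x0 sub by blast
      obtain h ws where h: "h > 0" "length ws = h" and
        P: "\<forall>x\<in>ivl S d. (\<forall>j<h. (iet_map T ^^ j) x \<in> ivl T (ws ! j))
        \<and> (\<forall>j. 0 < j \<and> j < h \<longrightarrow> (iet_map T ^^ j) x \<notin> iet_dom S) \<and> (iet_map T ^^ h) x = iet_map S x"
        using tw dS unfolding tower_def by blast
      have "\<forall>x\<in>ivl S' c. (\<forall>j<h. (iet_map T ^^ j) x \<in> ivl T (ws ! j))
        \<and> (\<forall>j. 0 < j \<and> j < h \<longrightarrow> (iet_map T ^^ j) x \<notin> iet_dom S') \<and> (iet_map T ^^ h) x = iet_map S' x"
      proof
        fix x assume x: "x \<in> ivl S' c"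
        have xd: "x \<in> ivl S d" and e: "iet_map S' x = iet_map S x" using d x by blast+
        have Px: "(\<forall>j<h. (iet_map T ^^ j) x \<in> ivl T (ws ! j))"
          "(\<forall>j. 0 < j \<and> j < h \<longrightarrow> (iet_map T ^^ j) x \<notin> iet_dom S)" "(iet_map T ^^ h) x = iet_map S x"
          using bspec[OF P xd] by blast+
        show "(\<forall>j<h. (iet_map T ^^ j) x \<in> ivl T (ws ! j))
        \<and> (\<forall>j. 0 < j \<and> j < h \<longrightarrow> (iet_map T ^^ j) x \<notin> iet_dom S') \<and> (iet_map T ^^ h) x = iet_map S' x"
          using Px(1) Px(2) sub Px(3) e by auto
      qed
      then show ?thesis using h by blast
    next
      assume "\<exists>d1 d2. \<forall>x\<in>ivl S' c. x \<in> ivl S d1 \<and> iet_map S x \<in> ivl S d2 \<and> iet_map S x \<notin> iet_dom S'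
        \<and> iet_map S' x = iet_map S (iet_map S x)"
      then obtain d1 d2 where d: "\<forall>x\<in>ivl S' c. x \<in> ivl S d1 \<and> iet_map S x \<in> ivl S d2 \<and> iet_map S x \<notin> iet_dom S'
        \<and> iet_map S' x = iet_map S (iet_map S x)" by blast
      have d1S: "d1 \<in> set (iet_top S)" using ivl_letter[OF wS, of x0 d1] d x0 sub by blast
      have "iet_map S x0 \<in> iet_dom S" using map_dom[OF wS] x0 sub by blast
      then have d2S: "d2 \<in> set (iet_top S)" using ivl_letter[OF wS, of "iet_map S x0" d2] d x0 by blast
      obtain h1 ws1 where h1: "h1 > 0" "length ws1 = h1" and
        P1: "\<forall>x\<in>ivl S d1. (\<forall>j<h1. (iet_map T ^^ j) x \<in> ivl T (ws1 ! j))
        \<and> (\<forall>j. 0 < j \<and> j < h1 \<longrightarrow> (iet_map T ^^ j) x \<notin> iet_dom S) \<and> (iet_map T ^^ h1) x = iet_map S x"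
        using tw d1S unfolding tower_def by blast
      obtain h2 ws2 where h2: "h2 > 0" "length ws2 = h2" and
        P2: "\<forall>x\<in>ivl S d2. (\<forall>j<h2. (iet_map T ^^ j) x \<in> ivl T (ws2 ! j))
        \<and> (\<forall>j. 0 < j \<and> j < h2 \<longrightarrow> (iet_map T ^^ j) x \<notin> iet_dom S) \<and> (iet_map T ^^ h2) x = iet_map S x"
        using tw d2S unfolding tower_def by blast
      show ?thesis
      proof (rule exI[of _ "h1 + h2"], intro conjI, simp add: h1, rule exI[of _ "ws1 @ ws2"], intro conjI ballI)
        show "length (ws1 @ ws2) = h1 + h2" using h1 h2 by simp
        fix x assume x: "x \<in> ivl S' c"
        have x1: "x \<in> ivl S d1" and x2: "iet_map S x \<in> ivl S d2" and x3: "iet_map S x \<notin> iet_dom S'"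
          and x4: "iet_map S' x = iet_map S (iet_map S x)" using d x by blast+
        have e1: "(iet_map T ^^ h1) x = iet_map S x" using P1 x1 by blast
        have shift: "(iet_map T ^^ j) x = (iet_map T ^^ (j - h1)) (iet_map S x)" if "j \<ge> h1" for j
        proof -
          have "(iet_map T ^^ j) x = (iet_map T ^^ ((j - h1) + h1)) x" using that by simp
          also have "\<dots> = (iet_map T ^^ (j - h1)) ((iet_map T ^^ h1) x)" by (simp add: funpow_add)
          finally show ?thesis using e1 by simp
        qed
        show "\<forall>j<h1 + h2. (iet_map T ^^ j) x \<in> ivl T ((ws1 @ ws2) ! j)"
        proof (intro allI impI)
          fix j assume j: "j < h1 + h2"
          show "(iet_map T ^^ j) x \<in> ivl T ((ws1 @ ws2) ! j)"
          proof (cases "j < h1")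
            case True then show ?thesis using P1 x1 h1 by (simp add: nth_append)
          next
            case False
            then have "j - h1 < h2" using j by simp
            then have "(iet_map T ^^ (j - h1)) (iet_map S x) \<in> ivl T (ws2 ! (j - h1))" using P2 x2 by blast
            then show ?thesis using False shift[of j] h1 by (simp add: nth_append)
          qed
        qed
        show "\<forall>j. 0 < j \<and> j < h1 + h2 \<longrightarrow> (iet_map T ^^ j) x \<notin> iet_dom S'"
        proof (intro allI impI)
          fix j assume j: "0 < j \<and> j < h1 + h2"
          show "(iet_map T ^^ j) x \<notin> iet_dom S'"
          proof (cases "j < h1")
            case True then show ?thesis using P1 x1 j sub by blast
          next
            case False
            show ?thesis
            proof (cases "j = h1")
              case True then show ?thesis using e1 x3 by simp
            next
              case False
              then have "0 < j - h1" "j - h1 < h2" using j \<open>\<not> j < h1\<close> by auto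
              then have "(iet_map T ^^ (j - h1)) (iet_map S x) \<notin> iet_dom S" using P2 x2 by blast
              then show ?thesis using shift[of j] \<open>\<not> j < h1\<close> sub by auto
            qed
          qed
        qed
        have "(iet_map T ^^ (h1 + h2)) x = (iet_map T ^^ h2) (iet_map S x)" using shift[of "h1+h2"] by simp
        also have "\<dots> = iet_map S (iet_map S x)" using P2 x2 by blast
        finally show "(iet_map T ^^ (h1 + h2)) x = iet_map S' x" using x4 by simp
      qed
    qed
  qed
  then show ?thesis using w' sub subT by (auto simp: Inv_def)
qed

lemma step2I:
  assumes wS: "iet_wf S" and wS': "iet_wf S'"
    and gen: "\<And>c. c \<in> set (iet_top S') \<Longrightarrow> c \<noteq> s \<Longrightarrow> c \<in> set (iet_top S) \<and> ivl S' c \<subseteq> ivl S c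
        \<and> off_bot S' c - off_top S' c = off_bot S c - off_top S c"
    and spec: "s \<in> set (iet_top S') \<Longrightarrow> d1 \<in> set (iet_top S) \<and> d2 \<in> set (iet_top S) \<and> ivl S' s \<subseteq> ivl S d1
        \<and> (\<forall>x\<in>ivl S' s. x + off_bot S d1 - off_top S d1 \<in> ivl S d2 \<and> x + off_bot S d1 - off_top S d1 \<notin> iet_dom S')
        \<and> off_bot S' s - off_top S' s = (off_bot S d1 - off_top S d1) + (off_bot S d2 - off_top S d2)"
  shows "step2 S S'"
  unfolding step2_def
proof
  fix c assume c: "c \<in> set (iet_top S')"
  show "(\<exists>d. \<forall>x\<in>ivl S' c. x \<in> ivl S d \<and> iet_map S' x = iet_map S x) \<or>
     (\<exists>d1 d2. \<forall>x\<in>ivl S' c. x \<in> ivl S d1 \<and> iet_map S x \<in> ivl S d2 \<and> iet_map S x \<notin> iet_dom S'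
        \<and> iet_map S' x = iet_map S (iet_map S x))"
  proof (cases "c = s")
    case False
    have g: "c \<in> set (iet_top S)" "ivl S' c \<subseteq> ivl S c"
        "off_bot S' c - off_top S' c = off_bot S c - off_top S c" using gen[OF c False] by auto
    have "\<forall>x\<in>ivl S' c. x \<in> ivl S c \<and> iet_map S' x = iet_map S x"
    proof
      fix x assume x: "x \<in> ivl S' c"
      then have xs: "x \<in> ivl S c" using g by blast
      have "iet_map S' x = x + off_bot S' c - off_top S' c" by (rule map_ivl[OF wS' c x])
      also have "\<dots> = x + off_bot S c - off_top S c" using g(3) by simp
      also have "\<dots> = iet_map S x" using map_ivl[OF wS g(1) xs] by simp
      finally show "x \<in> ivl S c \<and> iet_map S' x = iet_map S x" using xs by simp
    qed
    then show ?thesis by blast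
  next
    case True
    have sp: "d1 \<in> set (iet_top S)" "d2 \<in> set (iet_top S)" "ivl S' s \<subseteq> ivl S d1"
        "\<forall>x\<in>ivl S' s. x + off_bot S d1 - off_top S d1 \<in> ivl S d2 \<and> x + off_bot S d1 - off_top S d1 \<notin> iet_dom S'"
        "off_bot S' s - off_top S' s = (off_bot S d1 - off_top S d1) + (off_bot S d2 - off_top S d2)"
      using spec c True by auto
    have "\<forall>x\<in>ivl S' c. x \<in> ivl S d1 \<and> iet_map S x \<in> ivl S d2 \<and> iet_map S x \<notin> iet_dom S'
        \<and> iet_map S' x = iet_map S (iet_map S x)"
    proof
      fix x assume x: "x \<in> ivl S' c"
      then have xs: "x \<in> ivl S d1" using sp True by blast
      have m1: "iet_map S x = x + off_bot S d1 - off_top S d1" by (rule map_ivl[OF wS sp(1) xs])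
      have y: "iet_map S x \<in> ivl S d2" "iet_map S x \<notin> iet_dom S'" using sp(4) x True m1 by auto
      have "iet_map S' x = x + off_bot S' s - off_top S' s" using map_ivl[OF wS' c] x True by simp
      also have "\<dots> = iet_map S x + off_bot S d2 - off_top S d2" using sp(5) m1 by simp
      also have "\<dots> = iet_map S (iet_map S x)" using map_ivl[OF wS sp(2) y(1)] by simp
      finally show "x \<in> ivl S d1 \<and> iet_map S x \<in> ivl S d2 \<and> iet_map S x \<notin> iet_dom S'
        \<and> iet_map S' x = iet_map S (iet_map S x)" using xs y by simp
    qed
    then show ?thesis by blast
  qed
qed

lemma ins_after_notin: "a \<notin> set xs \<Longrightarrow> ins_after b a xs = xs"
  by (induction xs) (auto simp: ins_after_def)

lemma ins_after_append: "ins_after b a (xs @ ys) = ins_after b a xs @ ins_after b a ys"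
  by (simp add: ins_after_def)

lemma ins_after_split: "a \<notin> set xs \<Longrightarrow> a \<notin> set ys \<Longrightarrow> ins_after b a (xs @ a # ys) = xs @ a # b # ys"
  using ins_after_notin[of a xs b] ins_after_notin[of a ys b] by (simp add: ins_after_def)

lemma ins_before_notin: "a \<notin> set xs \<Longrightarrow> ins_before b a xs = xs"
  by (induction xs) (auto simp: ins_before_def)

lemma ins_before_append: "ins_before b a (xs @ ys) = ins_before b a xs @ ins_before b a ys"
  by (simp add: ins_before_def)

lemma ins_before_split: "a \<notin> set xs \<Longrightarrow> a \<notin> set ys \<Longrightarrow> ins_before b a (xs @ a # ys) = xs @ b # a # ys"
  using ins_before_notin[of a xs b] ins_before_notin[of a ys b] by (simp add: ins_before_def)

lemma repl_notin: "a \<notin> set xs \<Longrightarrow> repl a b xs = xs"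
  by (induction xs) (auto simp: repl_def)

lemma repl_split: "a \<notin> set xs \<Longrightarrow> a \<notin> set ys \<Longrightarrow> repl a b (xs @ a # ys) = xs @ b # ys"
  using repl_notin[of a xs b] repl_notin[of a ys b] by (simp add: repl_def)

lemma sl_upd_notin: "a \<notin> set xs \<Longrightarrow> sl (L(a := v)) xs = sl L xs"
  by (induction xs) auto

lemma tw_subset: "set (tw c xs) \<subseteq> set xs"
  by (meson set_takeWhileD subsetI)

lemma list_last_split: "xs \<noteq> [] \<Longrightarrow> xs = butlast xs @ [last xs]"
  by simp

lemma list_hd_split: "xs \<noteq> [] \<Longrightarrow> xs = hd xs # tl xs"
  by simp

lemma distinct_last_notin: "distinct (A @ [a]) \<Longrightarrow> a \<notin> set A" by simp

lemma rr_T: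
  fixes S :: "'a iet"
  assumes wf: "iet_wf S" and ab: "last (iet_top S) \<noteq> last (iet_bot S)"
    and gt: "iet_len S (last (iet_bot S)) < iet_len S (last (iet_top S))"
  shows "iet_wf (rauzy_right S) \<and> iet_left (rauzy_right S) = iet_left S
   \<and> iet_right (rauzy_right S) = iet_right S - iet_len S (last (iet_bot S))
   \<and> iet_top (rauzy_right S) = iet_top S
   \<and> iet_len (rauzy_right S) = (iet_len S)(last (iet_top S) := iet_len S (last (iet_top S)) - iet_len S (last (iet_bot S)))
   \<and> step2 S (rauzy_right S)
   \<and> (\<forall>c\<in>set (iet_top S). off_top (rauzy_right S) c = off_top S c)"
proof -
  define tp where "tp = iet_top S"
  define bt where "bt = iet_bot S"
  define L where "L = iet_len S"
  define a where "a = last (iet_top S)"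
  define b where "b = last (iet_bot S)"
  define l where "l = iet_left S"
  define L' where "L' = L(a := L a - L b)"
  have gt': "L b < L a" using gt by (simp add: L_def a_def b_def)
  have ab': "a \<noteq> b" using ab by (simp add: a_def b_def)
  have tpne: "tp \<noteq> []" and dtp: "distinct tp" and dbt: "distinct bt" and sbt: "set bt = set tp"
    and pos: "\<forall>c\<in>set tp. L c > 0"
    using wf unfolding iet_wf_def tp_def bt_def L_def by auto
  have btne: "bt \<noteq> []" using tpne sbt by auto
  define A where "A = butlast tp"
  define B where "B = butlast bt"
  have tpA: "tp = A @ [a]" using tpne unfolding A_def a_def tp_def by simp
  have btB: "bt = B @ [b]" using btne unfolding B_def b_def bt_def by simp
  have aA: "a \<notin> set A" and dA: "distinct A" using dtp tpA by auto
  have bB: "b \<notin> set B" and dB: "distinct B" using dbt btB by auto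
  have aB: "a \<in> set B" using sbt tpA btB ab' by auto
  obtain B1 B2 where B: "B = B1 @ a # B2" using split_list[OF aB] by blast
  have aB1: "a \<notin> set B1" "a \<notin> set B2" "set B1 \<inter> set B2 = {}" "distinct B1" "distinct B2"
    using dB B by auto
  have bB1: "b \<notin> set B1" "b \<notin> set B2" using bB B by auto
  have rr: "rauzy_right S = S\<lparr>iet_bot := ins_after b a B, iet_len := L'\<rparr>"
    using gt' unfolding rauzy_right_def Let_def L'_def L_def a_def b_def B_def bt_def by simp
  have bt': "ins_after b a B = B1 @ a # b # B2" using B aB1 ins_after_split by metis
  define S' where "S' = rauzy_right S"
  have S'f: "iet_top S' = tp" "iet_bot S' = B1 @ a # b # B2" "iet_len S' = L'" "iet_left S' = l"
    unfolding S'_def rr using bt' by (simp_all add: tp_def l_def)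
  have bt_eq: "bt = B1 @ a # B2 @ [b]" using btB B by simp
  have sumeq: "sl L B + L b = sl L A + L a"
    using sum_bot[OF wf] unfolding tp_def[symmetric] bt_def[symmetric] L_def[symmetric] using tpA btB by simp
  have L'a: "L' a = L a - L b" and L'o: "\<And>c. c \<noteq> a \<Longrightarrow> L' c = L c" by (simp_all add: L'_def)
  have wf': "iet_wf S'"
    unfolding iet_wf_def S'f
  proof (intro conjI)
    show "tp \<noteq> []" "distinct tp" by fact+
    show "distinct (B1 @ a # b # B2)" using aB1 bB1 ab' by auto
    show "set (B1 @ a # b # B2) = set tp" using sbt bt_eq by auto
    show "\<forall>c\<in>set tp. 0 < L' c" using pos gt' by (auto simp: L'_def)
  qed
  have ot: "off_top S' c = off_top S c" if c: "c \<in> set tp" for c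
  proof -
    have "a \<notin> set (tw c tp)"
    proof (cases "c = a")
      case True then show ?thesis using tpA aA tw_split[of a A "[]"] by simp
    next
      case False
      then have "c \<in> set A" using c tpA by simp
      then have "tw c tp = tw c A" using tpA tw_app1 by metis
      then show ?thesis using aA tw_subset[of c A] by auto
    qed
    then show ?thesis unfolding off_top_def S'f using tp_def L_def L'_def sl_upd_notin by metis
  qed
  have ob: "off_bot S' c = off_bot S c" if c: "c \<in> set tp" "c \<noteq> b" for c
  proof -
    have cs: "c \<in> set B1 \<or> c = a \<or> c \<in> set B2" using c sbt bt_eq by auto
    have "sl L' (tw c (B1 @ a # b # B2)) = sl L (tw c (B1 @ a # B2 @ [b]))"
    proof -
      { assume c1: "c \<in> set B1"
        have e1: "tw c (B1 @ a # b # B2) = tw c B1" using tw_app1[OF c1] by metis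
        have e2: "tw c (B1 @ a # B2 @ [b]) = tw c B1" using tw_app1[OF c1] by metis
        have "a \<notin> set (tw c B1)" using aB1 tw_subset[of c B1] by auto
        then have ?thesis unfolding e1 e2 L'_def using sl_upd_notin by metis }
      moreover
      { assume c2: "c = a"
        have e1: "tw c (B1 @ a # b # B2) = B1" using tw_split[of a B1] aB1 c2 by simp
        have e2: "tw c (B1 @ a # B2 @ [b]) = B1" using tw_split[of a B1] aB1 c2 by simp
        have ?thesis unfolding e1 e2 L'_def using sl_upd_notin aB1 by metis }
      moreover
      { assume c3: "c \<in> set B2"
        have cn: "c \<notin> set B1" "c \<noteq> a" "c \<noteq> b" using c3 aB1 bB1 by auto
        have e1: "tw c (B1 @ a # b # B2) = B1 @ a # b # tw c B2" using tw_app2[of c B1] cn by simp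
        have e2: "tw c (B1 @ a # B2 @ [b]) = B1 @ a # tw c B2" using tw_app2[of c B1] tw_app1[OF c3, of "[b]"] cn by simp
        have "a \<notin> set (tw c B2)" using aB1 tw_subset[of c B2] by auto
        then have "sl L' (tw c B2) = sl L (tw c B2)" unfolding L'_def using sl_upd_notin by metis
        moreover have "sl L' B1 = sl L B1" unfolding L'_def using sl_upd_notin aB1 by metis
        moreover have "L' b = L b" using ab' by (simp add: L'_def)
        ultimately have ?thesis unfolding e1 e2 using L'a by simp }
      ultimately show ?thesis using cs by blast
    qed
    then show ?thesis unfolding off_bot_def S'f using bt_eq L_def bt_def by simp
  qed
  have ob_b: "off_bot S' b = sl L B1 + (L a - L b)"
  proof -
    have e1: "tw b (B1 @ a # b # B2) = B1 @ [a]" using tw_app2[of b B1] bB1 ab' by simp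
    have "sl L' B1 = sl L B1" unfolding L'_def using sl_upd_notin aB1 by metis
    then show ?thesis unfolding off_bot_def S'f e1 using L'a by simp
  qed
  have ob_bS: "off_bot S b = sl L B" unfolding off_bot_def using btB bB tw_split[of b B "[]"] by (simp add: bt_def L_def)
  have ob_aS: "off_bot S a = sl L B1" unfolding off_bot_def using bt_eq aB1 tw_split[of a B1] by (simp add: bt_def L_def)
  have ot_aS: "off_top S a = sl L A" unfolding off_top_def using tpA aA tw_split[of a A "[]"] by (simp add: tp_def L_def)
  have right': "iet_right S' = iet_right S - L b"
  proof -
    have "sl L' A = sl L A" unfolding L'_def using sl_upd_notin aA by metis
    then show ?thesis unfolding iet_right_def S'f using tpA L'a by (simp add: l_def tp_def L_def)
  qed
  have right: "iet_right S = l + sl L A + L a" unfolding iet_right_def using tpA by (simp add: l_def tp_def L_def)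
  have bA: "b \<in> set tp" using sbt btB by auto
  have aT: "a \<in> set tp" using tpA by auto
  have Lbpos: "L b > 0" using pos bA by blast
  have st: "step2 S S'"
  proof (rule step2I[OF wf wf', of b b a])
    fix c assume c: "c \<in> set (iet_top S')" "c \<noteq> b"
    have cT: "c \<in> set tp" using c S'f by simp
    have "ivl S' c \<subseteq> ivl S c"
      unfolding ivl_def using ot[OF cT] S'f gt' Lbpos by (auto simp: L'_def l_def L_def)
    then show "c \<in> set (iet_top S) \<and> ivl S' c \<subseteq> ivl S c
        \<and> off_bot S' c - off_top S' c = off_bot S c - off_top S c"
      using cT ot[OF cT] ob[OF cT c(2)] by (simp add: tp_def)
  next
    assume "b \<in> set (iet_top S')"
    have ivb: "ivl S' b = ivl S b" unfolding ivl_def using ot[OF bA] S'f ab' by (simp add: L'_def l_def L_def)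
    have "\<forall>x\<in>ivl S' b. x + off_bot S b - off_top S b \<in> ivl S a \<and> x + off_bot S b - off_top S b \<notin> iet_dom S'"
    proof
      fix x assume x: "x \<in> ivl S' b"
      then have x1: "l + off_top S b \<le> x" "x < l + off_top S b + L b" using ivb by (auto simp: ivl_def l_def L_def)
      show "x + off_bot S b - off_top S b \<in> ivl S a \<and> x + off_bot S b - off_top S b \<notin> iet_dom S'"
        using x1 ob_bS ot_aS sumeq gt' right right' unfolding ivl_def iet_dom_def
        by (auto simp: l_def L_def)
    qed
    moreover have "off_bot S' b - off_top S' b = (off_bot S b - off_top S b) + (off_bot S a - off_top S a)"
      using ob_b ot[OF bA] ob_bS ob_aS ot_aS sumeq by simp
    ultimately show "b \<in> set (iet_top S) \<and> a \<in> set (iet_top S) \<and> ivl S' b \<subseteq> ivl S b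
        \<and> (\<forall>x\<in>ivl S' b. x + off_bot S b - off_top S b \<in> ivl S a \<and> x + off_bot S b - off_top S b \<notin> iet_dom S')
        \<and> off_bot S' b - off_top S' b = (off_bot S b - off_top S b) + (off_bot S a - off_top S a)"
      using bA aT ivb by (simp add: tp_def)
  qed
  show ?thesis
    using wf' S'f right' st ot unfolding S'_def
    by (simp add: l_def tp_def L'_def L_def a_def b_def)
qed

lemma rr_B:
  fixes S :: "'a iet"
  assumes wf: "iet_wf S" and ab: "last (iet_top S) \<noteq> last (iet_bot S)"
    and gt: "iet_len S (last (iet_top S)) < iet_len S (last (iet_bot S))"
  shows "iet_wf (rauzy_right S) \<and> iet_left (rauzy_right S) = iet_left S
   \<and> iet_right (rauzy_right S) = iet_right S - iet_len S (last (iet_top S))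
   \<and> iet_bot (rauzy_right S) = iet_bot S
   \<and> iet_len (rauzy_right S) = (iet_len S)(last (iet_bot S) := iet_len S (last (iet_bot S)) - iet_len S (last (iet_top S)))
   \<and> (\<exists>A1 A2. iet_top S = A1 @ last (iet_bot S) # A2 @ [last (iet_top S)]
         \<and> iet_top (rauzy_right S) = A1 @ last (iet_bot S) # last (iet_top S) # A2)
   \<and> step2 S (rauzy_right S)
   \<and> (\<forall>c\<in>set (iet_top S). c \<noteq> last (iet_top S) \<longrightarrow> off_top (rauzy_right S) c = off_top S c)"
proof -
  define tp where "tp = iet_top S"
  define bt where "bt = iet_bot S"
  define L where "L = iet_len S"
  define a where "a = last (iet_top S)"
  define b where "b = last (iet_bot S)"
  define l where "l = iet_left S"
  define L' where "L' = L(b := L b - L a)"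
  have gt': "L a < L b" using gt by (simp add: L_def a_def b_def)
  have ab': "a \<noteq> b" using ab by (simp add: a_def b_def)
  have tpne: "tp \<noteq> []" and dtp: "distinct tp" and dbt: "distinct bt" and sbt: "set bt = set tp"
    and pos: "\<forall>c\<in>set tp. L c > 0"
    using wf unfolding iet_wf_def tp_def bt_def L_def by auto
  have btne: "bt \<noteq> []" using tpne sbt by auto
  define A where "A = butlast tp"
  define B where "B = butlast bt"
  have tpA: "tp = A @ [a]" using tpne unfolding A_def a_def tp_def by simp
  have btB: "bt = B @ [b]" using btne unfolding B_def b_def bt_def by simp
  have aA: "a \<notin> set A" and dA: "distinct A" using dtp tpA by auto
  have bB: "b \<notin> set B" and dB: "distinct B" using dbt btB by auto
  have bA: "b \<in> set A" using sbt tpA btB ab' by auto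
  obtain A1 A2 where A: "A = A1 @ b # A2" using split_list[OF bA] by blast
  have bA1: "b \<notin> set A1" "b \<notin> set A2" "set A1 \<inter> set A2 = {}" "distinct A1" "distinct A2"
    using dA A by auto
  have aA1: "a \<notin> set A1" "a \<notin> set A2" using aA A by auto
  have rr: "rauzy_right S = S\<lparr>iet_top := ins_after a b A, iet_len := L'\<rparr>"
    using gt' unfolding rauzy_right_def Let_def L'_def L_def a_def b_def A_def tp_def by auto
  have tp': "ins_after a b A = A1 @ b # a # A2" using A bA1 ins_after_split by metis
  define S' where "S' = rauzy_right S"
  have S'f: "iet_top S' = A1 @ b # a # A2" "iet_bot S' = bt" "iet_len S' = L'" "iet_left S' = l"
    unfolding S'_def rr using tp' by (simp_all add: bt_def l_def)
  have tp_eq: "tp = A1 @ b # A2 @ [a]" using tpA A by simp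
  have sumeq: "sl L B + L b = sl L A + L a"
    using sum_bot[OF wf] unfolding tp_def[symmetric] bt_def[symmetric] L_def[symmetric] using tpA btB by simp
  have L'b: "L' b = L b - L a" and L'o: "\<And>c. c \<noteq> b \<Longrightarrow> L' c = L c" by (simp_all add: L'_def)
  have aT: "a \<in> set tp" using tpA by auto
  have bT: "b \<in> set tp" using tpA bA by auto
  have Lapos: "L a > 0" using pos aT by blast
  have wf': "iet_wf S'"
    unfolding iet_wf_def S'f
  proof (intro conjI)
    show "A1 @ b # a # A2 \<noteq> []" by simp
    show "distinct (A1 @ b # a # A2)" using bA1 aA1 ab' by auto
    show "distinct bt" by fact
    show "set bt = set (A1 @ b # a # A2)" using sbt tp_eq by auto
    show "\<forall>c\<in>set (A1 @ b # a # A2). 0 < L' c" using pos gt' tp_eq by (auto simp: L'_def)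
  qed
  have ot: "off_top S' c = off_top S c" if c: "c \<in> set tp" "c \<noteq> a" for c
  proof -
    have cs: "c \<in> set A1 \<or> c = b \<or> c \<in> set A2" using c tp_eq by auto
    have "sl L' (tw c (A1 @ b # a # A2)) = sl L (tw c (A1 @ b # A2 @ [a]))"
    proof -
      { assume c1: "c \<in> set A1"
        have e1: "tw c (A1 @ b # a # A2) = tw c A1" using tw_app1[OF c1] by metis
        have e2: "tw c (A1 @ b # A2 @ [a]) = tw c A1" using tw_app1[OF c1] by metis
        have "b \<notin> set (tw c A1)" using bA1 tw_subset[of c A1] by auto
        then have ?thesis unfolding e1 e2 L'_def using sl_upd_notin by metis }
      moreover
      { assume c2: "c = b"
        have e1: "tw c (A1 @ b # a # A2) = A1" using tw_split[of b A1] bA1 c2 by simp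
        have e2: "tw c (A1 @ b # A2 @ [a]) = A1" using tw_split[of b A1] bA1 c2 by simp
        have ?thesis unfolding e1 e2 L'_def using sl_upd_notin bA1 by metis }
      moreover
      { assume c3: "c \<in> set A2"
        have cn: "c \<notin> set A1" "c \<noteq> b" "c \<noteq> a" using c3 bA1 aA1 by auto
        have e1: "tw c (A1 @ b # a # A2) = A1 @ b # a # tw c A2" using tw_app2[of c A1] cn by simp
        have e2: "tw c (A1 @ b # A2 @ [a]) = A1 @ b # tw c A2" using tw_app2[of c A1] tw_app1[OF c3, of "[a]"] cn by simp
        have "b \<notin> set (tw c A2)" using bA1 tw_subset[of c A2] by auto
        then have "sl L' (tw c A2) = sl L (tw c A2)" unfolding L'_def using sl_upd_notin by metis
        moreover have "sl L' A1 = sl L A1" unfolding L'_def using sl_upd_notin bA1 by metis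
        moreover have "L' a = L a" using ab' by (simp add: L'_def)
        ultimately have ?thesis unfolding e1 e2 using L'b by simp }
      ultimately show ?thesis using cs by blast
    qed
    then show ?thesis unfolding off_top_def S'f using tp_eq L_def tp_def by simp
  qed
  have ot_a: "off_top S' a = sl L A1 + (L b - L a)"
  proof -
    have e1: "tw a (A1 @ b # a # A2) = A1 @ [b]" using tw_app2[of a A1] aA1 ab' by simp
    have "sl L' A1 = sl L A1" unfolding L'_def using sl_upd_notin bA1 by metis
    then show ?thesis unfolding off_top_def S'f e1 using L'b by simp
  qed
  have ob: "off_bot S' c = off_bot S c" if c: "c \<in> set tp" for c
  proof -
    have "b \<notin> set (tw c bt)"
    proof (cases "c = b")
      case True then show ?thesis using btB bB tw_split[of b B "[]"] by simp
    next
      case False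
      then have "c \<in> set B" using c btB sbt by auto
      then have "tw c bt = tw c B" using btB tw_app1 by metis
      then show ?thesis using bB tw_subset[of c B] by auto
    qed
    then show ?thesis unfolding off_bot_def S'f using bt_def L_def L'_def sl_upd_notin by metis
  qed
  have ob_bS: "off_bot S b = sl L B" unfolding off_bot_def using btB bB tw_split[of b B "[]"] by (simp add: bt_def L_def)
  have ot_bS: "off_top S b = sl L A1" unfolding off_top_def using tp_eq bA1 tw_split[of b A1] by (simp add: tp_def L_def)
  have ot_aS: "off_top S a = sl L A" unfolding off_top_def using tpA aA tw_split[of a A "[]"] by (simp add: tp_def L_def)
  have sA: "sl L A = sl L A1 + L b + sl L A2" using A by simp
  have right': "iet_right S' = iet_right S - L a"
  proof -
    have "sl L' A1 = sl L A1" "sl L' A2 = sl L A2" unfolding L'_def using sl_upd_notin bA1 by metis+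
    then show ?thesis unfolding iet_right_def S'f using tpA sA L'b ab' by (simp add: l_def tp_def L_def L'_def)
  qed
  have right: "iet_right S = l + sl L A + L a" unfolding iet_right_def using tpA by (simp add: l_def tp_def L_def)
  have st: "step2 S S'"
  proof (rule step2I[OF wf wf', of a b a])
    fix c assume c: "c \<in> set (iet_top S')" "c \<noteq> a"
    have cT: "c \<in> set tp" using c S'f tp_eq by auto
    have "ivl S' c \<subseteq> ivl S c"
      unfolding ivl_def using ot[OF cT c(2)] S'f gt' Lapos by (auto simp: L'_def l_def L_def)
    then show "c \<in> set (iet_top S) \<and> ivl S' c \<subseteq> ivl S c
        \<and> off_bot S' c - off_top S' c = off_bot S c - off_top S c"
      using cT ot[OF cT c(2)] ob[OF cT] by (simp add: tp_def)
  next
    assume "a \<in> set (iet_top S')"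
    have iva: "ivl S' a \<subseteq> ivl S b" unfolding ivl_def using ot_a ot_bS S'f ab' Lapos gt'
      by (auto simp: L'_def l_def L_def)
    have "\<forall>x\<in>ivl S' a. x + off_bot S b - off_top S b \<in> ivl S a \<and> x + off_bot S b - off_top S b \<notin> iet_dom S'"
    proof
      fix x assume x: "x \<in> ivl S' a"
      then have x1: "l + sl L A1 + (L b - L a) \<le> x" "x < l + sl L A1 + (L b - L a) + L a"
        using ot_a S'f ab' by (auto simp: ivl_def l_def L_def L'_def)
      show "x + off_bot S b - off_top S b \<in> ivl S a \<and> x + off_bot S b - off_top S b \<notin> iet_dom S'"
        using x1 ob_bS ot_bS ot_aS sumeq gt' right right' unfolding ivl_def iet_dom_def
        by (auto simp: l_def L_def)
    qed
    moreover have "off_bot S' a - off_top S' a = (off_bot S b - off_top S b) + (off_bot S a - off_top S a)"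
      using ob[OF aT] ot_a ob_bS ot_bS ot_aS sumeq by simp
    ultimately show "b \<in> set (iet_top S) \<and> a \<in> set (iet_top S) \<and> ivl S' a \<subseteq> ivl S b
        \<and> (\<forall>x\<in>ivl S' a. x + off_bot S b - off_top S b \<in> ivl S a \<and> x + off_bot S b - off_top S b \<notin> iet_dom S')
        \<and> off_bot S' a - off_top S' a = (off_bot S b - off_top S b) + (off_bot S a - off_top S a)"
      using bT aT iva by (simp add: tp_def)
  qed
  have ex: "\<exists>A1 A2. iet_top S = A1 @ last (iet_bot S) # A2 @ [last (iet_top S)]
         \<and> iet_top (rauzy_right S) = A1 @ last (iet_bot S) # last (iet_top S) # A2"
    using tp_eq S'f unfolding S'_def tp_def a_def b_def by blast
  show ?thesis
    using wf' S'f right' st ot ex unfolding S'_def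
    by (simp add: l_def tp_def bt_def L'_def L_def a_def b_def)
qed

lemma rr_E:
  fixes S :: "'a iet"
  assumes wf: "iet_wf S" and ab: "last (iet_top S) \<noteq> last (iet_bot S)"
    and eq: "iet_len S (last (iet_top S)) = iet_len S (last (iet_bot S))"
  shows "iet_wf (rauzy_right S) \<and> iet_left (rauzy_right S) = iet_left S
   \<and> iet_right (rauzy_right S) = iet_right S - iet_len S (last (iet_top S))
   \<and> iet_len (rauzy_right S) = iet_len S
   \<and> iet_top (rauzy_right S) = butlast (iet_top S)
   \<and> step2 S (rauzy_right S)
   \<and> (\<forall>c\<in>set (iet_top (rauzy_right S)). off_top (rauzy_right S) c = off_top S c)"
proof -
  define tp where "tp = iet_top S"
  define bt where "bt = iet_bot S"
  define L where "L = iet_len S"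
  define a where "a = last (iet_top S)"
  define b where "b = last (iet_bot S)"
  define l where "l = iet_left S"
  have eq': "L a = L b" using eq by (simp add: L_def a_def b_def)
  have ab': "a \<noteq> b" using ab by (simp add: a_def b_def)
  have tpne: "tp \<noteq> []" and dtp: "distinct tp" and dbt: "distinct bt" and sbt: "set bt = set tp"
    and pos: "\<forall>c\<in>set tp. L c > 0"
    using wf unfolding iet_wf_def tp_def bt_def L_def by auto
  have btne: "bt \<noteq> []" using tpne sbt by auto
  define A where "A = butlast tp"
  define B where "B = butlast bt"
  have tpA: "tp = A @ [a]" using tpne unfolding A_def a_def tp_def by simp
  have btB: "bt = B @ [b]" using btne unfolding B_def b_def bt_def by simp
  have aA: "a \<notin> set A" and dA: "distinct A" using dtp tpA by auto
  have bB: "b \<notin> set B" and dB: "distinct B" using dbt btB by auto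
  have aB: "a \<in> set B" using sbt tpA btB ab' by auto
  have bA: "b \<in> set A" using sbt tpA btB ab' by auto
  obtain B1 B2 where B: "B = B1 @ a # B2" using split_list[OF aB] by blast
  have aB1: "a \<notin> set B1" "a \<notin> set B2" "set B1 \<inter> set B2 = {}" "distinct B1" "distinct B2"
    using dB B by auto
  have bB1: "b \<notin> set B1" "b \<notin> set B2" using bB B by auto
  have rr: "rauzy_right S = S\<lparr>iet_top := A, iet_bot := repl a b B\<rparr>"
    using eq' unfolding rauzy_right_def Let_def L_def a_def b_def A_def B_def tp_def bt_def by simp
  have bt': "repl a b B = B1 @ b # B2" using B aB1 repl_split by metis
  define S' where "S' = rauzy_right S"
  have S'f: "iet_top S' = A" "iet_bot S' = B1 @ b # B2" "iet_len S' = L" "iet_left S' = l"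
    unfolding S'_def rr using bt' by (simp_all add: L_def l_def)
  have bt_eq: "bt = B1 @ a # B2 @ [b]" using btB B by simp
  have sumeq: "sl L B + L b = sl L A + L a"
    using sum_bot[OF wf] unfolding tp_def[symmetric] bt_def[symmetric] L_def[symmetric] using tpA btB by simp
  have aT: "a \<in> set tp" using tpA by auto
  have bT: "b \<in> set tp" using tpA bA by auto
  have wf': "iet_wf S'"
    unfolding iet_wf_def S'f
  proof (intro conjI)
    show "A \<noteq> []" using bA by auto
    show "distinct A" by fact
    show "distinct (B1 @ b # B2)" using aB1 bB1 by auto
    show "set (B1 @ b # B2) = set A"
    proof -
      have "set bt = set A \<union> {a}" using tpA sbt by auto
      then show ?thesis using bt_eq aA aB1 bA ab' by auto
    qed
    show "\<forall>c\<in>set A. 0 < L c" using pos tpA by auto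
  qed
  have ot: "off_top S' c = off_top S c" if c: "c \<in> set A" for c
  proof -
    have "tw c tp = tw c A" using tpA tw_app1[OF c] by metis
    then show ?thesis unfolding off_top_def S'f by (simp add: tp_def L_def)
  qed
  have ob: "off_bot S' c = off_bot S c" if c: "c \<in> set A" "c \<noteq> b" for c
  proof -
    have cs: "c \<in> set B1 \<or> c \<in> set B2" using c bt_eq sbt tpA aA by auto
    have "sl L (tw c (B1 @ b # B2)) = sl L (tw c (B1 @ a # B2 @ [b]))"
    proof -
      { assume c1: "c \<in> set B1"
        have ?thesis using tw_app1[OF c1, of "b # B2"] tw_app1[OF c1, of "a # B2 @ [b]"] by simp }
      moreover
      { assume c3: "c \<in> set B2"
        have cn: "c \<notin> set B1" "c \<noteq> a" "c \<noteq> b" using c3 aB1 bB1 by auto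
        have e1: "tw c (B1 @ b # B2) = B1 @ b # tw c B2" using tw_app2[of c B1] cn by simp
        have e2: "tw c (B1 @ a # B2 @ [b]) = B1 @ a # tw c B2" using tw_app2[of c B1] tw_app1[OF c3, of "[b]"] cn by simp
        have ?thesis unfolding e1 e2 using eq' by simp }
      ultimately show ?thesis using cs by blast
    qed
    then show ?thesis unfolding off_bot_def S'f using bt_eq L_def bt_def by simp
  qed
  have ob_b: "off_bot S' b = sl L B1"
  proof -
    have e1: "tw b (B1 @ b # B2) = B1" using tw_split[of b B1] bB1 by simp
    then show ?thesis unfolding off_bot_def S'f e1 by simp
  qed
  have ob_bS: "off_bot S b = sl L B" unfolding off_bot_def using btB bB tw_split[of b B "[]"] by (simp add: bt_def L_def)
  have ob_aS: "off_bot S a = sl L B1" unfolding off_bot_def using bt_eq aB1 tw_split[of a B1] by (simp add: bt_def L_def)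
  have ot_aS: "off_top S a = sl L A" unfolding off_top_def using tpA aA tw_split[of a A "[]"] by (simp add: tp_def L_def)
  have right': "iet_right S' = iet_right S - L a"
    unfolding iet_right_def S'f using tpA by (simp add: l_def tp_def L_def)
  have right: "iet_right S = l + sl L A + L a" unfolding iet_right_def using tpA by (simp add: l_def tp_def L_def)
  have st: "step2 S S'"
  proof (rule step2I[OF wf wf', of b b a])
    fix c assume c: "c \<in> set (iet_top S')" "c \<noteq> b"
    have cT: "c \<in> set A" using c S'f by simp
    have "ivl S' c = ivl S c"
      unfolding ivl_def using ot[OF cT] S'f by (simp add: l_def L_def)
    then show "c \<in> set (iet_top S) \<and> ivl S' c \<subseteq> ivl S c
        \<and> off_bot S' c - off_top S' c = off_bot S c - off_top S c"
      using cT ot[OF cT] ob[OF cT c(2)] tpA by (simp add: tp_def)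
  next
    assume "b \<in> set (iet_top S')"
    have ivb: "ivl S' b = ivl S b" unfolding ivl_def using ot[OF bA] S'f by (simp add: l_def L_def)
    have "\<forall>x\<in>ivl S' b. x + off_bot S b - off_top S b \<in> ivl S a \<and> x + off_bot S b - off_top S b \<notin> iet_dom S'"
    proof
      fix x assume x: "x \<in> ivl S' b"
      then have x1: "l + off_top S b \<le> x" "x < l + off_top S b + L b" using ivb by (auto simp: ivl_def l_def L_def)
      show "x + off_bot S b - off_top S b \<in> ivl S a \<and> x + off_bot S b - off_top S b \<notin> iet_dom S'"
        using x1 ob_bS ot_aS sumeq eq' right right' unfolding ivl_def iet_dom_def
        by (auto simp: l_def L_def)
    qed
    moreover have "off_bot S' b - off_top S' b = (off_bot S b - off_top S b) + (off_bot S a - off_top S a)"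
      using ob_b ot[OF bA] ob_bS ob_aS ot_aS sumeq eq' by simp
    ultimately show "b \<in> set (iet_top S) \<and> a \<in> set (iet_top S) \<and> ivl S' b \<subseteq> ivl S b
        \<and> (\<forall>x\<in>ivl S' b. x + off_bot S b - off_top S b \<in> ivl S a \<and> x + off_bot S b - off_top S b \<notin> iet_dom S')
        \<and> off_bot S' b - off_top S' b = (off_bot S b - off_top S b) + (off_bot S a - off_top S a)"
      using bT aT ivb by (simp add: tp_def)
  qed
  show ?thesis
    using wf' S'f right' st ot unfolding S'_def
    by (simp add: l_def tp_def A_def L_def a_def)
qed

definition Dt :: "'a iet \<Rightarrow> real set" where
  "Dt S = (\<lambda>c. iet_left S + off_top S c) ` set (iet_top S)"

lemma rl_T:
  fixes S :: "'a iet"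
  assumes wf: "iet_wf S" and ab: "hd (iet_top S) \<noteq> hd (iet_bot S)"
    and gt: "iet_len S (hd (iet_bot S)) < iet_len S (hd (iet_top S))"
  shows "iet_wf (rauzy_left S) \<and> iet_left (rauzy_left S) = iet_left S + iet_len S (hd (iet_bot S))
   \<and> iet_right (rauzy_left S) = iet_right S
   \<and> iet_top (rauzy_left S) = iet_top S
   \<and> iet_len (rauzy_left S) = (iet_len S)(hd (iet_top S) := iet_len S (hd (iet_top S)) - iet_len S (hd (iet_bot S)))
   \<and> step2 S (rauzy_left S)
   \<and> (\<forall>c\<in>set (iet_top S). c \<noteq> hd (iet_top S) \<longrightarrow>
        iet_left (rauzy_left S) + off_top (rauzy_left S) c = iet_left S + off_top S c)"
proof -
  define tp where "tp = iet_top S"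
  define bt where "bt = iet_bot S"
  define L where "L = iet_len S"
  define a where "a = hd (iet_top S)"
  define b where "b = hd (iet_bot S)"
  define l where "l = iet_left S"
  define L' where "L' = L(a := L a - L b)"
  have gt': "L b < L a" using gt by (simp add: L_def a_def b_def)
  have ab': "a \<noteq> b" using ab by (simp add: a_def b_def)
  have tpne: "tp \<noteq> []" and dtp: "distinct tp" and dbt: "distinct bt" and sbt: "set bt = set tp"
    and pos: "\<forall>c\<in>set tp. L c > 0"
    using wf unfolding iet_wf_def tp_def bt_def L_def by auto
  have btne: "bt \<noteq> []" using tpne sbt by auto
  define A where "A = tl tp"
  define B where "B = tl bt"
  have tpA: "tp = a # A" using tpne unfolding A_def a_def tp_def by simp
  have btB: "bt = b # B" using btne unfolding B_def b_def bt_def by simp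
  have aA: "a \<notin> set A" and dA: "distinct A" using dtp tpA by auto
  have bB: "b \<notin> set B" and dB: "distinct B" using dbt btB by auto
  have aB: "a \<in> set B" using sbt tpA btB ab' by auto
  obtain B1 B2 where B: "B = B1 @ a # B2" using split_list[OF aB] by blast
  have aB1: "a \<notin> set B1" "a \<notin> set B2" "set B1 \<inter> set B2 = {}" "distinct B1" "distinct B2"
    using dB B by auto
  have bB1: "b \<notin> set B1" "b \<notin> set B2" using bB B by auto
  have rr: "rauzy_left S = S\<lparr>iet_left := l + L b, iet_bot := ins_before b a B, iet_len := L'\<rparr>"
    using gt' unfolding rauzy_left_def Let_def L'_def L_def a_def b_def B_def bt_def l_def by simp
  have bt': "ins_before b a B = B1 @ b # a # B2" using B aB1 ins_before_split by metis
  define S' where "S' = rauzy_left S"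
  have S'f: "iet_top S' = tp" "iet_bot S' = B1 @ b # a # B2" "iet_len S' = L'" "iet_left S' = l + L b"
    unfolding S'_def rr using bt' by (simp_all add: tp_def)
  have bt_eq: "bt = b # B1 @ a # B2" using btB B by simp
  have sumeq: "sl L B + L b = sl L A + L a"
    using sum_bot[OF wf] unfolding tp_def[symmetric] bt_def[symmetric] L_def[symmetric] using tpA btB by simp
  have L'a: "L' a = L a - L b" and L'o: "\<And>c. c \<noteq> a \<Longrightarrow> L' c = L c" by (simp_all add: L'_def)
  have aT: "a \<in> set tp" using tpA by auto
  have bT: "b \<in> set tp" using sbt btB by auto
  have bA: "b \<in> set A" using bT tpA ab' by auto
  have Lbpos: "L b > 0" using pos bT by blast
  have wf': "iet_wf S'"
    unfolding iet_wf_def S'f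
  proof (intro conjI)
    show "tp \<noteq> []" "distinct tp" by fact+
    show "distinct (B1 @ b # a # B2)" using aB1 bB1 ab' by auto
    show "set (B1 @ b # a # B2) = set tp" using sbt bt_eq by auto
    show "\<forall>c\<in>set tp. 0 < L' c" using pos gt' by (auto simp: L'_def)
  qed
  have ot: "off_top S' c = off_top S c - L b" if c: "c \<in> set A" for c
  proof -
    have "c \<noteq> a" using c aA by auto
    then have e: "tw c tp = a # tw c A" using tpA by simp
    have "a \<notin> set (tw c A)" using aA tw_subset[of c A] by auto
    then have "sl L' (tw c A) = sl L (tw c A)" unfolding L'_def using sl_upd_notin by metis
    moreover have "off_top S c = sl L (tw c tp)" by (simp add: off_top_def tp_def L_def)
    moreover have "off_top S' c = sl L' (tw c tp)" by (simp add: off_top_def S'f)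
    ultimately show ?thesis unfolding e using L'a by simp
  qed
  have ot_a: "off_top S' a = 0" "off_top S a = 0" unfolding off_top_def S'f using tpA by (simp_all add: tp_def)
  have ob_a: "off_bot S' a = off_bot S a"
  proof -
    have e1: "tw a (B1 @ b # a # B2) = B1 @ [b]" using tw_app2[of a B1] aB1 ab' by simp
    have e2: "tw a (b # B1 @ a # B2) = b # B1" using tw_split[of a B1] aB1 ab' by simp
    have "sl L' B1 = sl L B1" unfolding L'_def using sl_upd_notin aB1 by metis
    then show ?thesis unfolding off_bot_def S'f e1 using e2 ab' bt_eq by (simp add: L'_def bt_def L_def)
  qed
  have ob: "off_bot S' c = off_bot S c - L b" if c: "c \<in> set tp" "c \<noteq> b" "c \<noteq> a" for c
  proof -
    have cs: "c \<in> set B1 \<or> c = a \<or> c \<in> set B2" using c sbt bt_eq by auto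
    have "sl L' (tw c (B1 @ b # a # B2)) = sl L (tw c (b # B1 @ a # B2)) - L b"
    proof -
      { assume c1: "c \<in> set B1"
        have e1: "tw c (B1 @ b # a # B2) = tw c B1" using tw_app1[OF c1] by metis
        have e2: "tw c (b # B1 @ a # B2) = b # tw c B1" using tw_app1[OF c1] c by simp
        have "a \<notin> set (tw c B1)" using aB1 tw_subset[of c B1] by auto
        then have ?thesis unfolding e1 e2 L'_def using sl_upd_notin by fastforce }
      moreover
      { assume c2: "c = a"
        then have ?thesis using c(3) by simp }
      moreover
      { assume c3: "c \<in> set B2"
        have cn: "c \<notin> set B1" "c \<noteq> a" "c \<noteq> b" using c3 aB1 bB1 by auto
        have e1: "tw c (B1 @ b # a # B2) = B1 @ b # a # tw c B2" using tw_app2[of c B1] cn by simp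
        have e2: "tw c (b # B1 @ a # B2) = b # B1 @ a # tw c B2" using tw_app2[of c B1] cn by simp
        have "a \<notin> set (tw c B2)" using aB1 tw_subset[of c B2] by auto
        then have "sl L' (tw c B2) = sl L (tw c B2)" unfolding L'_def using sl_upd_notin by metis
        moreover have "sl L' B1 = sl L B1" unfolding L'_def using sl_upd_notin aB1 by metis
        moreover have "L' b = L b" using ab' by (simp add: L'_def)
        ultimately have ?thesis unfolding e1 e2 using L'a by simp }
      ultimately show ?thesis using cs by blast
    qed
    then show ?thesis unfolding off_bot_def S'f using bt_eq L_def bt_def by simp
  qed
  have ob_b: "off_bot S' b = sl L B1"
  proof -
    have e1: "tw b (B1 @ b # a # B2) = B1" using tw_split[of b B1] bB1 by simp
    have "sl L' B1 = sl L B1" unfolding L'_def using sl_upd_notin aB1 by metis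
    then show ?thesis unfolding off_bot_def S'f e1 by simp
  qed
  have ob_bS: "off_bot S b = 0" unfolding off_bot_def using btB by (simp add: bt_def)
  have ob_aS: "off_bot S a = L b + sl L B1" unfolding off_bot_def using bt_eq aB1 tw_split[of a B1] ab'
    by (simp add: bt_def L_def)
  have right': "iet_right S' = iet_right S"
  proof -
    have "sl L' A = sl L A" unfolding L'_def using sl_upd_notin aA by metis
    then show ?thesis unfolding iet_right_def S'f using tpA L'a by (simp add: l_def tp_def L_def)
  qed
  have right: "iet_right S = l + L a + sl L A" unfolding iet_right_def using tpA by (simp add: l_def tp_def L_def)
  have st: "step2 S S'"
  proof (rule step2I[OF wf wf', of b b a])
    fix c assume c: "c \<in> set (iet_top S')" "c \<noteq> b"
    have cT: "c \<in> set tp" using c S'f by simp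
    show "c \<in> set (iet_top S) \<and> ivl S' c \<subseteq> ivl S c
        \<and> off_bot S' c - off_top S' c = off_bot S c - off_top S c"
    proof (cases "c = a")
      case True
      have "ivl S' c \<subseteq> ivl S c" unfolding ivl_def using ot_a S'f True L'a Lbpos by (auto simp: l_def L_def)
      then show ?thesis using cT ob_a ot_a True by (simp add: tp_def)
    next
      case False
      then have cA: "c \<in> set A" using cT tpA by simp
      have "ivl S' c = ivl S c" unfolding ivl_def using ot[OF cA] S'f False by (simp add: l_def L_def L'_def)
      then show ?thesis using cT ob[OF cT c(2) False] ot[OF cA] by (simp add: tp_def)
    qed
  next
    assume "b \<in> set (iet_top S')"
    have ivb: "ivl S' b = ivl S b" unfolding ivl_def using ot[OF bA] S'f ab' by (simp add: L'_def l_def L_def)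
    have "\<forall>x\<in>ivl S' b. x + off_bot S b - off_top S b \<in> ivl S a \<and> x + off_bot S b - off_top S b \<notin> iet_dom S'"
    proof
      fix x assume x: "x \<in> ivl S' b"
      then have x1: "l + off_top S b \<le> x" "x < l + off_top S b + L b" using ivb by (auto simp: ivl_def l_def L_def)
      show "x + off_bot S b - off_top S b \<in> ivl S a \<and> x + off_bot S b - off_top S b \<notin> iet_dom S'"
        using x1 ob_bS ot_a gt' right right' S'f unfolding ivl_def iet_dom_def
        by (auto simp: l_def L_def)
    qed
    moreover have "off_bot S' b - off_top S' b = (off_bot S b - off_top S b) + (off_bot S a - off_top S a)"
      using ob_b ot[OF bA] ob_bS ob_aS ot_a by simp
    ultimately show "b \<in> set (iet_top S) \<and> a \<in> set (iet_top S) \<and> ivl S' b \<subseteq> ivl S b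
        \<and> (\<forall>x\<in>ivl S' b. x + off_bot S b - off_top S b \<in> ivl S a \<and> x + off_bot S b - off_top S b \<notin> iet_dom S')
        \<and> off_bot S' b - off_top S' b = (off_bot S b - off_top S b) + (off_bot S a - off_top S a)"
      using bT aT ivb by (simp add: tp_def)
  qed
  have dt: "\<forall>c\<in>set tp. c \<noteq> a \<longrightarrow> iet_left S' + off_top S' c = l + off_top S c"
    using ot S'f tpA by auto
  show ?thesis
    using wf' S'f right' st dt unfolding S'_def
    by (simp add: l_def tp_def L'_def L_def a_def b_def)
qed

lemma rl_B:
  fixes S :: "'a iet"
  assumes wf: "iet_wf S" and ab: "hd (iet_top S) \<noteq> hd (iet_bot S)"
    and gt: "iet_len S (hd (iet_top S)) < iet_len S (hd (iet_bot S))"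
  shows "iet_wf (rauzy_left S) \<and> iet_left (rauzy_left S) = iet_left S + iet_len S (hd (iet_top S))
   \<and> iet_right (rauzy_left S) = iet_right S
   \<and> iet_bot (rauzy_left S) = iet_bot S
   \<and> iet_len (rauzy_left S) = (iet_len S)(hd (iet_bot S) := iet_len S (hd (iet_bot S)) - iet_len S (hd (iet_top S)))
   \<and> (\<exists>A1 A2. iet_top S = hd (iet_top S) # A1 @ hd (iet_bot S) # A2
         \<and> iet_top (rauzy_left S) = A1 @ hd (iet_top S) # hd (iet_bot S) # A2)
   \<and> step2 S (rauzy_left S)
   \<and> (\<forall>c\<in>set (iet_top S). c \<noteq> hd (iet_top S) \<longrightarrow> iet_left S + off_top S c \<in> Dt (rauzy_left S))"
proof -
  define tp where "tp = iet_top S"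
  define bt where "bt = iet_bot S"
  define L where "L = iet_len S"
  define a where "a = hd (iet_top S)"
  define b where "b = hd (iet_bot S)"
  define l where "l = iet_left S"
  define L' where "L' = L(b := L b - L a)"
  have gt': "L a < L b" using gt by (simp add: L_def a_def b_def)
  have ab': "a \<noteq> b" using ab by (simp add: a_def b_def)
  have tpne: "tp \<noteq> []" and dtp: "distinct tp" and dbt: "distinct bt" and sbt: "set bt = set tp"
    and pos: "\<forall>c\<in>set tp. L c > 0"
    using wf unfolding iet_wf_def tp_def bt_def L_def by auto
  have btne: "bt \<noteq> []" using tpne sbt by auto
  define A where "A = tl tp"
  define B where "B = tl bt"
  have tpA: "tp = a # A" using tpne unfolding A_def a_def tp_def by simp
  have btB: "bt = b # B" using btne unfolding B_def b_def bt_def by simp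
  have aA: "a \<notin> set A" and dA: "distinct A" using dtp tpA by auto
  have bB: "b \<notin> set B" and dB: "distinct B" using dbt btB by auto
  have bA: "b \<in> set A" using sbt tpA btB ab' by auto
  obtain A1 A2 where A: "A = A1 @ b # A2" using split_list[OF bA] by blast
  have bA1: "b \<notin> set A1" "b \<notin> set A2" "set A1 \<inter> set A2 = {}" "distinct A1" "distinct A2"
    using dA A by auto
  have aA1: "a \<notin> set A1" "a \<notin> set A2" using aA A by auto
  have rr: "rauzy_left S = S\<lparr>iet_left := l + L a, iet_top := ins_before a b A, iet_len := L'\<rparr>"
    using gt' unfolding rauzy_left_def Let_def L'_def L_def a_def b_def A_def tp_def l_def by auto
  have tp': "ins_before a b A = A1 @ a # b # A2" using A bA1 ins_before_split by metis
  define S' where "S' = rauzy_left S"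
  have S'f: "iet_top S' = A1 @ a # b # A2" "iet_bot S' = bt" "iet_len S' = L'" "iet_left S' = l + L a"
    unfolding S'_def rr using tp' by (simp_all add: bt_def)
  have tp_eq: "tp = a # A1 @ b # A2" using tpA A by simp
  have sumeq: "sl L B + L b = sl L A + L a"
    using sum_bot[OF wf] unfolding tp_def[symmetric] bt_def[symmetric] L_def[symmetric] using tpA btB by simp
  have L'b: "L' b = L b - L a" and L'o: "\<And>c. c \<noteq> b \<Longrightarrow> L' c = L c" by (simp_all add: L'_def)
  have aT: "a \<in> set tp" using tpA by auto
  have bT: "b \<in> set tp" using tpA bA by auto
  have Lapos: "L a > 0" using pos aT by blast
  have wf': "iet_wf S'"
    unfolding iet_wf_def S'f
  proof (intro conjI)
    show "A1 @ a # b # A2 \<noteq> []" by simp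
    show "distinct (A1 @ a # b # A2)" using bA1 aA1 ab' by auto
    show "distinct bt" by fact
    show "set bt = set (A1 @ a # b # A2)" using sbt tp_eq by auto
    show "\<forall>c\<in>set (A1 @ a # b # A2). 0 < L' c" using pos gt' tp_eq by (auto simp: L'_def)
  qed
  have ot: "off_top S' c = off_top S c - L a" if c: "c \<in> set A1 \<or> c \<in> set A2" for c
  proof -
    have "sl L' (tw c (A1 @ a # b # A2)) = sl L (tw c (a # A1 @ b # A2)) - L a"
    proof -
      { assume c1: "c \<in> set A1"
        have e1: "tw c (A1 @ a # b # A2) = tw c A1" using tw_app1[OF c1] by metis
        have e2: "tw c (a # A1 @ b # A2) = a # tw c A1" using tw_app1[OF c1] c1 aA1 by auto
        have "b \<notin> set (tw c A1)" using bA1 tw_subset[of c A1] by auto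
        then have ?thesis unfolding e1 e2 L'_def using sl_upd_notin by fastforce }
      moreover
      { assume c3: "c \<in> set A2"
        have cn: "c \<notin> set A1" "c \<noteq> b" "c \<noteq> a" using c3 bA1 aA1 by auto
        have e1: "tw c (A1 @ a # b # A2) = A1 @ a # b # tw c A2" using tw_app2[of c A1] cn by simp
        have e2: "tw c (a # A1 @ b # A2) = a # A1 @ b # tw c A2" using tw_app2[of c A1] cn by simp
        have "b \<notin> set (tw c A2)" using bA1 tw_subset[of c A2] by auto
        then have "sl L' (tw c A2) = sl L (tw c A2)" unfolding L'_def using sl_upd_notin by metis
        moreover have "sl L' A1 = sl L A1" unfolding L'_def using sl_upd_notin bA1 by metis
        moreover have "L' a = L a" using ab' by (simp add: L'_def)
        ultimately have ?thesis unfolding e1 e2 using L'b by simp }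
      ultimately show ?thesis using c by blast
    qed
    then show ?thesis unfolding off_top_def S'f using tp_eq L_def tp_def by simp
  qed
  have ot_a: "off_top S' a = sl L A1"
  proof -
    have e1: "tw a (A1 @ a # b # A2) = A1" using tw_split[of a A1] aA1 by simp
    have "sl L' A1 = sl L A1" unfolding L'_def using sl_upd_notin bA1 by metis
    then show ?thesis unfolding off_top_def S'f e1 by simp
  qed
  have ot_b: "off_top S' b = sl L A1 + L a"
  proof -
    have e1: "tw b (A1 @ a # b # A2) = A1 @ [a]" using tw_app2[of b A1] bA1 ab' by simp
    have "sl L' A1 = sl L A1" unfolding L'_def using sl_upd_notin bA1 by metis
    then show ?thesis unfolding off_top_def S'f e1 using ab' by (simp add: L'_def)
  qed
  have ot_bS: "off_top S b = L a + sl L A1" unfolding off_top_def using tp_eq bA1 tw_split[of b A1] ab'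
    by (simp add: tp_def L_def)
  have ot_aS: "off_top S a = 0" unfolding off_top_def using tpA by (simp add: tp_def)
  have ob: "off_bot S' c = off_bot S c - L a" if c: "c \<in> set tp" "c \<noteq> b" for c
  proof -
    have "c \<in> set B" using c btB sbt by auto
    then have e: "tw c bt = b # tw c B" using btB c(2) by simp
    have "b \<notin> set (tw c B)" using bB tw_subset[of c B] by auto
    then have "sl L' (tw c B) = sl L (tw c B)" unfolding L'_def using sl_upd_notin by metis
    moreover have "off_bot S c = sl L (tw c bt)" by (simp add: off_bot_def bt_def L_def)
    moreover have "off_bot S' c = sl L' (tw c bt)" by (simp add: off_bot_def S'f)
    ultimately show ?thesis unfolding e using L'b by simp
  qed
  have ob_b: "off_bot S' b = 0" "off_bot S b = 0" unfolding off_bot_def S'f using btB by (simp_all add: bt_def)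
  have right': "iet_right S' = iet_right S"
  proof -
    have "sl L' A1 = sl L A1" "sl L' A2 = sl L A2" unfolding L'_def using sl_upd_notin bA1 by metis+
    then show ?thesis unfolding iet_right_def S'f using tp_eq L'b ab' by (simp add: l_def tp_def L_def L'_def)
  qed
  have right: "iet_right S = l + L a + sl L A1 + L b + sl L A2" unfolding iet_right_def using tp_eq by (simp add: l_def tp_def L_def)
  have st: "step2 S S'"
  proof (rule step2I[OF wf wf', of a b a])
    fix c assume c: "c \<in> set (iet_top S')" "c \<noteq> a"
    have cT: "c \<in> set tp" using c S'f tp_eq by auto
    show "c \<in> set (iet_top S) \<and> ivl S' c \<subseteq> ivl S c
        \<and> off_bot S' c - off_top S' c = off_bot S c - off_top S c"
    proof (cases "c = b")
      case True
      have "ivl S' c \<subseteq> ivl S c" unfolding ivl_def using ot_b ot_bS S'f True L'b Lapos by (auto simp: l_def L_def)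
      then show ?thesis using cT ob_b ot_b ot_bS True by (simp add: tp_def)
    next
      case False
      then have cA: "c \<in> set A1 \<or> c \<in> set A2" using c S'f by auto
      have "ivl S' c = ivl S c" unfolding ivl_def using ot[OF cA] S'f False by (simp add: l_def L_def L'_def)
      then show ?thesis using cT ob[OF cT False] ot[OF cA] by (simp add: tp_def)
    qed
  next
    assume "a \<in> set (iet_top S')"
    have iva: "ivl S' a \<subseteq> ivl S b" unfolding ivl_def using ot_a ot_bS S'f ab' Lapos gt'
      by (auto simp: L'_def l_def L_def)
    have "\<forall>x\<in>ivl S' a. x + off_bot S b - off_top S b \<in> ivl S a \<and> x + off_bot S b - off_top S b \<notin> iet_dom S'"
    proof
      fix x assume x: "x \<in> ivl S' a"
      then have x1: "l + L a + sl L A1 \<le> x" "x < l + L a + sl L A1 + L a"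
        using ot_a S'f ab' by (auto simp: ivl_def l_def L_def L'_def)
      show "x + off_bot S b - off_top S b \<in> ivl S a \<and> x + off_bot S b - off_top S b \<notin> iet_dom S'"
        using x1 ob_b ot_bS ot_aS right right' S'f unfolding ivl_def iet_dom_def
        by (auto simp: l_def L_def)
    qed
    moreover have "off_bot S' a - off_top S' a = (off_bot S b - off_top S b) + (off_bot S a - off_top S a)"
      using ob[OF aT ab'] ot_a ob_b ot_bS ot_aS by simp
    ultimately show "b \<in> set (iet_top S) \<and> a \<in> set (iet_top S) \<and> ivl S' a \<subseteq> ivl S b
        \<and> (\<forall>x\<in>ivl S' a. x + off_bot S b - off_top S b \<in> ivl S a \<and> x + off_bot S b - off_top S b \<notin> iet_dom S')
        \<and> off_bot S' a - off_top S' a = (off_bot S b - off_top S b) + (off_bot S a - off_top S a)"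
      using bT aT iva by (simp add: tp_def)
  qed
  have dt: "\<forall>c\<in>set tp. c \<noteq> a \<longrightarrow> l + off_top S c \<in> Dt S'"
  proof (intro ballI impI)
    fix c assume c: "c \<in> set tp" "c \<noteq> a"
    show "l + off_top S c \<in> Dt S'"
    proof (cases "c = b")
      case True
      have "l + off_top S c = iet_left S' + off_top S' a" using True ot_bS ot_a S'f by simp
      moreover have "a \<in> set (iet_top S')" using S'f by simp
      ultimately show ?thesis unfolding Dt_def by blast
    next
      case False
      then have cA: "c \<in> set A1 \<or> c \<in> set A2" using c tp_eq by auto
      have "l + off_top S c = iet_left S' + off_top S' c" using ot[OF cA] S'f by simp
      moreover have "c \<in> set (iet_top S')" using S'f cA by auto
      ultimately show ?thesis unfolding Dt_def by blast
    qed
  qed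
  have ex: "\<exists>A1 A2. iet_top S = hd (iet_top S) # A1 @ hd (iet_bot S) # A2
         \<and> iet_top (rauzy_left S) = A1 @ hd (iet_top S) # hd (iet_bot S) # A2"
    using tp_eq S'f unfolding S'_def tp_def a_def b_def by blast
  show ?thesis
    using wf' S'f right' st dt ex unfolding S'_def
    by (simp add: l_def tp_def bt_def L'_def L_def a_def b_def)
qed

lemma rl_E:
  fixes S :: "'a iet"
  assumes wf: "iet_wf S" and ab: "hd (iet_top S) \<noteq> hd (iet_bot S)"
    and eq: "iet_len S (hd (iet_top S)) = iet_len S (hd (iet_bot S))"
  shows "iet_wf (rauzy_left S) \<and> iet_left (rauzy_left S) = iet_left S + iet_len S (hd (iet_top S))
   \<and> iet_right (rauzy_left S) = iet_right S
   \<and> iet_len (rauzy_left S) = iet_len S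
   \<and> iet_top (rauzy_left S) = tl (iet_top S)
   \<and> step2 S (rauzy_left S)
   \<and> (\<forall>c\<in>set (iet_top (rauzy_left S)). iet_left (rauzy_left S) + off_top (rauzy_left S) c = iet_left S + off_top S c)"
proof -
  define tp where "tp = iet_top S"
  define bt where "bt = iet_bot S"
  define L where "L = iet_len S"
  define a where "a = hd (iet_top S)"
  define b where "b = hd (iet_bot S)"
  define l where "l = iet_left S"
  have eq': "L a = L b" using eq by (simp add: L_def a_def b_def)
  have ab': "a \<noteq> b" using ab by (simp add: a_def b_def)
  have tpne: "tp \<noteq> []" and dtp: "distinct tp" and dbt: "distinct bt" and sbt: "set bt = set tp"
    and pos: "\<forall>c\<in>set tp. L c > 0"
    using wf unfolding iet_wf_def tp_def bt_def L_def by auto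
  have btne: "bt \<noteq> []" using tpne sbt by auto
  define A where "A = tl tp"
  define B where "B = tl bt"
  have tpA: "tp = a # A" using tpne unfolding A_def a_def tp_def by simp
  have btB: "bt = b # B" using btne unfolding B_def b_def bt_def by simp
  have aA: "a \<notin> set A" and dA: "distinct A" using dtp tpA by auto
  have bB: "b \<notin> set B" and dB: "distinct B" using dbt btB by auto
  have aB: "a \<in> set B" using sbt tpA btB ab' by auto
  have bA: "b \<in> set A" using sbt tpA btB ab' by auto
  obtain B1 B2 where B: "B = B1 @ a # B2" using split_list[OF aB] by blast
  have aB1: "a \<notin> set B1" "a \<notin> set B2" "set B1 \<inter> set B2 = {}" "distinct B1" "distinct B2"
    using dB B by auto
  have bB1: "b \<notin> set B1" "b \<notin> set B2" using bB B by auto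
  have rr: "rauzy_left S = S\<lparr>iet_left := l + L a, iet_top := A, iet_bot := repl a b B\<rparr>"
    using eq' unfolding rauzy_left_def Let_def L_def a_def b_def A_def B_def tp_def bt_def l_def by simp
  have bt': "repl a b B = B1 @ b # B2" using B aB1 repl_split by metis
  define S' where "S' = rauzy_left S"
  have S'f: "iet_top S' = A" "iet_bot S' = B1 @ b # B2" "iet_len S' = L" "iet_left S' = l + L a"
    unfolding S'_def rr using bt' by (simp_all add: L_def)
  have bt_eq: "bt = b # B1 @ a # B2" using btB B by simp
  have aT: "a \<in> set tp" using tpA by auto
  have bT: "b \<in> set tp" using tpA bA by auto
  have wf': "iet_wf S'"
    unfolding iet_wf_def S'f
  proof (intro conjI)
    show "A \<noteq> []" using bA by auto
    show "distinct A" by fact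
    show "distinct (B1 @ b # B2)" using aB1 bB1 by auto
    show "set (B1 @ b # B2) = set A"
    proof -
      have "set bt = set A \<union> {a}" using tpA sbt by auto
      then show ?thesis using bt_eq aA aB1 bA ab' by auto
    qed
    show "\<forall>c\<in>set A. 0 < L c" using pos tpA by auto
  qed
  have ot: "off_top S' c = off_top S c - L a" if c: "c \<in> set A" for c
  proof -
    have "c \<noteq> a" using c aA by auto
    then have "tw c tp = a # tw c A" using tpA by simp
    then show ?thesis unfolding off_top_def S'f by (simp add: tp_def L_def)
  qed
  have ob: "off_bot S' c = off_bot S c - L a" if c: "c \<in> set A" "c \<noteq> b" for c
  proof -
    have cs: "c \<in> set B1 \<or> c \<in> set B2" using c bt_eq sbt tpA aA by auto
    have "sl L (tw c (B1 @ b # B2)) = sl L (tw c (b # B1 @ a # B2)) - L a"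
    proof -
      { assume c1: "c \<in> set B1"
        have ?thesis using tw_app1[OF c1, of "b # B2"] tw_app1[OF c1, of "a # B2"] c(2) eq' by simp }
      moreover
      { assume c3: "c \<in> set B2"
        have cn: "c \<notin> set B1" "c \<noteq> a" "c \<noteq> b" using c3 aB1 bB1 by auto
        have e1: "tw c (B1 @ b # B2) = B1 @ b # tw c B2" using tw_app2[of c B1] cn by simp
        have e2: "tw c (b # B1 @ a # B2) = b # B1 @ a # tw c B2" using tw_app2[of c B1] cn by simp
        have ?thesis unfolding e1 e2 using eq' by simp }
      ultimately show ?thesis using cs by blast
    qed
    then show ?thesis unfolding off_bot_def S'f using bt_eq L_def bt_def by simp
  qed
  have ob_b: "off_bot S' b = sl L B1"
  proof -
    have e1: "tw b (B1 @ b # B2) = B1" using tw_split[of b B1] bB1 by simp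
    then show ?thesis unfolding off_bot_def S'f e1 by simp
  qed
  have ob_bS: "off_bot S b = 0" unfolding off_bot_def using btB by (simp add: bt_def)
  have ob_aS: "off_bot S a = L b + sl L B1" unfolding off_bot_def using bt_eq aB1 tw_split[of a B1] ab'
    by (simp add: bt_def L_def)
  have ot_aS: "off_top S a = 0" unfolding off_top_def using tpA by (simp add: tp_def)
  have right': "iet_right S' = iet_right S"
    unfolding iet_right_def S'f using tpA by (simp add: l_def tp_def L_def)
  have right: "iet_right S = l + L a + sl L A" unfolding iet_right_def using tpA by (simp add: l_def tp_def L_def)
  have st: "step2 S S'"
  proof (rule step2I[OF wf wf', of b b a])
    fix c assume c: "c \<in> set (iet_top S')" "c \<noteq> b"
    have cT: "c \<in> set A" using c S'f by simp
    have "ivl S' c = ivl S c"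
      unfolding ivl_def using ot[OF cT] S'f by (simp add: l_def L_def)
    then show "c \<in> set (iet_top S) \<and> ivl S' c \<subseteq> ivl S c
        \<and> off_bot S' c - off_top S' c = off_bot S c - off_top S c"
      using cT ot[OF cT] ob[OF cT c(2)] tpA by (simp add: tp_def)
  next
    assume "b \<in> set (iet_top S')"
    have ivb: "ivl S' b = ivl S b" unfolding ivl_def using ot[OF bA] S'f by (simp add: l_def L_def)
    have "\<forall>x\<in>ivl S' b. x + off_bot S b - off_top S b \<in> ivl S a \<and> x + off_bot S b - off_top S b \<notin> iet_dom S'"
    proof
      fix x assume x: "x \<in> ivl S' b"
      then have x1: "l + off_top S b \<le> x" "x < l + off_top S b + L b" using ivb by (auto simp: ivl_def l_def L_def)
      show "x + off_bot S b - off_top S b \<in> ivl S a \<and> x + off_bot S b - off_top S b \<notin> iet_dom S'"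
        using x1 ob_bS ot_aS eq' right right' S'f unfolding ivl_def iet_dom_def
        by (auto simp: l_def L_def)
    qed
    moreover have "off_bot S' b - off_top S' b = (off_bot S b - off_top S b) + (off_bot S a - off_top S a)"
      using ob_b ot[OF bA] ob_bS ob_aS ot_aS eq' by simp
    ultimately show "b \<in> set (iet_top S) \<and> a \<in> set (iet_top S) \<and> ivl S' b \<subseteq> ivl S b
        \<and> (\<forall>x\<in>ivl S' b. x + off_bot S b - off_top S b \<in> ivl S a \<and> x + off_bot S b - off_top S b \<notin> iet_dom S')
        \<and> off_bot S' b - off_top S' b = (off_bot S b - off_top S b) + (off_bot S a - off_top S a)"
      using bT aT ivb by (simp add: tp_def)
  qed
  show ?thesis
    using wf' S'f right' st ot unfolding S'_def
    by (simp add: l_def tp_def A_def L_def a_def)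
qed

lemma tw_block_q: "distinct (p @ q @ s) \<Longrightarrow> c \<in> set q \<Longrightarrow> tw c (p @ q @ s) = p @ tw c q"
proof -
  assume d: "distinct (p @ q @ s)" and c: "c \<in> set q"
  then have "c \<notin> set p" by auto
  then have "tw c (p @ q @ s) = p @ tw c (q @ s)" by (rule tw_app2)
  also have "tw c (q @ s) = tw c q" by (rule tw_app1[OF c])
  finally show ?thesis .
qed

lemma tw_block_p: "c \<in> set p \<Longrightarrow> tw c (p @ q @ s) = tw c p"
  using tw_app1[of c p] by auto

lemma tw_block_s: "distinct (p @ q @ s) \<Longrightarrow> c \<in> set s \<Longrightarrow> tw c (p @ q @ s) = p @ q @ tw c s"
proof -
  assume d: "distinct (p @ q @ s)" and c: "c \<in> set s"
  then have "c \<notin> set p" "c \<notin> set q" by auto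
  then show ?thesis using tw_app2[of c p "q @ s"] tw_app2[of c q s] by simp
qed

lemma block_inv:
  assumes wf: "iet_wf S" and tp: "iet_top S = p @ q @ s" and bt: "iet_bot S = p' @ q' @ s'"
    and sq: "set q = set q'" and sp: "sl (iet_len S) p = sl (iet_len S) p'"
  defines "lB \<equiv> iet_left S + sl (iet_len S) p"
  shows "iet_map S ` {lB..<lB + sl (iet_len S) q} = {lB..<lB + sl (iet_len S) q}"
proof -
  define L where "L = iet_len S"
  define l where "l = iet_left S"
  have dtp: "distinct (p @ q @ s)" and dbt: "distinct (p' @ q' @ s')"
    using wf tp bt unfolding iet_wf_def by auto
  have nn: "\<forall>c\<in>set (iet_top S). L c \<ge> 0" using wf_nonneg[OF wf] L_def by simp
  have nnb: "\<forall>c\<in>set (iet_bot S). L c \<ge> 0" using wf_nonneg_bot[OF wf] L_def by simp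
  have sqq: "sl L q = sl L q'" using sl_distinct_set[of q q' L] dtp dbt sq by auto
  have nnq: "\<forall>c\<in>set q. L c \<ge> 0" "\<forall>c\<in>set p. L c \<ge> 0" "\<forall>c\<in>set s. L c \<ge> 0" using nn tp by auto
  have nnq': "\<forall>c\<in>set q'. L c \<ge> 0" "\<forall>c\<in>set p'. L c \<ge> 0" "\<forall>c\<in>set s'. L c \<ge> 0" using nnb bt by auto
  have topq: "c \<in> set q" if "c \<in> set (iet_top S)" "x \<in> ivl S c" "l + sl L p \<le> x" "x < l + sl L p + sl L q" for c x
  proof -
    have x: "l + off_top S c \<le> x" "x < l + off_top S c + L c" using that(2) by (auto simp: ivl_def l_def L_def)
    have "c \<in> set p \<or> c \<in> set q \<or> c \<in> set s" using that(1) tp by auto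
    moreover
    { assume cp: "c \<in> set p"
      have "off_top S c + L c \<le> sl L p" unfolding off_top_def
        using tp tw_block_p[OF cp] sl_tw_le[OF nnq(2) cp] by (simp add: L_def)
      then have False using x that by simp }
    moreover
    { assume cs: "c \<in> set s"
      have "off_top S c \<ge> sl L p + sl L q" unfolding off_top_def
        using tp tw_block_s[OF dtp cs] sl_tw_nonneg[OF nnq(3)] by (simp add: L_def)
      then have False using x that by simp }
    ultimately show ?thesis by blast
  qed
  have botq: "c \<in> set q" if "c \<in> set (iet_top S)" "y \<in> bivl S c" "l + sl L p \<le> y" "y < l + sl L p + sl L q" for c y
  proof -
    have y: "l + off_bot S c \<le> y" "y < l + off_bot S c + L c" using that(2) by (auto simp: bivl_def l_def L_def)
    have "c \<in> set (iet_bot S)" using that(1) wf_set_bot[OF wf] by simp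
    then have "c \<in> set p' \<or> c \<in> set q' \<or> c \<in> set s'" using bt by auto
    moreover
    { assume cp: "c \<in> set p'"
      have "off_bot S c + L c \<le> sl L p'" unfolding off_bot_def
        using bt tw_block_p[OF cp] sl_tw_le[OF nnq'(2) cp] by (simp add: L_def)
      then have False using y that sp by (simp add: L_def) }
    moreover
    { assume cs: "c \<in> set s'"
      have "off_bot S c \<ge> sl L p' + sl L q'" unfolding off_bot_def
        using bt tw_block_s[OF dbt cs] sl_tw_nonneg[OF nnq'(3)] by (simp add: L_def)
      then have False using y that sp sqq by (simp add: L_def) }
    ultimately show ?thesis using sq by blast
  qed
  have ivq: "ivl S c \<subseteq> {l + sl L p..<l + sl L p + sl L q}" if "c \<in> set q" for c
  proof -
    have "off_top S c = sl L p + sl L (tw c q)" unfolding off_top_def using tp tw_block_q[OF dtp that] by (simp add: L_def)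
    moreover have "sl L (tw c q) + L c \<le> sl L q" by (rule sl_tw_le[OF nnq(1) that])
    moreover have "sl L (tw c q) \<ge> 0" by (rule sl_tw_nonneg[OF nnq(1)])
    ultimately show ?thesis by (auto simp: ivl_def l_def L_def)
  qed
  have bivq: "bivl S c \<subseteq> {l + sl L p..<l + sl L p + sl L q}" if "c \<in> set q" for c
  proof -
    have c': "c \<in> set q'" using that sq by simp
    have "off_bot S c = sl L p' + sl L (tw c q')" unfolding off_bot_def using bt tw_block_q[OF dbt c'] by (simp add: L_def)
    moreover have "sl L (tw c q') + L c \<le> sl L q'" by (rule sl_tw_le[OF nnq'(1) c'])
    moreover have "sl L (tw c q') \<ge> 0" by (rule sl_tw_nonneg[OF nnq'(1)])
    ultimately show ?thesis using sp sqq by (auto simp: bivl_def l_def L_def)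
  qed
  have right: "iet_right S = l + sl L p + sl L q + sl L s" unfolding iet_right_def using tp by (simp add: l_def L_def)
  have sn: "sl L s \<ge> 0" "sl L p \<ge> 0" using sl_nonneg nnq by blast+
  have J: "{lB..<lB + sl L q} \<subseteq> iet_dom S" unfolding lB_def iet_dom_def using right sn by (auto simp: l_def L_def)
  show ?thesis unfolding L_def[symmetric]
  proof
    show "iet_map S ` {lB..<lB + sl L q} \<subseteq> {lB..<lB + sl L q}"
    proof
      fix y assume "y \<in> iet_map S ` {lB..<lB + sl L q}"
      then obtain x where x: "x \<in> {lB..<lB + sl L q}" "y = iet_map S x" by blast
      obtain c where c: "c \<in> set (iet_top S)" "x \<in> ivl S c" using dom_cover[OF wf] J x(1) by blast
      have cq: "c \<in> set q" using topq[OF c] x(1) by (simp add: lB_def l_def L_def)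
      show "y \<in> {lB..<lB + sl L q}" using map_ivl_bivl[OF wf c] bivq[OF cq] x(2) by (auto simp: lB_def l_def L_def)
    qed
    show "{lB..<lB + sl L q} \<subseteq> iet_map S ` {lB..<lB + sl L q}"
    proof
      fix y assume y: "y \<in> {lB..<lB + sl L q}"
      obtain c where c: "c \<in> set (iet_top S)" "y \<in> bivl S c" using dom_cover_bot[OF wf] J y by blast
      have cq: "c \<in> set q" using botq[OF c] y by (simp add: lB_def l_def L_def)
      have "y \<in> iet_map S ` ivl S c" using map_image_ivl[OF wf c(1)] c(2) by simp
      then show "y \<in> iet_map S ` {lB..<lB + sl L q}" using ivq[OF cq] by (auto simp: lB_def l_def L_def)
    qed
  qed
qed

lemma split_suffix:
  assumes wf: "iet_wf S" and tp: "iet_top S = p @ q" and bt: "iet_bot S = p' @ q'"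
    and sq: "set q = set q'" and pne: "p \<noteq> []" and qne: "q \<noteq> []"
  defines "S' \<equiv> S\<lparr>iet_top := p, iet_bot := filter (\<lambda>c. c \<notin> set q) (iet_bot S)\<rparr>"
  shows "iet_step (S, e) (S', (\<lambda>x. if x < iet_left S + sl (iet_len S) p then e x
            else e (x + (iet_left S + sl (iet_len S) p + sl (iet_len S) q - (iet_left S + sl (iet_len S) p)))))"
    and "iet_wf S'" "iet_left S' = iet_left S" "iet_right S' = iet_left S + sl (iet_len S) p"
      "iet_top S' = p" "iet_len S' = iet_len S" "step2 S S'"
      "\<forall>c\<in>set p. off_top S' c = off_top S c"
proof -
  define L where "L = iet_len S"
  have dtp: "distinct (p @ q)" and dbt: "distinct (p' @ q')" and sbt: "set (p' @ q') = set (p @ q)"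
    using wf tp bt unfolding iet_wf_def by auto
  have sp: "set p = set p'" using dtp dbt sbt sq by auto
  have slp: "sl L p = sl L p'" using sl_distinct_set[of p p' L] dtp dbt sp by auto
  have filt: "filter (\<lambda>c. c \<notin> set q) (iet_bot S) = p'"
    using bt dbt sq by (auto intro!: filter_True simp: filter_empty_conv)
  have S'f: "iet_top S' = p" "iet_bot S' = p'" "iet_len S' = L" "iet_left S' = iet_left S"
    unfolding S'_def using filt by (simp_all add: L_def)
  have inv: "iet_map S ` {iet_left S + sl L p..<iet_left S + sl L p + sl L q} = {iet_left S + sl L p..<iet_left S + sl L p + sl L q}"
    using block_inv[OF wf, of p q "[]" p' q' "[]"] tp bt sq slp by (simp add: L_def)
  show "iet_step (S, e) (S', (\<lambda>x. if x < iet_left S + sl (iet_len S) p then e x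
            else e (x + (iet_left S + sl (iet_len S) p + sl (iet_len S) q - (iet_left S + sl (iet_len S) p)))))"
    using iet_step.split_out[of S p q "[]" "iet_left S + sl (iet_len S) p" "iet_left S + sl (iet_len S) p + sl (iet_len S) q" e] tp qne pne inv
    unfolding S'_def L_def by simp
  have wf': "iet_wf S'" unfolding iet_wf_def S'f using pne dtp dbt sp wf tp unfolding iet_wf_def L_def by auto
  show "iet_wf S'" by (fact wf')
  show "iet_left S' = iet_left S" "iet_top S' = p" "iet_len S' = iet_len S" using S'f by (simp_all add: L_def)
  show "iet_right S' = iet_left S + sl (iet_len S) p" unfolding iet_right_def S'f by (simp add: L_def)
  have ot: "off_top S' c = off_top S c" if "c \<in> set p" for c
    unfolding off_top_def S'f using tp tw_app1[OF that, of q] by (simp add: L_def)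
  show "\<forall>c\<in>set p. off_top S' c = off_top S c" using ot by blast
  have ob: "off_bot S' c = off_bot S c" if "c \<in> set p" for c
  proof -
    have "c \<in> set p'" using that sp by simp
    then show ?thesis unfolding off_bot_def S'f using bt tw_app1[of c p' q'] by (simp add: L_def)
  qed
  show "step2 S S'"
  proof (rule step2I[OF wf wf', of "hd q"])
    fix c assume c: "c \<in> set (iet_top S')" "c \<noteq> hd q"
    then have cp: "c \<in> set p" using S'f by simp
    show "c \<in> set (iet_top S) \<and> ivl S' c \<subseteq> ivl S c \<and> off_bot S' c - off_top S' c = off_bot S c - off_top S c"
      using cp tp ot[OF cp] ob[OF cp] S'f by (simp add: ivl_def L_def)
  next
    assume "hd q \<in> set (iet_top S')"
    then have False using S'f dtp qne by (cases q) auto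
    then show "hd q \<in> set (iet_top S) \<and> hd q \<in> set (iet_top S) \<and> ivl S' (hd q) \<subseteq> ivl S (hd q) \<and>
      (\<forall>x\<in>ivl S' (hd q). x + off_bot S (hd q) - off_top S (hd q) \<in> ivl S (hd q) \<and> x + off_bot S (hd q) - off_top S (hd q) \<notin> iet_dom S') \<and>
      off_bot S' (hd q) - off_top S' (hd q) = off_bot S (hd q) - off_top S (hd q) + (off_bot S (hd q) - off_top S (hd q))" by blast
  qed
qed

lemma split_prefix:
  assumes wf: "iet_wf S" and tp: "iet_top S = p @ q" and bt: "iet_bot S = p' @ q'"
    and sp: "set p = set p'" and pne: "p \<noteq> []" and qne: "q \<noteq> []"
  defines "S' \<equiv> S\<lparr>iet_left := iet_left S + sl (iet_len S) p, iet_top := q, iet_bot := filter (\<lambda>c. c \<in> set q) (iet_bot S)\<rparr>"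
  shows "iet_step (S, e) (S', e)"
    and "iet_wf S'" "iet_left S' = iet_left S + sl (iet_len S) p" "iet_right S' = iet_right S"
      "iet_top S' = q" "iet_len S' = iet_len S" "step2 S S'"
      "\<forall>c\<in>set q. iet_left S' + off_top S' c = iet_left S + off_top S c"
proof -
  define L where "L = iet_len S"
  have dtp: "distinct (p @ q)" and dbt: "distinct (p' @ q')" and sbt: "set (p' @ q') = set (p @ q)"
    using wf tp bt unfolding iet_wf_def by auto
  have sq: "set q = set q'" using dtp dbt sbt sp by auto
  have slp: "sl L p = sl L p'" using sl_distinct_set[of p p' L] dtp dbt sp by auto
  have filt: "filter (\<lambda>c. c \<in> set q) (iet_bot S) = q'"
    using bt dbt sq sp dtp by (auto intro!: filter_True simp: filter_empty_conv)
  have S'f: "iet_top S' = q" "iet_bot S' = q'" "iet_len S' = L" "iet_left S' = iet_left S + sl L p"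
    unfolding S'_def using filt by (simp_all add: L_def)
  have inv: "iet_map S ` {iet_left S + sl L p..<iet_left S + sl L p + sl L q} = {iet_left S + sl L p..<iet_left S + sl L p + sl L q}"
    using block_inv[OF wf, of p q "[]" p' q' "[]"] tp bt sq slp by (simp add: L_def)
  show "iet_step (S, e) (S', e)"
    using iet_step.split_in[of S p q "[]" "iet_left S + sl (iet_len S) p" "iet_left S + sl (iet_len S) p + sl (iet_len S) q" e] tp qne pne inv
    unfolding S'_def L_def by simp
  have wf': "iet_wf S'" unfolding iet_wf_def S'f using qne dtp dbt sq wf tp unfolding iet_wf_def L_def by auto
  show "iet_wf S'" by (fact wf')
  show "iet_left S' = iet_left S + sl (iet_len S) p" "iet_top S' = q" "iet_len S' = iet_len S" using S'f by (simp_all add: L_def)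
  show "iet_right S' = iet_right S" unfolding iet_right_def S'f using tp by (simp add: L_def)
  have ot: "off_top S' c = off_top S c - sl L p" if "c \<in> set q" for c
    unfolding off_top_def S'f using tp tw_block_q[of p q "[]" c] dtp that by (simp add: L_def)
  show "\<forall>c\<in>set q. iet_left S' + off_top S' c = iet_left S + off_top S c" using ot S'f by simp
  have ob: "off_bot S' c = off_bot S c - sl L p" if "c \<in> set q" for c
  proof -
    have "c \<in> set q'" using that sq by simp
    then show ?thesis unfolding off_bot_def S'f using bt tw_block_q[of p' q' "[]" c] dbt slp by (simp add: L_def)
  qed
  show "step2 S S'"
  proof (rule step2I[OF wf wf', of "hd p"])
    fix c assume c: "c \<in> set (iet_top S')" "c \<noteq> hd p"
    then have cq: "c \<in> set q" using S'f by simp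
    show "c \<in> set (iet_top S) \<and> ivl S' c \<subseteq> ivl S c \<and> off_bot S' c - off_top S' c = off_bot S c - off_top S c"
      using cq tp ot[OF cq] ob[OF cq] S'f by (simp add: ivl_def L_def)
  next
    assume "hd p \<in> set (iet_top S')"
    then have False using S'f dtp pne by (cases p) auto
    then show "hd p \<in> set (iet_top S) \<and> hd p \<in> set (iet_top S) \<and> ivl S' (hd p) \<subseteq> ivl S (hd p) \<and>
      (\<forall>x\<in>ivl S' (hd p). x + off_bot S (hd p) - off_top S (hd p) \<in> ivl S (hd p) \<and> x + off_bot S (hd p) - off_top S (hd p) \<notin> iet_dom S') \<and>
      off_bot S' (hd p) - off_top S' (hd p) = off_bot S (hd p) - off_top S (hd p) + (off_bot S (hd p) - off_top S (hd p))" by blast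
  qed
qed

section \<open>Combinatorial lemmas for the termination argument\<close>

definition after :: "'a list \<Rightarrow> 'a \<Rightarrow> 'a set" where
  "after xs c = set (tl (dropWhile (\<lambda>d. d \<noteq> c) xs))"

lemma after_Nil[simp]: "after [] c = {}"
  by (simp add: after_def)

lemma after_Cons: "after (x # xs) c = (if x = c then set xs else after xs c)"
  by (simp add: after_def)

lemma after_notin: "c \<notin> set xs \<Longrightarrow> after xs c = {}"
  by (induction xs) (auto simp: after_Cons)

lemma after_append: "after (xs @ ys) c = (if c \<in> set xs then after xs c \<union> set ys else after ys c)"
  by (induction xs) (auto simp: after_Cons)

lemma after_subset: "after xs c \<subseteq> set xs"
  by (induction xs) (auto simp: after_Cons)

lemma after_last: "distinct (ys @ [a]) \<Longrightarrow> after (ys @ [a]) a = {}"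
  by (simp add: after_append after_Cons)

lemma after_snoc: "c \<in> set ys \<Longrightarrow> after (ys @ [a]) c = insert a (after ys c)"
  by (simp add: after_append)

lemma after_ins:
  assumes d: "distinct ys" and a: "a \<notin> set ys" and b: "b \<in> set ys" and c: "c \<in> set ys"
  shows "after (ins_after a b ys) c = (if c = b \<or> b \<in> after ys c then insert a (after ys c) else after ys c)"
proof -
  obtain Y1 Y2 where Y: "ys = Y1 @ b # Y2" using split_list[OF b] by blast
  have bY: "b \<notin> set Y1" "b \<notin> set Y2" "set Y1 \<inter> set Y2 = {}" using d Y by auto
  have e: "ins_after a b (Y1 @ b # Y2) = Y1 @ b # a # Y2" using bY ins_after_split by metis
  show ?thesis unfolding Y e using bY a Y c after_subset[of Y1 c] after_subset[of Y2 c]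
    by (auto simp: after_append after_Cons)
qed

lemma after_ins_new:
  assumes d: "distinct ys" and a: "a \<notin> set ys" and b: "b \<in> set ys"
  shows "after (ins_after a b ys) a = after ys b"
proof -
  obtain Y1 Y2 where Y: "ys = Y1 @ b # Y2" using split_list[OF b] by blast
  have bY: "b \<notin> set Y1" "b \<notin> set Y2" "set Y1 \<inter> set Y2 = {}" using d Y by auto
  have e: "ins_after a b (Y1 @ b # Y2) = Y1 @ b # a # Y2" using bY ins_after_split by metis
  show ?thesis unfolding Y e using bY a Y by (auto simp: after_append after_Cons)
qed

lemma suffix_set:
  assumes "distinct xs" "finite G" "G \<subseteq> set xs" "\<forall>c\<in>G. after xs c \<subseteq> G"
  shows "set (drop (length xs - card G) xs) = G"
  using assms
proof (induction xs)
  case Nil then show ?case by simp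
next
  case (Cons x xs)
  show ?case
  proof (cases "x \<in> G")
    case True
    then have "after (x # xs) x \<subseteq> G" using Cons.prems(4) by blast
    then have "set xs \<subseteq> G" by (simp add: after_Cons)
    then have G: "G = set (x # xs)" using Cons.prems(3) True by auto
    then have "card G = length (x # xs)" using Cons.prems(1) distinct_card by metis
    then show ?thesis using G by simp
  next
    case False
    then have G: "G \<subseteq> set xs" using Cons.prems(3) by auto
    have a: "\<forall>c\<in>G. after xs c \<subseteq> G" using Cons.prems(4) False by (auto simp: after_Cons split: if_splits)
    have IH: "set (drop (length xs - card G) xs) = G" using Cons.IH Cons.prems(1,2) G a by auto
    have "card G \<le> card (set xs)" using G by (simp add: card_mono)
    also have "\<dots> = length xs" using Cons.prems(1) distinct_card by auto
    finally have "length (x # xs) - card G = Suc (length xs - card G)" by simp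
    then show ?thesis using IH by simp
  qed
qed

lemma ins_after_len_set:
  assumes "distinct ys" "b \<in> set ys" "a \<notin> set ys"
  shows "length (ins_after a b ys) = Suc (length ys)" "set (ins_after a b ys) = insert a (set ys)"
    "distinct (ins_after a b ys)"
proof -
  obtain Y1 Y2 where Y: "ys = Y1 @ b # Y2" using split_list[OF assms(2)] by blast
  have bY: "b \<notin> set Y1" "b \<notin> set Y2" using assms(1) Y by auto
  have e: "ins_after a b (Y1 @ b # Y2) = Y1 @ b # a # Y2" using bY ins_after_split by metis
  have dY: "distinct (Y1 @ b # Y2)" "a \<notin> set (Y1 @ b # Y2)" using assms(1,3) Y by simp_all
  show "length (ins_after a b ys) = Suc (length ys)" unfolding Y e by simp
  show "set (ins_after a b ys) = insert a (set ys)" unfolding Y e by auto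
  show "distinct (ins_after a b ys)" unfolding Y e using dY by auto
qed

lemma eventually_const_nat:
  fixes g :: "nat \<Rightarrow> nat"
  assumes mono: "\<And>n. g (Suc n) \<le> g n"
  shows "\<exists>k. \<forall>n\<ge>k. g n = g k"
proof -
  have le0: "g n \<le> g 0" for n using lift_Suc_antimono_le[of g 0 n] mono by simp
  have fin: "finite (range g)" by (rule finite_subset[of _ "{..g 0}"]) (use le0 in auto)
  have "Min (range g) \<in> range g" using Min_in[OF fin] by blast
  then obtain k where k: "g k = Min (range g)" by auto
  have "\<forall>n\<ge>k. g n = g k"
  proof (intro allI impI)
    fix n assume n: "n \<ge> k"
    have "g n \<le> g k" using lift_Suc_antimono_le[of g k n] mono n by simp
    moreover have "Min (range g) \<le> g n" using Min_le[OF fin] by blast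
    ultimately show "g n = g k" using k by simp
  qed
  then show ?thesis by blast
qed

lemma finite_eps:
  assumes "finite A" "\<forall>c\<in>A. \<exists>e>0. \<forall>n. e \<le> (f n c :: real)"
  shows "\<exists>e>0. \<forall>c\<in>A. \<forall>n. e \<le> f n c"
  using assms
proof (induction A rule: finite_induct)
  case empty then show ?case by (intro exI[of _ 1]) auto
next
  case (insert x A)
  obtain e1 where e1: "e1 > 0" "\<forall>c\<in>A. \<forall>n. e1 \<le> f n c" using insert by auto
  obtain e2 where e2: "e2 > 0" "\<forall>n. e2 \<le> f n x" using insert.prems by auto
  have "\<forall>c\<in>insert x A. \<forall>n. min e1 e2 \<le> f n c"
  proof (intro ballI allI)
    fix c n assume c: "c \<in> insert x A"
    show "min e1 e2 \<le> f n c"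
    proof (cases "c = x")
      case True then show ?thesis using e2 by (metis min.coboundedI2)
    next
      case False then have "c \<in> A" using c by simp
      then show ?thesis using e1 by (metis min.coboundedI1)
    qed
  qed
  then show ?case using e1 e2 by (intro exI[of _ "min e1 e2"]) simp
qed

lemma sum_update_one:
  assumes "finite R" "w \<in> R"
  shows "(\<Sum>c\<in>R. (if c = w then f c - (d::real) else f c)) = (\<Sum>c\<in>R. f c) - d"
proof -
  have "(\<Sum>c\<in>R. (if c = w then f c - d else f c)) = (f w - d) + (\<Sum>c\<in>R - {w}. f c)"
    using sum.remove[OF assms, of "\<lambda>c. if c = w then f c - d else f c"] by simp
  also have "\<dots> = (\<Sum>c\<in>R. f c) - d" using sum.remove[OF assms, of f] by simp
  finally show ?thesis .
qed

lemma rr_T_comb: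
  "iet_len S (last (iet_bot S)) < iet_len S (last (iet_top S)) \<Longrightarrow>
   rauzy_right S = S\<lparr>iet_bot := ins_after (last (iet_bot S)) (last (iet_top S)) (butlast (iet_bot S)),
     iet_len := (iet_len S)(last (iet_top S) := iet_len S (last (iet_top S)) - iet_len S (last (iet_bot S)))\<rparr>"
  by (simp add: rauzy_right_def Let_def)

lemma rr_B_comb:
  "iet_len S (last (iet_top S)) < iet_len S (last (iet_bot S)) \<Longrightarrow>
   rauzy_right S = S\<lparr>iet_top := ins_after (last (iet_top S)) (last (iet_bot S)) (butlast (iet_top S)),
     iet_len := (iet_len S)(last (iet_bot S) := iet_len S (last (iet_bot S)) - iet_len S (last (iet_top S)))\<rparr>"
  by (simp add: rauzy_right_def Let_def)

lemma distinct_butlast_last: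
  assumes "distinct xs" "xs \<noteq> []"
  shows "last xs \<notin> set (butlast xs)" "set xs = insert (last xs) (set (butlast xs))"
    "distinct (butlast xs)" "xs = butlast xs @ [last xs]"
proof -
  have e: "xs = butlast xs @ [last xs]" using assms(2) by simp
  show "xs = butlast xs @ [last xs]" by (fact e)
  have "distinct (butlast xs @ [last xs])" using assms(1) e by simp
  then show "last xs \<notin> set (butlast xs)" "distinct (butlast xs)" by simp_all
  have "set xs = set (butlast xs @ [last xs])" using e by simp
  then show "set xs = insert (last xs) (set (butlast xs))" by simp
qed

lemma drop_ins_set:
  assumes d: "distinct (Y1 @ b # Y2 @ [a])" and bi: "b \<in> set (drop i (Y1 @ b # Y2 @ [a]))"
  shows "set (drop i (Y1 @ b # a # Y2)) = set (drop i (Y1 @ b # Y2 @ [a]))"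
proof -
  have "i \<le> length Y1"
  proof (rule ccontr)
    assume "\<not> i \<le> length Y1"
    then obtain k where k: "i = length Y1 + Suc k" by (metis add_Suc_right less_imp_Suc_add not_le)
    have "drop i (Y1 @ b # Y2 @ [a]) = drop k (Y2 @ [a])" using k by simp
    then have "b \<in> set (Y2 @ [a])" using bi in_set_dropD by fastforce
    then show False using d by auto
  qed
  then show ?thesis by (auto simp: drop_append)
qed

lemma last_in_drop: "i < length xs \<Longrightarrow> last xs \<in> set (drop i xs)"
proof -
  assume "i < length xs"
  then have "drop i xs \<noteq> []" by simp
  then have "last (drop i xs) \<in> set (drop i xs)" by (rule last_in_set)
  moreover have "last (drop i xs) = last xs" using \<open>i < length xs\<close> by (simp add: last_drop)
  ultimately show ?thesis by simp
qed

lemma noinf_right: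
  fixes S :: "nat \<Rightarrow> 'a iet" and i :: nat
  assumes wf: "\<And>n. iet_wf (S n)"
    and nxt: "\<And>n. S (Suc n) = rauzy_right (S n)"
    and ne: "\<And>n. last (iet_top (S n)) \<noteq> last (iet_bot (S n))"
    and neq: "\<And>n. iet_len (S n) (last (iet_top (S n))) \<noteq> iet_len (S n) (last (iet_bot (S n)))"
    and ilen: "\<And>n. i < length (iet_top (S n))"
    and h4: "\<And>n. iet_len (S n) (last (iet_top (S n))) < iet_len (S n) (last (iet_bot (S n))) \<Longrightarrow>
               last (iet_bot (S n)) \<in> set (drop i (iet_top (S n)))"
    and h5: "\<And>n j. 1 \<le> j \<Longrightarrow> i + j \<le> length (iet_top (S n)) \<Longrightarrow>
               set (drop (length (iet_top (S n)) - j) (iet_top (S n))) \<noteq> set (drop (length (iet_top (S n)) - j) (iet_bot (S n)))"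
  shows False
proof -
  define tp where "tp n = iet_top (S n)" for n
  define bt where "bt n = iet_bot (S n)" for n
  define L where "L n = iet_len (S n)" for n
  define a where "a n = last (tp n)" for n
  define b where "b n = last (bt n)" for n
  define T where "T n \<longleftrightarrow> L n (b n) < L n (a n)" for n
  define w where "w n = (if T n then a n else b n)" for n
  define lo where "lo n = (if T n then b n else a n)" for n
  define ch where "ch n = L n (lo n)" for n
  have nB: "\<not> T n \<Longrightarrow> L n (a n) < L n (b n)" for n using neq[of n] unfolding T_def L_def a_def b_def tp_def bt_def by auto
  have ab: "a n \<noteq> b n" for n using ne[of n] by (simp add: a_def b_def tp_def bt_def)
  have dtp: "distinct (tp n)" and dbt: "distinct (bt n)" and sbt: "set (bt n) = set (tp n)"
    and tpne: "tp n \<noteq> []" and pos: "\<forall>c\<in>set (tp n). L n c > 0" for n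
    using wf[of n] unfolding iet_wf_def tp_def bt_def L_def by auto
  have btne: "bt n \<noteq> []" for n using tpne[of n] sbt[of n] by auto
  have stepT: "tp (Suc n) = tp n \<and> bt (Suc n) = ins_after (b n) (a n) (butlast (bt n))
      \<and> L (Suc n) = (L n)(a n := L n (a n) - L n (b n))" if "T n" for n
    using rr_T_comb[of "S n"] that nxt[of n] unfolding T_def tp_def bt_def L_def a_def b_def by simp
  have stepB: "bt (Suc n) = bt n \<and> tp (Suc n) = ins_after (a n) (b n) (butlast (tp n))
      \<and> L (Suc n) = (L n)(b n := L n (b n) - L n (a n))" if "\<not> T n" for n
    using rr_B_comb[of "S n"] nB[OF that] nxt[of n] unfolding T_def tp_def bt_def L_def a_def b_def by simp
  have Lupd: "L (Suc n) = (L n)(w n := L n (w n) - ch n)" for n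
    using stepT[of n] stepB[of n] unfolding w_def ch_def lo_def by (cases "T n") auto
  have aT: "a n \<in> set (tp n)" for n using tpne[of n] by (simp add: a_def)
  have bT: "b n \<in> set (tp n)" for n using btne[of n] sbt[of n] by (metis b_def last_in_set)
  have bBut: "a n \<in> set (butlast (bt n))" if "T n" for n
    using ab[of n] distinct_butlast_last(2)[OF dbt btne, of n] aT[of n] sbt[of n] unfolding b_def by auto
  define A0 where "A0 = set (tp 0)"
  have setn: "set (tp n) = A0" for n
  proof (induction n)
    case 0 then show ?case by (simp add: A0_def)
  next
    case (Suc n)
    show ?case
    proof (cases "T n")
      case True then show ?thesis using stepT Suc by simp
    next
      case False
      have bB: "b n \<in> set (butlast (tp n))" using bT[of n] ab[of n] distinct_butlast_last(2)[OF dtp tpne, of n]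
        unfolding a_def by auto
      have "set (tp (Suc n)) = insert (a n) (set (butlast (tp n)))"
        using stepB[OF False] ins_after_len_set(2)[OF distinct_butlast_last(3)[OF dtp tpne] bB distinct_butlast_last(1)[OF dtp tpne]]
        by (simp add: a_def)
      also have "\<dots> = set (tp n)" using distinct_butlast_last(2)[OF dtp tpne, of n] by (simp add: a_def)
      finally show ?thesis using Suc by simp
    qed
  qed
  have finA: "finite A0" by (simp add: A0_def)
  have lenn: "length (tp n) = card A0" for n using distinct_card[OF dtp[of n]] setn[of n] by simp
  define R0 where "R0 = set (drop i (tp 0))"
  have Rn: "set (drop i (tp n)) = R0" for n
  proof (induction n)
    case 0 then show ?case by (simp add: R0_def)
  next
    case (Suc n)
    show ?case
    proof (cases "T n")
      case True then show ?thesis using stepT Suc by simp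
    next
      case False
      have bB: "b n \<in> set (butlast (tp n))" using bT[of n] ab[of n] distinct_butlast_last(2)[OF dtp tpne, of n]
        unfolding a_def by auto
      obtain Y1 Y2 where Y: "butlast (tp n) = Y1 @ b n # Y2" using split_list[OF bB] by blast
      have tpY: "tp n = Y1 @ b n # Y2 @ [a n]" using distinct_butlast_last(4)[OF dtp tpne, of n] Y by (simp add: a_def)
      have bY: "b n \<notin> set Y1" "b n \<notin> set Y2" using distinct_butlast_last(3)[OF dtp tpne, of n] Y by auto
      have tpS: "tp (Suc n) = Y1 @ b n # a n # Y2" using stepB[OF False] Y bY ins_after_split by metis
      have h: "b n \<in> set (drop i (tp n))" using h4[of n] nB[OF False] unfolding tp_def bt_def L_def a_def b_def by simp
      have "set (drop i (tp (Suc n))) = set (drop i (tp n))"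
        unfolding tpS tpY by (rule drop_ins_set) (use dtp[of n] tpY h in auto)
      then show ?thesis using Suc by simp
    qed
  qed
  have wR: "w n \<in> R0" for n
  proof (cases "T n")
    case True
    have "a n \<in> set (drop i (tp n))" using last_in_drop[OF ilen[of n]] by (simp add: a_def tp_def)
    then show ?thesis using True Rn[of n] by (simp add: w_def)
  next
    case False
    have "b n \<in> set (drop i (tp n))" using h4[of n] nB[OF False] unfolding tp_def bt_def L_def a_def b_def by simp
    then show ?thesis using False Rn[of n] by (simp add: w_def)
  qed
  have R0A: "R0 \<subseteq> A0" using Rn[of 0] setn[of 0] by (auto dest: in_set_dropD)
  have posA: "c \<in> A0 \<Longrightarrow> L n c > 0" for n c using pos[of n] setn[of n] by auto
  have loA: "lo n \<in> A0" for n using aT[of n] bT[of n] setn[of n] by (auto simp: lo_def)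
  have wA: "w n \<in> A0" for n using aT[of n] bT[of n] setn[of n] by (auto simp: w_def)
  have chpos: "ch n > 0" for n using posA[OF loA] by (simp add: ch_def)
  have Lconst: "c \<noteq> w n \<Longrightarrow> L (Suc n) c = L n c" for n c using Lupd[of n] by simp
  have Lmono: "L (Suc n) c \<le> L n c" for n c using Lupd[of n] chpos[of n] by simp
  have sumR: "(\<Sum>c\<in>R0. L n c) = (\<Sum>c\<in>R0. L 0 c) - (\<Sum>m<n. ch m)" for n
  proof (induction n)
    case 0 then show ?case by simp
  next
    case (Suc n)
    have fR: "finite R0" using finA R0A finite_subset by blast
    have "(\<Sum>c\<in>R0. L (Suc n) c) = (\<Sum>c\<in>R0. (if c = w n then L n c - ch n else L n c))"
      using Lupd[of n] by (intro sum.cong) auto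
    also have "\<dots> = (\<Sum>c\<in>R0. L n c) - ch n" by (rule sum_update_one[OF fR wR])
    finally show ?case using Suc by simp
  qed
  have chbound: "(\<Sum>m<n. ch m) \<le> (\<Sum>c\<in>R0. L 0 c)" for n
  proof -
    have "(\<Sum>c\<in>R0. L n c) \<ge> 0" using posA R0A by (intro sum_nonneg) (auto intro: less_imp_le)
    then show ?thesis using sumR[of n] by simp
  qed
  have summ: "summable ch" by (rule summableI_nonneg_bounded[OF _ chbound]) (use chpos in \<open>auto intro: less_imp_le\<close>)
  have lim: "ch \<longlonglongrightarrow> 0" by (rule summable_LIMSEQ_zero[OF summ])
  define inF where "inF c \<longleftrightarrow> (\<exists>e>0. \<forall>n. e \<le> L n c)" for c
  define G where "G = {c \<in> A0. \<not> inF c}"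
  have finG: "finite G" using finA by (simp add: G_def)
  have finF: "finite {c\<in>A0. inF c}" using finA by simp
  have allF: "\<forall>c\<in>{c\<in>A0. inF c}. \<exists>e>0. \<forall>n. e \<le> L n c" unfolding inF_def by blast
  obtain eps where eps: "eps > 0" "\<forall>c\<in>{c\<in>A0. inF c}. \<forall>n. eps \<le> L n c"
    using finite_eps[OF finF allF] by blast
  have "\<forall>\<^sub>F n in sequentially. ch n < eps" using order_tendstoD(2)[OF lim eps(1)] .
  then obtain N0 where N0: "\<forall>n\<ge>N0. ch n < eps" unfolding eventually_sequentially by blast
  have loG: "lo n \<in> G" if "n \<ge> N0" for n
  proof -
    have "\<not> inF (lo n)"
    proof
      assume "inF (lo n)"
      then have "eps \<le> L n (lo n)" using eps loA[of n] by blast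
      moreover have "ch n < eps" using N0 that by blast
      ultimately show False by (simp add: ch_def)
    qed
    then show ?thesis using loA[of n] by (simp add: G_def)
  qed
  have wins: "inF c" if c: "c \<in> A0" and nw: "\<forall>n\<ge>N. w n \<noteq> c" for c N
  proof -
    have eq: "L n c = L N c" if "n \<ge> N" for n
      using that
    proof (induction n)
      case 0 then show ?case by simp
    next
      case (Suc n)
      show ?case
      proof (cases "Suc n = N")
        case True then show ?thesis by simp
      next
        case False
        then have "n \<ge> N" using Suc.prems by simp
        moreover have "w n \<noteq> c" using nw \<open>n \<ge> N\<close> by blast
        ultimately show ?thesis using Suc.IH Lconst[of c n] by simp
      qed
    qed
    have "\<forall>n. L N c \<le> L n c"
    proof
      fix n show "L N c \<le> L n c"
      proof (cases "n \<le> N")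
        case True then show ?thesis using lift_Suc_antimono_le[of "\<lambda>n. L n c" n N] Lmono by simp
      next
        case False then show ?thesis using eq[of n] by simp
      qed
    qed
    then show ?thesis unfolding inF_def using posA[OF c, of N] by blast
  qed
  have Ginf: "\<exists>n\<ge>N. w n = c" if "c \<in> G" for c N
    using wins[of c N] that by (auto simp: G_def)
  have GR: "G \<subseteq> R0"
  proof
    fix c assume "c \<in> G"
    then obtain n where "w n = c" using Ginf[of c 0] by blast
    then show "c \<in> R0" using wR[of n] by simp
  qed
  have Gne: "G \<noteq> {}" using loG[of N0] by auto
  define Zt where "Zt n = {c\<in>G. after (tp n) c \<subseteq> G}" for n
  define Zb where "Zb n = {c\<in>G. after (bt n) c \<subseteq> G}" for n
  have Zstep: "Zt (Suc n) \<subseteq> Zt n \<and> Zb (Suc n) \<subseteq> Zb n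
      \<and> (T n \<longrightarrow> Zb (Suc n) = Zb n \<longrightarrow> after (butlast (bt n)) (a n) \<subseteq> G)
      \<and> (\<not> T n \<longrightarrow> Zt (Suc n) = Zt n \<longrightarrow> after (butlast (tp n)) (b n) \<subseteq> G)" if n: "n \<ge> N0" for n
  proof (cases "T n")
    case True
    have bG: "b n \<in> G" using loG[OF n] True by (simp add: lo_def)
    define B where "B = butlast (bt n)"
    have dB: "distinct B" "b n \<notin> set B" and btB: "bt n = B @ [b n]"
      using distinct_butlast_last[OF dbt btne, of n] by (simp_all add: B_def b_def)
    have aB: "a n \<in> set B" using bBut[OF True] by (simp add: B_def)
    have bt': "bt (Suc n) = ins_after (b n) (a n) B" using stepT[OF True] by (simp add: B_def)
    have aft: "after (bt (Suc n)) c \<subseteq> G \<longleftrightarrow> after (bt n) c \<subseteq> G" if "c \<noteq> b n" for c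
    proof (cases "c \<in> set B")
      case True
      have "after (bt (Suc n)) c = (if c = a n \<or> a n \<in> after B c then insert (b n) (after B c) else after B c)"
        unfolding bt' by (rule after_ins[OF dB aB True])
      moreover have "after (bt n) c = insert (b n) (after B c)" unfolding btB by (rule after_snoc[OF True])
      ultimately show ?thesis using bG by auto
    next
      case False
      have "c \<notin> set (bt n)" using False that btB by auto
      moreover have "c \<notin> set (bt (Suc n))" using False that ins_after_len_set(2)[OF dB(1) aB dB(2)] bt' by auto
      ultimately show ?thesis by (simp add: after_notin)
    qed
    have bnew: "after (bt (Suc n)) (b n) = after B (a n)" unfolding bt' by (rule after_ins_new[OF dB(1) dB(2) aB])
    have bold: "after (bt n) (b n) = {}" unfolding btB using after_last[of B "b n"] dB by simp
    have "Zb (Suc n) \<subseteq> Zb n"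
    proof
      fix c assume c: "c \<in> Zb (Suc n)"
      show "c \<in> Zb n"
      proof (cases "c = b n")
        case True then show ?thesis using bold bG by (simp add: Zb_def)
      next
        case False then show ?thesis using c aft[OF False] by (simp add: Zb_def)
      qed
    qed
    moreover have "Zb (Suc n) = Zb n \<longrightarrow> after B (a n) \<subseteq> G"
    proof
      assume "Zb (Suc n) = Zb n"
      moreover have "b n \<in> Zb n" using bold bG by (simp add: Zb_def)
      ultimately have "b n \<in> Zb (Suc n)" by simp
      then show "after B (a n) \<subseteq> G" using bnew by (simp add: Zb_def)
    qed
    moreover have "Zt (Suc n) = Zt n" using stepT[OF True] by (simp add: Zt_def)
    ultimately show ?thesis using True by (simp add: B_def)
  next
    case False
    have aG: "a n \<in> G" using loG[OF n] False by (simp add: lo_def)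
    define A where "A = butlast (tp n)"
    have dA: "distinct A" "a n \<notin> set A" and tpA: "tp n = A @ [a n]"
      using distinct_butlast_last[OF dtp tpne, of n] by (simp_all add: A_def a_def)
    have bA: "b n \<in> set A" using bT[of n] ab[of n] tpA by auto
    have tp': "tp (Suc n) = ins_after (a n) (b n) A" using stepB[OF False] by (simp add: A_def)
    have aft: "after (tp (Suc n)) c \<subseteq> G \<longleftrightarrow> after (tp n) c \<subseteq> G" if "c \<noteq> a n" for c
    proof (cases "c \<in> set A")
      case True
      have "after (tp (Suc n)) c = (if c = b n \<or> b n \<in> after A c then insert (a n) (after A c) else after A c)"
        unfolding tp' by (rule after_ins[OF dA bA True])
      moreover have "after (tp n) c = insert (a n) (after A c)" unfolding tpA by (rule after_snoc[OF True])
      ultimately show ?thesis using aG by auto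
    next
      case False
      have "c \<notin> set (tp n)" using False that tpA by auto
      moreover have "c \<notin> set (tp (Suc n))" using False that ins_after_len_set(2)[OF dA(1) bA dA(2)] tp' by auto
      ultimately show ?thesis by (simp add: after_notin)
    qed
    have anew: "after (tp (Suc n)) (a n) = after A (b n)" unfolding tp' by (rule after_ins_new[OF dA(1) dA(2) bA])
    have aold: "after (tp n) (a n) = {}" unfolding tpA using after_last[of A "a n"] dA by simp
    have "Zt (Suc n) \<subseteq> Zt n"
    proof
      fix c assume c: "c \<in> Zt (Suc n)"
      show "c \<in> Zt n"
      proof (cases "c = a n")
        case True then show ?thesis using aold aG by (simp add: Zt_def)
      next
        case False then show ?thesis using c aft[OF False] by (simp add: Zt_def)
      qed
    qed
    moreover have "Zt (Suc n) = Zt n \<longrightarrow> after A (b n) \<subseteq> G"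
    proof
      assume "Zt (Suc n) = Zt n"
      moreover have "a n \<in> Zt n" using aold aG by (simp add: Zt_def)
      ultimately have "a n \<in> Zt (Suc n)" by simp
      then show "after A (b n) \<subseteq> G" using anew by (simp add: Zt_def)
    qed
    moreover have "Zb (Suc n) = Zb n" using stepB[OF False] by (simp add: Zb_def)
    ultimately show ?thesis using False by (simp add: A_def)
  qed
  have finZ: "finite (Zt n)" "finite (Zb n)" for n using finG by (simp_all add: Zt_def Zb_def)
  define g where "g m = card (Zt (N0 + m)) + card (Zb (N0 + m))" for m
  have gmono: "g (Suc m) \<le> g m" for m
  proof -
    have "Zt (Suc (N0 + m)) \<subseteq> Zt (N0 + m)" "Zb (Suc (N0 + m)) \<subseteq> Zb (N0 + m)" using Zstep[of "N0 + m"] by auto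
    then show ?thesis unfolding g_def using card_mono[OF finZ(1)] card_mono[OF finZ(2)]
      by (simp add: add_mono)
  qed
  obtain k where k: "\<forall>m\<ge>k. g m = g k" using eventually_const_nat[of g] gmono by blast
  define N1 where "N1 = N0 + k"
  have chain: "Zt n \<subseteq> Zt N1 \<and> Zb n \<subseteq> Zb N1" if "n \<ge> N1" for n
    using that
  proof (induction n)
    case 0 then show ?case by (simp add: N1_def)
  next
    case (Suc n)
    show ?case
    proof (cases "Suc n = N1")
      case True then show ?thesis by simp
    next
      case False
      then have "n \<ge> N1" using Suc.prems by simp
      then have "n \<ge> N0" by (simp add: N1_def)
      then have "Zt (Suc n) \<subseteq> Zt n" "Zb (Suc n) \<subseteq> Zb n" using Zstep[of n] by blast+
      then show ?thesis using Suc.IH \<open>n \<ge> N1\<close> by blast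
    qed
  qed
  have const: "Zt n = Zt N1 \<and> Zb n = Zb N1" if n: "n \<ge> N1" for n
  proof -
    have c1: "Zt n \<subseteq> Zt N1" "Zb n \<subseteq> Zb N1" using chain[OF n] by auto
    have "n - N0 \<ge> k" using n by (simp add: N1_def)
    then have "g (n - N0) = g k" using k by blast
    then have eqc: "card (Zt n) + card (Zb n) = card (Zt N1) + card (Zb N1)"
      using n unfolding g_def N1_def by simp
    have "card (Zt n) \<le> card (Zt N1)" "card (Zb n) \<le> card (Zb N1)"
      using card_mono[OF finZ(1) c1(1)] card_mono[OF finZ(2) c1(2)] by auto
    then have "card (Zt n) = card (Zt N1)" "card (Zb n) = card (Zb N1)" using eqc by auto
    then show ?thesis using card_subset_eq[OF finZ(1) c1(1)] card_subset_eq[OF finZ(2) c1(2)] by auto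
  qed
  have GZ: "c \<in> Zt N1 \<and> c \<in> Zb N1" if c: "c \<in> G" for c
  proof -
    obtain n where n: "n \<ge> N1" "w n = c" using Ginf[OF c, of N1] by blast
    have nN0: "n \<ge> N0" using n by (simp add: N1_def)
    have cs: "Zt (Suc n) = Zt n" "Zb (Suc n) = Zb n" using const[of n] const[of "Suc n"] n by auto
    show ?thesis
    proof (cases "T n")
      case True
      then have ca: "c = a n" using n by (simp add: w_def)
      have bG: "b n \<in> G" using loG[OF nN0] True by (simp add: lo_def)
      have t: "after (tp n) c = {}" using after_last[of "butlast (tp n)" "a n"] distinct_butlast_last[OF dtp tpne, of n] ca dtp[of n]
        by (simp add: a_def)
      have aB: "after (butlast (bt n)) (a n) \<subseteq> G" using Zstep[OF nN0] True cs by blast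
      have "after (bt n) c = insert (b n) (after (butlast (bt n)) c)"
        using after_snoc[OF bBut[OF True], of "b n"] distinct_butlast_last(4)[OF dbt btne, of n] ca
        by (simp add: b_def)
      then have "after (bt n) c \<subseteq> G" using aB bG ca by simp
      then have "c \<in> Zt n" "c \<in> Zb n" using t c by (simp_all add: Zt_def Zb_def)
      then show ?thesis using const[OF n(1)] by simp
    next
      case False
      then have cb: "c = b n" using n by (simp add: w_def)
      have aG: "a n \<in> G" using loG[OF nN0] False by (simp add: lo_def)
      have t: "after (bt n) c = {}" using after_last[of "butlast (bt n)" "b n"] distinct_butlast_last[OF dbt btne, of n] cb dbt[of n]
        by (simp add: b_def)
      have bA: "after (butlast (tp n)) (b n) \<subseteq> G" using Zstep[OF nN0] False cs by blast
      have bBt: "b n \<in> set (butlast (tp n))" using bT[of n] ab[of n] distinct_butlast_last(2)[OF dtp tpne, of n]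
        unfolding a_def by auto
      have "after (tp n) c = insert (a n) (after (butlast (tp n)) c)"
        using after_snoc[OF bBt, of "a n"] distinct_butlast_last(4)[OF dtp tpne, of n] cb
        by (simp add: a_def)
      then have "after (tp n) c \<subseteq> G" using bA aG cb by simp
      then have "c \<in> Zt n" "c \<in> Zb n" using t c by (simp_all add: Zt_def Zb_def)
      then show ?thesis using const[OF n(1)] by simp
    qed
  qed
  have GA: "G \<subseteq> A0" by (auto simp: G_def)
  have st: "set (drop (length (tp N1) - card G) (tp N1)) = G"
    by (rule suffix_set[OF dtp finG]) (use GA setn[of N1] GZ in \<open>auto simp: Zt_def\<close>)
  have sb: "set (drop (length (bt N1) - card G) (bt N1)) = G"
    by (rule suffix_set[OF dbt finG]) (use GA setn[of N1] sbt[of N1] GZ in \<open>auto simp: Zb_def\<close>)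
  have lbt: "length (bt N1) = length (tp N1)"
    using distinct_card[OF dbt[of N1]] distinct_card[OF dtp[of N1]] sbt[of N1] by simp
  have j1: "1 \<le> card G" using Gne finG by (simp add: Suc_le_eq card_gt_0_iff)
  have "card G \<le> card R0" using GR card_mono finA R0A finite_subset by metis
  also have "card R0 = length (tp N1) - i"
    using Rn[of N1] distinct_card[OF distinct_drop[OF dtp[of N1]], of i] by simp
  finally have j2: "i + card G \<le> length (tp N1)" using ilen[of N1] unfolding tp_def by simp
  show False using h5[OF j1 j2[unfolded tp_def]] st sb lbt unfolding tp_def bt_def by simp
qed


definition mir :: "'a iet \<Rightarrow> 'a iet" where
  "mir S = \<lparr>iet_left = 0, iet_top = rev (iet_top S), iet_bot = rev (iet_bot S), iet_len = iet_len S\<rparr>"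

lemma rev_ins_before: "rev (ins_before b a xs) = ins_after b a (rev xs)"
  by (induction xs) (auto simp: ins_before_def ins_after_def)

lemma rev_repl: "rev (repl a b xs) = repl a b (rev xs)"
  by (simp add: repl_def rev_map)

lemma mir_left:
  assumes "iet_top S \<noteq> []" "iet_bot S \<noteq> []"
  shows "mir (rauzy_left S) = rauzy_right (mir S)"
proof -
  have h: "last (rev (iet_top S)) = hd (iet_top S)" "last (rev (iet_bot S)) = hd (iet_bot S)"
    using assms by (simp_all add: last_rev)
  have t: "butlast (rev (iet_top S)) = rev (tl (iet_top S))" "butlast (rev (iet_bot S)) = rev (tl (iet_bot S))"
    by (simp_all add: butlast_rev)
  show ?thesis
    unfolding mir_def rauzy_left_def rauzy_right_def Let_def
    by (simp add: h t rev_ins_before rev_repl)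
qed

lemma mir_wf: "iet_wf S \<Longrightarrow> iet_wf (mir S)"
  by (simp add: iet_wf_def mir_def)

lemma noinf_left:
  fixes S :: "nat \<Rightarrow> 'a iet" and j N :: nat
  assumes wf: "\<And>n. iet_wf (S n)"
    and nxt: "\<And>n. S (Suc n) = rauzy_left (S n)"
    and len: "\<And>n. length (iet_top (S n)) = N"
    and ne: "\<And>n. hd (iet_top (S n)) \<noteq> hd (iet_bot (S n))"
    and neq: "\<And>n. iet_len (S n) (hd (iet_top (S n))) \<noteq> iet_len (S n) (hd (iet_bot (S n)))"
    and jpos: "0 < j" "j \<le> N"
    and h4: "\<And>n. iet_len (S n) (hd (iet_top (S n))) < iet_len (S n) (hd (iet_bot (S n))) \<Longrightarrow>
               hd (iet_bot (S n)) \<in> set (take j (iet_top (S n)))"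
    and h5: "\<And>n m. 1 \<le> m \<Longrightarrow> m \<le> j \<Longrightarrow> set (take m (iet_top (S n))) \<noteq> set (take m (iet_bot (S n)))"
  shows False
proof -
  define M where "M n = mir (S n)" for n
  have ne0: "iet_top (S n) \<noteq> []" "iet_bot (S n) \<noteq> []" for n
    using wf[of n] unfolding iet_wf_def by auto
  have lb: "length (iet_bot (S n)) = N" for n
    using wf[of n] len[of n] unfolding iet_wf_def by (metis distinct_card)
  have hdl: "last (iet_top (M n)) = hd (iet_top (S n))" "last (iet_bot (M n)) = hd (iet_bot (S n))" for n
    using ne0[of n] by (simp_all add: M_def mir_def last_rev)
  have mf: "iet_top (M n) = rev (iet_top (S n))" "iet_bot (M n) = rev (iet_bot (S n))" "iet_len (M n) = iet_len (S n)" for n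
    by (simp_all add: M_def mir_def)
  show False
  proof (rule noinf_right[of M "N - j"])
    show "\<And>n. iet_wf (M n)" unfolding M_def by (rule mir_wf[OF wf])
    show "\<And>n. M (Suc n) = rauzy_right (M n)" unfolding M_def nxt by (rule mir_left[OF ne0])
    show "\<And>n. last (iet_top (M n)) \<noteq> last (iet_bot (M n))" using ne hdl by simp
    show "\<And>n. iet_len (M n) (last (iet_top (M n))) \<noteq> iet_len (M n) (last (iet_bot (M n)))" using neq hdl mf by simp
    show "\<And>n. N - j < length (iet_top (M n))" using len jpos mf by simp
    fix n
    show "iet_len (M n) (last (iet_top (M n))) < iet_len (M n) (last (iet_bot (M n))) \<Longrightarrow>
          last (iet_bot (M n)) \<in> set (drop (N - j) (iet_top (M n)))"
    proof -
      assume "iet_len (M n) (last (iet_top (M n))) < iet_len (M n) (last (iet_bot (M n)))"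
      then have "hd (iet_bot (S n)) \<in> set (take j (iet_top (S n)))" using h4 hdl mf by simp
      moreover have "set (drop (N - j) (iet_top (M n))) = set (take j (iet_top (S n)))"
        using mf(1)[of n] len[of n] rev_take[of j "iet_top (S n)"] by (metis set_rev)
      ultimately show ?thesis using hdl by simp
    qed
    fix m
    assume m: "1 \<le> m" "N - j + m \<le> length (iet_top (M n))"
    have mj: "m \<le> j" using m mf len[of n] jpos by simp
    have "set (drop (N - m) (iet_top (M n))) = set (take m (iet_top (S n)))"
      using mf(1)[of n] len[of n] rev_take[of m "iet_top (S n)"] by (metis set_rev)
    moreover have "set (drop (N - m) (iet_bot (M n))) = set (take m (iet_bot (S n)))"
      using mf(2)[of n] lb[of n] rev_take[of m "iet_bot (S n)"] by (metis set_rev)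
    ultimately show "set (drop (length (iet_top (M n)) - m) (iet_top (M n))) \<noteq>
         set (drop (length (iet_top (M n)) - m) (iet_bot (M n)))"
      using h5[OF m(1) mj, of n] mf len[of n] by simp
  qed
qed

definition idon :: "(real \<Rightarrow> real) \<Rightarrow> 'a iet \<Rightarrow> bool" where
  "idon e S \<longleftrightarrow> (\<forall>x\<in>iet_dom S. e x = x)"

definition icut :: "'a iet \<Rightarrow> nat \<Rightarrow> real" where
  "icut S i = iet_left S + sl (iet_len S) (take i (iet_top S))"

lemma dom_sub: "iet_left S \<le> iet_left S' \<Longrightarrow> iet_right S' \<le> iet_right S \<Longrightarrow> iet_dom S' \<subseteq> iet_dom S"
  by (auto simp: iet_dom_def)

lemma last_notin_take: "distinct xs \<Longrightarrow> i < length xs \<Longrightarrow> last xs \<notin> set (take i xs)"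
proof -
  assume d: "distinct xs" and i: "i < length xs"
  then have "xs \<noteq> []" by auto
  then have e: "xs = butlast xs @ [last xs]" by simp
  have "take i xs = take i (butlast xs)" using i e by (metis append_butlast_last_id length_butlast less_Suc_eq_le
        take_append take_eq_Nil2 diff_is_0_eq length_append_singleton append_Nil2 \<open>xs \<noteq> []\<close> zero_less_diff)
  moreover have "last xs \<notin> set (butlast xs)" using d e by (metis distinct_butlast_last(1) \<open>xs \<noteq> []\<close>)
  ultimately show ?thesis by (metis in_set_takeD)
qed

lemma dt_take:
  assumes wf: "iet_wf X" and c: "c \<in> set (iet_top X)"
    and lt: "off_top X c < sl (iet_len X) (take i (iet_top X))"
  shows "c \<in> set (take i (iet_top X))"
proof (rule ccontr)
  assume nc: "c \<notin> set (take i (iet_top X))"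
  have "tw c (iet_top X) = take i (iet_top X) @ tw c (drop i (iet_top X))"
    using tw_app2[OF nc, of "drop i (iet_top X)"] by simp
  moreover have "sl (iet_len X) (tw c (drop i (iet_top X))) \<ge> 0"
    using wf_nonneg[OF wf] by (intro sl_tw_nonneg) (auto dest: in_set_dropD)
  ultimately have "off_top X c \<ge> sl (iet_len X) (take i (iet_top X))" unfolding off_top_def by simp
  then show False using lt by simp
qed

lemma Dt_obtain: "u \<in> Dt X \<Longrightarrow> \<exists>c\<in>set (iet_top X). u = iet_left X + off_top X c"
  by (auto simp: Dt_def)

lemma DtI: "c \<in> set (iet_top X) \<Longrightarrow> iet_left X + off_top X c \<in> Dt X"
  by (auto simp: Dt_def)

lemma Dt_ge: "iet_wf X \<Longrightarrow> u \<in> Dt X \<Longrightarrow> iet_left X \<le> u"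
  using sl_tw_nonneg[OF wf_nonneg] by (auto simp: Dt_def off_top_def)

lemma steps_prepend: "iet_step (X, e) (X1, e1) \<Longrightarrow> iet_step\<^sup>*\<^sup>* (X1, e1) (S', e') \<Longrightarrow> iet_step\<^sup>*\<^sup>* (X, e) (S', e')"
  by (rule converse_rtranclp_into_rtranclp)

lemma icut_le_right: "iet_wf X \<Longrightarrow> icut X i \<le> iet_right X"
proof -
  assume wf: "iet_wf X"
  have "sl (iet_len X) (iet_top X) = sl (iet_len X) (take i (iet_top X)) + sl (iet_len X) (drop i (iet_top X))"
    by (metis append_take_drop_id map_append sum_list_append)
  moreover have "sl (iet_len X) (drop i (iet_top X)) \<ge> 0" using wf_nonneg[OF wf] by (intro sl_nonneg) (auto dest: in_set_dropD)
  ultimately show ?thesis by (simp add: icut_def iet_right_def)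
qed

lemma RP_split:
  assumes I: "Inv T X" and ie: "idon e X" and j: "1 \<le> j" "i + j \<le> length (iet_top X)" and i1: "1 \<le> i"
    and blk: "set (drop (length (iet_top X) - j) (iet_top X)) = set (drop (length (iet_top X) - j) (iet_bot X))"
    and u: "u \<in> Dt X" "u < icut X i"
  shows "\<exists>X1 e1. iet_step (X, e) (X1, e1) \<and> Inv T X1 \<and> idon e1 X1 \<and> length (iet_top X1) = length (iet_top X) - j
     \<and> iet_left X1 = iet_left X \<and> icut X1 i = icut X i \<and> u \<in> Dt X1"
proof -
  have wf: "iet_wf X" using I by (simp add: Inv_def)
  define N where "N = length (iet_top X)"
  define p where "p = take (N - j) (iet_top X)"
  define q where "q = drop (N - j) (iet_top X)"
  define p' where "p' = take (N - j) (iet_bot X)"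
  define q' where "q' = drop (N - j) (iet_bot X)"
  have tp: "iet_top X = p @ q" and bt: "iet_bot X = p' @ q'" by (simp_all add: p_def q_def p'_def q'_def)
  have sq: "set q = set q'" using blk by (simp add: q_def q'_def N_def)
  have "iet_top X \<noteq> []" using j i1 by auto
  then have pne: "p \<noteq> []" using j i1 by (simp add: p_def N_def)
  have qne: "q \<noteq> []" using j by (simp add: q_def N_def)
  define X1 where "X1 = X\<lparr>iet_top := p, iet_bot := filter (\<lambda>c. c \<notin> set q) (iet_bot X)\<rparr>"
  define e1 where "e1 = (\<lambda>x. if x < iet_left X + sl (iet_len X) p then e x
            else e (x + (iet_left X + sl (iet_len X) p + sl (iet_len X) q - (iet_left X + sl (iet_len X) p))))"
  note sp = split_suffix[OF wf tp bt sq pne qne, folded X1_def]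
  have step: "iet_step (X, e) (X1, e1)" using sp(1)[of e] unfolding e1_def .
  have wf1: "iet_wf X1" and l1: "iet_left X1 = iet_left X" and r1: "iet_right X1 = iet_left X + sl (iet_len X) p"
    and t1: "iet_top X1 = p" and L1: "iet_len X1 = iet_len X" and st: "step2 X X1"
    and ot1: "\<forall>c\<in>set p. off_top X1 c = off_top X c" using sp by auto
  have r1c: "iet_right X1 = icut X (N - j)" using r1 by (simp add: icut_def p_def)
  have sub: "iet_dom X1 \<subseteq> iet_dom X" using l1 r1c icut_le_right[OF wf, of "N - j"] by (intro dom_sub) auto
  have I1: "Inv T X1" by (rule Inv_step[OF I wf1 sub st])
  have ie1: "idon e1 X1"
    unfolding idon_def
  proof
    fix x assume x: "x \<in> iet_dom X1"
    then have "x < iet_left X + sl (iet_len X) p" using r1 by (simp add: iet_dom_def)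
    then have "e1 x = e x" by (simp add: e1_def)
    also have "\<dots> = x" using ie x sub by (auto simp: idon_def)
    finally show "e1 x = x" .
  qed
  have len1: "length (iet_top X1) = N - j" using t1 j by (simp add: p_def N_def)
  have mi: "min i (N - j) = i" using j by (simp add: N_def)
  have tk: "take i p = take i (iet_top X)" using mi by (simp add: p_def)
  have cut1: "icut X1 i = icut X i" unfolding icut_def using l1 t1 L1 tk by simp
  obtain c where c: "c \<in> set (iet_top X)" "u = iet_left X + off_top X c" using Dt_obtain[OF u(1)] by blast
  have "off_top X c < sl (iet_len X) (take i (iet_top X))" using u(2) c by (simp add: icut_def)
  then have "c \<in> set (take i (iet_top X))" by (rule dt_take[OF wf c(1)])
  then have cp: "c \<in> set p" using tk by (metis in_set_takeD)
  have "u \<in> Dt X1" using DtI[of c X1] cp t1 ot1 l1 c(2) by simp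
  then show ?thesis using step I1 ie1 len1 l1 cut1 unfolding N_def by blast
qed

lemma RP_E:
  assumes I: "Inv T X" and ie: "idon e X" and i: "i < length (iet_top X)"
    and ab: "last (iet_top X) \<noteq> last (iet_bot X)"
    and eq: "iet_len X (last (iet_top X)) = iet_len X (last (iet_bot X))"
    and u: "u \<in> Dt X" "u < icut X i"
  shows "iet_step (X, e) (rauzy_right X, e) \<and> Inv T (rauzy_right X) \<and> idon e (rauzy_right X)
     \<and> length (iet_top (rauzy_right X)) = length (iet_top X) - 1
     \<and> iet_left (rauzy_right X) = iet_left X \<and> icut (rauzy_right X) i = icut X i \<and> u \<in> Dt (rauzy_right X)"
proof -
  have wf: "iet_wf X" using I by (simp add: Inv_def)
  note r = rr_E[OF wf ab eq]
  define X1 where "X1 = rauzy_right X"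
  have wf1: "iet_wf X1" and l1: "iet_left X1 = iet_left X" and r1: "iet_right X1 = iet_right X - iet_len X (last (iet_top X))"
    and L1: "iet_len X1 = iet_len X" and t1: "iet_top X1 = butlast (iet_top X)" and st: "step2 X X1"
    and ot1: "\<forall>c\<in>set (iet_top X1). off_top X1 c = off_top X c" using r by (simp_all add: X1_def)
  have step: "iet_step (X, e) (X1, e)" unfolding X1_def by (rule iet_step.right[OF ab])
  have pos: "iet_len X (last (iet_top X)) > 0" using wf_pos[OF wf] wf by (simp add: iet_wf_def)
  have sub: "iet_dom X1 \<subseteq> iet_dom X" using l1 r1 pos by (intro dom_sub) auto
  have I1: "Inv T X1" by (rule Inv_step[OF I wf1 sub st])
  have ie1: "idon e X1" using ie sub by (auto simp: idon_def)
  have tk: "take i (butlast (iet_top X)) = take i (iet_top X)" using i by (simp add: take_butlast)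
  have cut1: "icut X1 i = icut X i" unfolding icut_def using l1 t1 L1 tk by simp
  obtain c where c: "c \<in> set (iet_top X)" "u = iet_left X + off_top X c" using Dt_obtain[OF u(1)] by blast
  have "off_top X c < sl (iet_len X) (take i (iet_top X))" using u(2) c by (simp add: icut_def)
  then have "c \<in> set (take i (iet_top X))" by (rule dt_take[OF wf c(1)])
  then have cp: "c \<in> set (iet_top X1)" using tk t1 by (metis in_set_takeD)
  have "u \<in> Dt X1" using DtI[of c X1] cp ot1 l1 c(2) by simp
  then show ?thesis using step I1 ie1 l1 cut1 t1 unfolding X1_def by simp
qed

lemma RP_Bout:
  assumes I: "Inv T X" and ie: "idon e X" and i: "i < length (iet_top X)"
    and ab: "last (iet_top X) \<noteq> last (iet_bot X)"
    and lt: "iet_len X (last (iet_top X)) < iet_len X (last (iet_bot X))"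
    and bo: "last (iet_bot X) \<notin> set (drop i (iet_top X))"
    and u: "u \<in> Dt X" "u < icut X i"
  shows "iet_step (X, e) (rauzy_right X, e) \<and> Inv T (rauzy_right X) \<and> idon e (rauzy_right X)
     \<and> length (iet_top (rauzy_right X)) = length (iet_top X)
     \<and> iet_left (rauzy_right X) = iet_left X \<and> icut (rauzy_right X) (Suc i) = icut X i \<and> u \<in> Dt (rauzy_right X)"
proof -
  have wf: "iet_wf X" using I by (simp add: Inv_def)
  note r = rr_B[OF wf ab lt]
  define X1 where "X1 = rauzy_right X"
  define a where "a = last (iet_top X)"
  define b where "b = last (iet_bot X)"
  define L where "L = iet_len X"
  have wf1: "iet_wf X1" and l1: "iet_left X1 = iet_left X" and r1: "iet_right X1 = iet_right X - L a"
    and L1: "iet_len X1 = L(b := L b - L a)" and st: "step2 X X1"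
    and ot1: "\<forall>c\<in>set (iet_top X). c \<noteq> a \<longrightarrow> off_top X1 c = off_top X c"
    using r by (simp_all add: X1_def a_def b_def L_def)
  obtain A1 A2 where tpA: "iet_top X = A1 @ b # A2 @ [a]" and t1: "iet_top X1 = A1 @ b # a # A2"
    using r by (auto simp: X1_def a_def b_def)
  have step: "iet_step (X, e) (X1, e)" unfolding X1_def by (rule iet_step.right[OF ab])
  have pos: "L a > 0" using wf_pos[OF wf] tpA by (simp add: L_def)
  have sub: "iet_dom X1 \<subseteq> iet_dom X" using l1 r1 pos by (intro dom_sub) auto
  have I1: "Inv T X1" by (rule Inv_step[OF I wf1 sub st])
  have ie1: "idon e X1" using ie sub by (auto simp: idon_def)
  have dist: "distinct (A1 @ b # A2 @ [a])" using wf tpA by (simp add: iet_wf_def)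
  have bA: "b \<notin> set A1" "b \<notin> set A2" "a \<noteq> b" "a \<notin> set A1" "a \<notin> set A2" using dist by auto
  have iA: "length A1 < i"
  proof (rule ccontr)
    assume "\<not> length A1 < i"
    then have "drop i (iet_top X) = drop i A1 @ b # A2 @ [a]" using tpA by simp
    then show False using bo by (simp add: b_def)
  qed
  define k where "k = i - length A1 - 1"
  have ik: "i = length A1 + Suc k" using iA by (simp add: k_def)
  have kA: "k \<le> length A2" using i tpA ik by simp
  have tk: "take i (iet_top X) = A1 @ b # take k A2" using tpA ik kA by simp
  have tk1: "take (Suc i) (iet_top X1) = A1 @ b # a # take k A2" using t1 ik by simp
  have s1: "sl (L(b := L b - L a)) A1 = sl L A1" "sl (L(b := L b - L a)) (take k A2) = sl L (take k A2)"
    using sl_upd_notin bA(1) bA(2) in_set_takeD by metis+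
  have cut1: "icut X1 (Suc i) = icut X i" unfolding icut_def using l1 L1 tk tk1 s1 bA(3) by (simp add: L_def)
  obtain c where c: "c \<in> set (iet_top X)" "u = iet_left X + off_top X c" using Dt_obtain[OF u(1)] by blast
  have "off_top X c < sl (iet_len X) (take i (iet_top X))" using u(2) c by (simp add: icut_def)
  then have "c \<in> set (take i (iet_top X))" by (rule dt_take[OF wf c(1)])
  then have ca: "c \<noteq> a" using last_notin_take[of "iet_top X" i] wf i by (auto simp: iet_wf_def a_def)
  have cp: "c \<in> set (iet_top X1)" using c(1) tpA t1 by auto
  have "u \<in> Dt X1" using DtI[of c X1] cp ot1 ca c l1 by simp
  then show ?thesis using step I1 ie1 l1 cut1 t1 tpA unfolding X1_def by simp
qed

lemma RP_main:
  assumes I: "Inv T X" and ie: "idon e X" and i: "i < length (iet_top X)"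
    and ab: "last (iet_top X) \<noteq> last (iet_bot X)"
    and neq: "iet_len X (last (iet_top X)) \<noteq> iet_len X (last (iet_bot X))"
    and h4: "iet_len X (last (iet_top X)) < iet_len X (last (iet_bot X)) \<Longrightarrow> last (iet_bot X) \<in> set (drop i (iet_top X))"
    and u: "u \<in> Dt X" "u < icut X i"
  shows "iet_step (X, e) (rauzy_right X, e) \<and> Inv T (rauzy_right X) \<and> idon e (rauzy_right X)
     \<and> length (iet_top (rauzy_right X)) = length (iet_top X)
     \<and> iet_left (rauzy_right X) = iet_left X \<and> icut (rauzy_right X) i = icut X i \<and> u \<in> Dt (rauzy_right X)"
proof -
  have wf: "iet_wf X" using I by (simp add: Inv_def)
  define X1 where "X1 = rauzy_right X"
  define a where "a = last (iet_top X)"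
  define b where "b = last (iet_bot X)"
  define L where "L = iet_len X"
  have step: "iet_step (X, e) (X1, e)" unfolding X1_def by (rule iet_step.right[OF ab])
  have dtp: "distinct (iet_top X)" using wf by (simp add: iet_wf_def)
  have aT: "a \<notin> set (take i (iet_top X))" using last_notin_take[OF dtp i] by (simp add: a_def)
  obtain c where c: "c \<in> set (iet_top X)" "u = iet_left X + off_top X c" using Dt_obtain[OF u(1)] by blast
  have "off_top X c < sl (iet_len X) (take i (iet_top X))" using u(2) c by (simp add: icut_def)
  then have ctk: "c \<in> set (take i (iet_top X))" by (rule dt_take[OF wf c(1)])
  then have ca: "c \<noteq> a" using aT by auto
  show ?thesis
  proof (cases "L b < L a")
    case True
    note r = rr_T[OF wf ab True[unfolded L_def a_def b_def]]
    have wf1: "iet_wf X1" and l1: "iet_left X1 = iet_left X" and r1: "iet_right X1 = iet_right X - L b"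
      and t1: "iet_top X1 = iet_top X" and L1: "iet_len X1 = L(a := L a - L b)" and st: "step2 X X1"
      and ot1: "\<forall>c\<in>set (iet_top X). off_top X1 c = off_top X c"
      using r by (simp_all add: X1_def a_def b_def L_def)
    have "iet_bot X \<noteq> []" using wf wf_set_bot[OF wf] unfolding iet_wf_def by auto
    then have "b \<in> set (iet_bot X)" unfolding b_def by (rule last_in_set)
    then have "b \<in> set (iet_top X)" using wf_set_bot[OF wf] by simp
    then have pos: "L b > 0" using wf_pos[OF wf] by (simp add: L_def)
    have sub: "iet_dom X1 \<subseteq> iet_dom X" using l1 r1 pos by (intro dom_sub) auto
    have I1: "Inv T X1" by (rule Inv_step[OF I wf1 sub st])
    have ie1: "idon e X1" using ie sub by (auto simp: idon_def)
    have "sl (L(a := L a - L b)) (take i (iet_top X)) = sl L (take i (iet_top X))" using sl_upd_notin aT by metis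
    then have cut1: "icut X1 i = icut X i" unfolding icut_def using l1 L1 t1 by (simp add: L_def)
    have "u \<in> Dt X1" using DtI[of c X1] c t1 ot1 l1 by simp
    then show ?thesis using step I1 ie1 l1 cut1 t1 unfolding X1_def by simp
  next
    case False
    then have lt: "L a < L b" using neq by (simp add: L_def a_def b_def)
    note r = rr_B[OF wf ab lt[unfolded L_def a_def b_def]]
    have wf1: "iet_wf X1" and l1: "iet_left X1 = iet_left X" and r1: "iet_right X1 = iet_right X - L a"
      and L1: "iet_len X1 = L(b := L b - L a)" and st: "step2 X X1"
      and ot1: "\<forall>c\<in>set (iet_top X). c \<noteq> a \<longrightarrow> off_top X1 c = off_top X c"
      using r by (simp_all add: X1_def a_def b_def L_def)
    obtain A1 A2 where tpA: "iet_top X = A1 @ b # A2 @ [a]" and t1: "iet_top X1 = A1 @ b # a # A2"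
      using r by (auto simp: X1_def a_def b_def)
    have pos: "L a > 0" using wf_pos[OF wf] tpA by (simp add: L_def)
    have sub: "iet_dom X1 \<subseteq> iet_dom X" using l1 r1 pos by (intro dom_sub) auto
    have I1: "Inv T X1" by (rule Inv_step[OF I wf1 sub st])
    have ie1: "idon e X1" using ie sub by (auto simp: idon_def)
    have dist: "distinct (A1 @ b # A2 @ [a])" using wf tpA by (simp add: iet_wf_def)
    have bA: "b \<notin> set A1" "b \<notin> set A2" "a \<noteq> b" using dist by auto
    have bd: "b \<in> set (drop i (iet_top X))" using h4 lt by (simp add: L_def a_def b_def)
    have iA: "i \<le> length A1"
    proof (rule ccontr)
      assume "\<not> i \<le> length A1"
      then obtain k where k: "i - length A1 = Suc k" by (metis Suc_diff_Suc not_le)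
      then have "b \<in> set (take i (iet_top X))" using tpA by (simp add: take_append)
      moreover have "set (take i (iet_top X)) \<inter> set (drop i (iet_top X)) = {}"
        by (rule set_take_disj_set_drop_if_distinct[OF dtp order.refl])
      ultimately show False using bd by blast
    qed
    have tk: "take i (iet_top X) = take i A1" "take i (iet_top X1) = take i A1" using tpA t1 iA by simp_all
    have "sl (L(b := L b - L a)) (take i A1) = sl L (take i A1)" using sl_upd_notin bA(1) in_set_takeD by metis
    then have cut1: "icut X1 i = icut X i" unfolding icut_def using l1 L1 tk by (simp add: L_def)
    have cp: "c \<in> set (iet_top X1)" using c(1) tpA t1 by auto
    have "u \<in> Dt X1" using DtI[of c X1] cp ot1 ca c l1 by simp
    then show ?thesis using step I1 ie1 l1 cut1 t1 tpA unfolding X1_def by simp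
  qed
qed

definition goalR :: "'a iet \<Rightarrow> real \<Rightarrow> 'a iet \<Rightarrow> (real \<Rightarrow> real) \<Rightarrow> nat \<Rightarrow> bool" where
  "goalR T u S e i \<longleftrightarrow> (\<exists>S' e'. iet_step\<^sup>*\<^sup>* (S, e) (S', e') \<and> Inv T S' \<and> idon e' S'
      \<and> iet_left S' = iet_left S \<and> iet_right S' = icut S i \<and> u \<in> Dt S')"

lemma goalR_prepend:
  assumes "iet_step (X, e) (X1, e1)" "goalR T u X1 e1 i1" "iet_left X1 = iet_left X" "icut X1 i1 = icut X i"
  shows "goalR T u X e i"
  using assms unfolding goalR_def by (metis converse_rtranclp_into_rtranclp)

lemma RP:
  "Inv T S \<Longrightarrow> idon e S \<Longrightarrow> i \<le> length (iet_top S) \<Longrightarrow> u \<in> Dt S \<Longrightarrow> u < icut S i \<Longrightarrow> goalR T u S e i"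
proof (induction "2 * length (iet_top S) - i" arbitrary: S e i rule: less_induct)
  case less
  define N where "N = length (iet_top S)"
  have wf: "iet_wf S" using less.prems by (simp add: Inv_def)
  show ?case
  proof (cases "i = N")
    case True
    have "icut S i = iet_right S" using True by (simp add: icut_def iet_right_def N_def)
    then show ?thesis unfolding goalR_def using less.prems
      by (intro exI[of _ S] exI[of _ e]) simp
  next
    case False
    then have iN: "i < N" using less.prems by (simp add: N_def)
    have i1: "1 \<le> i"
    proof (rule ccontr)
      assume "\<not> 1 \<le> i"
      then have "i = 0" by simp
      then have "icut S i = iet_left S" by (simp add: icut_def)
      then show False using Dt_ge[OF wf less.prems(4)] less.prems(5) by simp
    qed
    show ?thesis
    proof (rule ccontr)
      assume ng: "\<not> goalR T u S e i"
      define Bad where "Bad X \<longleftrightarrow> Inv T X \<and> idon e X \<and> length (iet_top X) = N \<and> u \<in> Dt X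
          \<and> u < icut X i \<and> \<not> goalR T u X e i \<and> iet_left X = iet_left S" for X
      have claim: "(\<forall>j. 1 \<le> j \<longrightarrow> i + j \<le> length (iet_top X) \<longrightarrow>
              set (drop (length (iet_top X) - j) (iet_top X)) \<noteq> set (drop (length (iet_top X) - j) (iet_bot X)))
          \<and> last (iet_top X) \<noteq> last (iet_bot X)
          \<and> iet_len X (last (iet_top X)) \<noteq> iet_len X (last (iet_bot X))
          \<and> (iet_len X (last (iet_top X)) < iet_len X (last (iet_bot X)) \<longrightarrow> last (iet_bot X) \<in> set (drop i (iet_top X)))
          \<and> Bad (rauzy_right X)" if B: "Bad X" for X
      proof -
        have IX: "Inv T X" and ieX: "idon e X" and lX: "length (iet_top X) = N" and uX: "u \<in> Dt X"
          and uc: "u < icut X i" and ngX: "\<not> goalR T u X e i" and leX: "iet_left X = iet_left S"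
          using B by (simp_all add: Bad_def)
        have wfX: "iet_wf X" using IX by (simp add: Inv_def)
        have nb: "\<forall>j. 1 \<le> j \<longrightarrow> i + j \<le> length (iet_top X) \<longrightarrow>
              set (drop (length (iet_top X) - j) (iet_top X)) \<noteq> set (drop (length (iet_top X) - j) (iet_bot X))"
        proof (intro allI impI)
          fix j assume j: "1 \<le> j" "i + j \<le> length (iet_top X)"
          show "set (drop (length (iet_top X) - j) (iet_top X)) \<noteq> set (drop (length (iet_top X) - j) (iet_bot X))"
          proof
            assume blk: "set (drop (length (iet_top X) - j) (iet_top X)) = set (drop (length (iet_top X) - j) (iet_bot X))"
            obtain X1 e1 where X1: "iet_step (X, e) (X1, e1)" "Inv T X1" "idon e1 X1"
                "length (iet_top X1) = length (iet_top X) - j" "iet_left X1 = iet_left X" "icut X1 i = icut X i" "u \<in> Dt X1"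
              using RP_split[OF IX ieX j i1 blk uX uc] by blast
            have "2 * length (iet_top X1) - i < 2 * length (iet_top S) - i" using X1(4) lX j iN by (simp add: N_def)
            moreover have "i \<le> length (iet_top X1)" using X1(4) j by simp
            ultimately have "goalR T u X1 e1 i" using less.hyps[OF _ X1(2) X1(3) _ X1(7)] X1(6) uc by simp
            then have "goalR T u X e i" using goalR_prepend[OF X1(1) _ X1(5) X1(6)] by blast
            then show False using ngX by simp
          qed
        qed
        have ne: "last (iet_top X) \<noteq> last (iet_bot X)"
        proof
          assume eq: "last (iet_top X) = last (iet_bot X)"
          have tne: "iet_top X \<noteq> []" "iet_bot X \<noteq> []" using wfX wf_set_bot[OF wfX] unfolding iet_wf_def by auto
          have lb: "length (iet_bot X) = length (iet_top X)"
            using wfX unfolding iet_wf_def by (metis distinct_card)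
          have "drop (length (iet_top X) - 1) (iet_top X) = [last (iet_top X)]" using tne(1)
            by (metis append_butlast_last_id append_eq_conv_conj length_butlast)
          moreover have "drop (length (iet_top X) - 1) (iet_bot X) = [last (iet_bot X)]" using tne(2) lb
            by (metis append_butlast_last_id append_eq_conv_conj length_butlast)
          ultimately show False using nb iN lX eq by force
        qed
        have neq: "iet_len X (last (iet_top X)) \<noteq> iet_len X (last (iet_bot X))"
        proof
          assume eq: "iet_len X (last (iet_top X)) = iet_len X (last (iet_bot X))"
          have r: "iet_step (X, e) (rauzy_right X, e)" "Inv T (rauzy_right X)" "idon e (rauzy_right X)"
            "length (iet_top (rauzy_right X)) = length (iet_top X) - 1"
            "iet_left (rauzy_right X) = iet_left X" "icut (rauzy_right X) i = icut X i" "u \<in> Dt (rauzy_right X)"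
            using RP_E[OF IX ieX _ ne eq uX uc] iN lX by auto
          have "2 * length (iet_top (rauzy_right X)) - i < 2 * length (iet_top S) - i" using r(4) lX iN by (simp add: N_def)
          moreover have "i \<le> length (iet_top (rauzy_right X))" using r(4) lX iN by simp
          ultimately have "goalR T u (rauzy_right X) e i" using less.hyps[OF _ r(2) r(3) _ r(7)] r(6) uc by simp
          then have "goalR T u X e i" using goalR_prepend[OF r(1) _ r(5) r(6)] by blast
          then show False using ngX by simp
        qed
        have h4: "iet_len X (last (iet_top X)) < iet_len X (last (iet_bot X)) \<longrightarrow> last (iet_bot X) \<in> set (drop i (iet_top X))"
        proof (intro impI, rule ccontr)
          assume lt: "iet_len X (last (iet_top X)) < iet_len X (last (iet_bot X))"
            and bo: "last (iet_bot X) \<notin> set (drop i (iet_top X))"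
          have r: "iet_step (X, e) (rauzy_right X, e)" "Inv T (rauzy_right X)" "idon e (rauzy_right X)"
            "length (iet_top (rauzy_right X)) = length (iet_top X)"
            "iet_left (rauzy_right X) = iet_left X" "icut (rauzy_right X) (Suc i) = icut X i" "u \<in> Dt (rauzy_right X)"
            using RP_Bout[OF IX ieX _ ne lt bo uX uc] iN lX by auto
          have "2 * length (iet_top (rauzy_right X)) - Suc i < 2 * length (iet_top S) - i" using r(4) lX iN by (simp add: N_def)
          moreover have "Suc i \<le> length (iet_top (rauzy_right X))" using r(4) lX iN by simp
          ultimately have "goalR T u (rauzy_right X) e (Suc i)" using less.hyps[OF _ r(2) r(3) _ r(7)] r(6) uc by simp
          then have "goalR T u X e i" using goalR_prepend[OF r(1) _ r(5) r(6)] by blast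
          then show False using ngX by simp
        qed
        have r: "iet_step (X, e) (rauzy_right X, e)" "Inv T (rauzy_right X)" "idon e (rauzy_right X)"
            "length (iet_top (rauzy_right X)) = length (iet_top X)"
            "iet_left (rauzy_right X) = iet_left X" "icut (rauzy_right X) i = icut X i" "u \<in> Dt (rauzy_right X)"
          using RP_main[OF IX ieX _ ne neq _ uX uc] h4 iN lX by auto
        have "\<not> goalR T u (rauzy_right X) e i"
        proof
          assume "goalR T u (rauzy_right X) e i"
          then have "goalR T u X e i" using goalR_prepend[OF r(1) _ r(5) r(6)] by blast
          then show False using ngX by simp
        qed
        then have "Bad (rauzy_right X)" using r uc lX leX unfolding Bad_def by simp
        then show ?thesis using nb ne neq h4 by simp
      qed
      define Sq where "Sq n = (rauzy_right ^^ n) S" for n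
      have bad: "Bad (Sq n)" for n
      proof (induction n)
        case 0 then show ?case using less.prems ng by (simp add: Bad_def Sq_def N_def)
      next
        case (Suc n) then show ?case using claim[of "Sq n"] by (simp add: Sq_def)
      qed
      show False
      proof (rule noinf_right[of Sq i])
        fix n
        have B: "Bad (Sq n)" by (rule bad)
        note c = claim[OF B]
        show "iet_wf (Sq n)" using B by (simp add: Bad_def Inv_def)
        show "Sq (Suc n) = rauzy_right (Sq n)" by (simp add: Sq_def)
        show "last (iet_top (Sq n)) \<noteq> last (iet_bot (Sq n))" using c by simp
        show "iet_len (Sq n) (last (iet_top (Sq n))) \<noteq> iet_len (Sq n) (last (iet_bot (Sq n)))" using c by simp
        show "i < length (iet_top (Sq n))" using B iN by (simp add: Bad_def)
        show "iet_len (Sq n) (last (iet_top (Sq n))) < iet_len (Sq n) (last (iet_bot (Sq n))) \<Longrightarrow>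
          last (iet_bot (Sq n)) \<in> set (drop i (iet_top (Sq n)))" using c by simp
        fix j assume "1 \<le> j" "i + j \<le> length (iet_top (Sq n))"
        then show "set (drop (length (iet_top (Sq n)) - j) (iet_top (Sq n))) \<noteq>
          set (drop (length (iet_top (Sq n)) - j) (iet_bot (Sq n)))" using c by blast
      qed
    qed
  qed
qed

lemma LP_split:
  assumes I: "Inv T X" and ie: "idon e X" and m: "1 \<le> m" "m \<le> j" "j < length (iet_top X)"
    and blk: "set (take m (iet_top X)) = set (take m (iet_bot X))"
  shows "\<exists>X1. iet_step (X, e) (X1, e) \<and> Inv T X1 \<and> idon e X1 \<and> length (iet_top X1) = length (iet_top X) - m
     \<and> iet_right X1 = iet_right X \<and> icut X1 (j - m) = icut X j"
proof -
  have wf: "iet_wf X" using I by (simp add: Inv_def)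
  define p where "p = take m (iet_top X)"
  define q where "q = drop m (iet_top X)"
  define p' where "p' = take m (iet_bot X)"
  define q' where "q' = drop m (iet_bot X)"
  have tp: "iet_top X = p @ q" and bt: "iet_bot X = p' @ q'" by (simp_all add: p_def q_def p'_def q'_def)
  have sp: "set p = set p'" using blk by (simp add: p_def p'_def)
  have "iet_top X \<noteq> []" using m by auto
  then have pne: "p \<noteq> []" using m by (simp add: p_def)
  have qne: "q \<noteq> []" using m by (simp add: q_def)
  define X1 where "X1 = X\<lparr>iet_left := iet_left X + sl (iet_len X) p, iet_top := q, iet_bot := filter (\<lambda>c. c \<in> set q) (iet_bot X)\<rparr>"
  note r = split_prefix[OF wf tp bt sp pne qne, folded X1_def]
  have step: "iet_step (X, e) (X1, e)" using r(1)[of e] .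
  have wf1: "iet_wf X1" and l1: "iet_left X1 = iet_left X + sl (iet_len X) p" and r1: "iet_right X1 = iet_right X"
    and t1: "iet_top X1 = q" and L1: "iet_len X1 = iet_len X" and st: "step2 X X1" using r by auto
  have "sl (iet_len X) p \<ge> 0" using wf_nonneg[OF wf] tp by (intro sl_nonneg) auto
  then have sub: "iet_dom X1 \<subseteq> iet_dom X" using l1 r1 by (intro dom_sub) auto
  have I1: "Inv T X1" by (rule Inv_step[OF I wf1 sub st])
  have ie1: "idon e X1" using ie sub by (auto simp: idon_def)
  have tk: "take j (iet_top X) = p @ take (j - m) q"
  proof -
    have "take j (iet_top X) = take j (p @ q)" using tp by simp
    also have "\<dots> = p @ take (j - m) q" using m by (simp add: p_def min_def)
    finally show ?thesis .
  qed
  have "icut X1 (j - m) = icut X j" unfolding icut_def using l1 t1 L1 tk by simp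
  moreover have "length (iet_top X1) = length (iet_top X) - m" using t1 by (simp add: q_def)
  ultimately show ?thesis using step I1 ie1 r1 by blast
qed


lemma LP_E:
  assumes I: "Inv T X" and ie: "idon e X" and j: "1 \<le> j" "j < length (iet_top X)"
    and ab: "hd (iet_top X) \<noteq> hd (iet_bot X)"
    and eq: "iet_len X (hd (iet_top X)) = iet_len X (hd (iet_bot X))"
  shows "iet_step (X, e) (rauzy_left X, e) \<and> Inv T (rauzy_left X) \<and> idon e (rauzy_left X)
     \<and> length (iet_top (rauzy_left X)) = length (iet_top X) - 1
     \<and> iet_right (rauzy_left X) = iet_right X \<and> icut (rauzy_left X) (j - 1) = icut X j"
proof -
  have wf: "iet_wf X" using I by (simp add: Inv_def)
  note r = rl_E[OF wf ab eq]
  define X1 where "X1 = rauzy_left X"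
  define a where "a = hd (iet_top X)"
  have wf1: "iet_wf X1" and l1: "iet_left X1 = iet_left X + iet_len X a" and r1: "iet_right X1 = iet_right X"
    and L1: "iet_len X1 = iet_len X" and t1: "iet_top X1 = tl (iet_top X)" and st: "step2 X X1"
    using r by (simp_all add: X1_def a_def)
  have step: "iet_step (X, e) (X1, e)" unfolding X1_def by (rule iet_step.left[OF ab])
  have tne: "iet_top X \<noteq> []" using j by auto
  have tpa: "iet_top X = a # tl (iet_top X)" using tne by (simp add: a_def)
  have pos: "iet_len X a > 0" using wf_pos[OF wf] tne by (simp add: a_def)
  have sub: "iet_dom X1 \<subseteq> iet_dom X" using l1 r1 pos by (intro dom_sub) auto
  have I1: "Inv T X1" by (rule Inv_step[OF I wf1 sub st])
  have ie1: "idon e X1" using ie sub by (auto simp: idon_def)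
  obtain k where k: "j = Suc k" using j by (metis Suc_le_D One_nat_def)
  have tk: "take j (iet_top X) = a # take k (tl (iet_top X))" using tpa k by (metis take_Suc_Cons)
  have "icut X1 (j - 1) = icut X j" unfolding icut_def using l1 t1 L1 tk k by simp
  then show ?thesis using step I1 ie1 t1 r1 unfolding X1_def by simp
qed

lemma LP_Bout:
  assumes I: "Inv T X" and ie: "idon e X" and j: "1 \<le> j" "j < length (iet_top X)"
    and ab: "hd (iet_top X) \<noteq> hd (iet_bot X)"
    and lt: "iet_len X (hd (iet_top X)) < iet_len X (hd (iet_bot X))"
    and bo: "hd (iet_bot X) \<notin> set (take j (iet_top X))"
  shows "iet_step (X, e) (rauzy_left X, e) \<and> Inv T (rauzy_left X) \<and> idon e (rauzy_left X)
     \<and> length (iet_top (rauzy_left X)) = length (iet_top X)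
     \<and> iet_right (rauzy_left X) = iet_right X \<and> icut (rauzy_left X) (j - 1) = icut X j"
proof -
  have wf: "iet_wf X" using I by (simp add: Inv_def)
  note r = rl_B[OF wf ab lt]
  define X1 where "X1 = rauzy_left X"
  define a where "a = hd (iet_top X)"
  define b where "b = hd (iet_bot X)"
  define L where "L = iet_len X"
  have wf1: "iet_wf X1" and l1: "iet_left X1 = iet_left X + L a" and r1: "iet_right X1 = iet_right X"
    and L1: "iet_len X1 = L(b := L b - L a)" and st: "step2 X X1"
    using r by (simp_all add: X1_def a_def b_def L_def)
  obtain A1 A2 where tpA: "iet_top X = a # A1 @ b # A2" and t1: "iet_top X1 = A1 @ a # b # A2"
    using r by (auto simp: X1_def a_def b_def)
  have step: "iet_step (X, e) (X1, e)" unfolding X1_def by (rule iet_step.left[OF ab])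
  have pos: "L a > 0" using wf_pos[OF wf] tpA by (simp add: L_def)
  have sub: "iet_dom X1 \<subseteq> iet_dom X" using l1 r1 pos by (intro dom_sub) auto
  have I1: "Inv T X1" by (rule Inv_step[OF I wf1 sub st])
  have ie1: "idon e X1" using ie sub by (auto simp: idon_def)
  have dist: "distinct (a # A1 @ b # A2)" using wf tpA by (simp add: iet_wf_def)
  have bA: "b \<notin> set A1" using dist by auto
  obtain k where k: "j = Suc k" using j by (metis Suc_le_D One_nat_def)
  have kA: "k \<le> length A1"
  proof (rule ccontr)
    assume "\<not> k \<le> length A1"
    then obtain k' where k': "k - length A1 = Suc k'" by (metis Suc_diff_Suc not_le)
    have "take j (iet_top X) = a # A1 @ b # take k' A2" using tpA k k' by simp
    then show False using bo by (simp add: b_def)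
  qed
  have tk: "take j (iet_top X) = a # take k A1" using tpA k kA by simp
  have tk1: "take (j - 1) (iet_top X1) = take k A1" using t1 k kA by simp
  have "sl (L(b := L b - L a)) (take k A1) = sl L (take k A1)" using sl_upd_notin bA in_set_takeD by metis
  then have "icut X1 (j - 1) = icut X j" unfolding icut_def using l1 L1 tk tk1 by (simp add: L_def)
  then show ?thesis using step I1 ie1 t1 tpA r1 unfolding X1_def by simp
qed

lemma LP_main:
  assumes I: "Inv T X" and ie: "idon e X" and j: "1 \<le> j" "j < length (iet_top X)"
    and ab: "hd (iet_top X) \<noteq> hd (iet_bot X)"
    and neq: "iet_len X (hd (iet_top X)) \<noteq> iet_len X (hd (iet_bot X))"
    and h4: "iet_len X (hd (iet_top X)) < iet_len X (hd (iet_bot X)) \<Longrightarrow> hd (iet_bot X) \<in> set (take j (iet_top X))"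
  shows "iet_step (X, e) (rauzy_left X, e) \<and> Inv T (rauzy_left X) \<and> idon e (rauzy_left X)
     \<and> length (iet_top (rauzy_left X)) = length (iet_top X)
     \<and> iet_right (rauzy_left X) = iet_right X \<and> icut (rauzy_left X) j = icut X j"
proof -
  have wf: "iet_wf X" using I by (simp add: Inv_def)
  define X1 where "X1 = rauzy_left X"
  define a where "a = hd (iet_top X)"
  define b where "b = hd (iet_bot X)"
  define L where "L = iet_len X"
  have step: "iet_step (X, e) (X1, e)" unfolding X1_def by (rule iet_step.left[OF ab])
  have dtp: "distinct (iet_top X)" using wf by (simp add: iet_wf_def)
  have tne: "iet_top X \<noteq> []" using j by auto
  obtain k where k: "j = Suc k" using j by (metis Suc_le_D One_nat_def)
  show ?thesis
  proof (cases "L b < L a")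
    case True
    note r = rl_T[OF wf ab True[unfolded L_def a_def b_def]]
    have wf1: "iet_wf X1" and l1: "iet_left X1 = iet_left X + L b" and r1: "iet_right X1 = iet_right X"
      and t1: "iet_top X1 = iet_top X" and L1: "iet_len X1 = L(a := L a - L b)" and st: "step2 X X1"
      using r by (simp_all add: X1_def a_def b_def L_def)
    have "iet_bot X \<noteq> []" using wf wf_set_bot[OF wf] unfolding iet_wf_def by auto
    then have "b \<in> set (iet_bot X)" unfolding b_def by (rule hd_in_set)
    then have pos: "L b > 0" using wf_pos[OF wf] wf_set_bot[OF wf] by (simp add: L_def)
    have sub: "iet_dom X1 \<subseteq> iet_dom X" using l1 r1 pos by (intro dom_sub) auto
    have I1: "Inv T X1" by (rule Inv_step[OF I wf1 sub st])
    have ie1: "idon e X1" using ie sub by (auto simp: idon_def)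
    have tpa: "iet_top X = a # tl (iet_top X)" using tne by (simp add: a_def)
    have an: "a \<notin> set (tl (iet_top X))" using dtp tpa by (metis distinct.simps(2))
    have tk: "take j (iet_top X) = a # take k (tl (iet_top X))" using tpa k by (metis take_Suc_Cons)
    have "sl (L(a := L a - L b)) (take k (tl (iet_top X))) = sl L (take k (tl (iet_top X)))"
      using sl_upd_notin an in_set_takeD by metis
    then have "icut X1 j = icut X j" unfolding icut_def using l1 L1 t1 tk by (simp add: L_def)
    then show ?thesis using step I1 ie1 t1 r1 unfolding X1_def by simp
  next
    case False
    then have lt: "L a < L b" using neq by (simp add: L_def a_def b_def)
    note r = rl_B[OF wf ab lt[unfolded L_def a_def b_def]]
    have wf1: "iet_wf X1" and l1: "iet_left X1 = iet_left X + L a" and r1: "iet_right X1 = iet_right X"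
      and L1: "iet_len X1 = L(b := L b - L a)" and st: "step2 X X1"
      using r by (simp_all add: X1_def a_def b_def L_def)
    obtain A1 A2 where tpA: "iet_top X = a # A1 @ b # A2" and t1: "iet_top X1 = A1 @ a # b # A2"
      using r by (auto simp: X1_def a_def b_def)
    have pos: "L a > 0" using wf_pos[OF wf] tpA by (simp add: L_def)
    have sub: "iet_dom X1 \<subseteq> iet_dom X" using l1 r1 pos by (intro dom_sub) auto
    have I1: "Inv T X1" by (rule Inv_step[OF I wf1 sub st])
    have ie1: "idon e X1" using ie sub by (auto simp: idon_def)
    have dist: "distinct (a # A1 @ b # A2)" using wf tpA by (simp add: iet_wf_def)
    have bA: "b \<notin> set A1" "b \<notin> set A2" "a \<noteq> b" using dist by auto
    have bt: "b \<in> set (take j (iet_top X))" using h4 lt by (simp add: L_def a_def b_def)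
    have kA: "length A1 < k"
    proof (rule ccontr)
      assume "\<not> length A1 < k"
      then have "take j (iet_top X) = a # take k A1" using tpA k by simp
      then show False using bt bA(1) bA(3) by (auto dest: in_set_takeD)
    qed
    define k' where "k' = k - length A1 - 1"
    have kk: "k = length A1 + Suc k'" using kA by (simp add: k'_def)
    have tk: "take j (iet_top X) = a # A1 @ b # take k' A2" using tpA k kk by simp
    have tk1: "take j (iet_top X1) = A1 @ a # b # take k' A2" using t1 k kk by simp
    have s1: "sl (L(b := L b - L a)) A1 = sl L A1" "sl (L(b := L b - L a)) (take k' A2) = sl L (take k' A2)"
      using sl_upd_notin bA(1) bA(2) in_set_takeD by metis+
    have "icut X1 j = icut X j" unfolding icut_def using l1 L1 tk tk1 s1 bA(3) by (simp add: L_def)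
    then show ?thesis using step I1 ie1 t1 tpA r1 unfolding X1_def by simp
  qed
qed

definition goalL :: "'a iet \<Rightarrow> 'a iet \<Rightarrow> (real \<Rightarrow> real) \<Rightarrow> nat \<Rightarrow> bool" where
  "goalL T S e j \<longleftrightarrow> (\<exists>S' e'. iet_step\<^sup>*\<^sup>* (S, e) (S', e') \<and> Inv T S' \<and> idon e' S'
      \<and> iet_left S' = icut S j \<and> iet_right S' = iet_right S)"

lemma goalL_prepend:
  assumes "iet_step (X, e) (X1, e1)" "goalL T X1 e1 j1" "iet_right X1 = iet_right X" "icut X1 j1 = icut X j"
  shows "goalL T X e j"
  using assms unfolding goalL_def by (metis converse_rtranclp_into_rtranclp)

lemma LP:
  "Inv T S \<Longrightarrow> idon e S \<Longrightarrow> j < length (iet_top S) \<Longrightarrow> goalL T S e j"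
proof (induction "length (iet_top S) + j" arbitrary: S e j rule: less_induct)
  case less
  define N where "N = length (iet_top S)"
  have wf: "iet_wf S" using less.prems by (simp add: Inv_def)
  show ?case
  proof (cases "j = 0")
    case True
    have "icut S j = iet_left S" using True by (simp add: icut_def)
    then show ?thesis unfolding goalL_def using less.prems
      by (intro exI[of _ S] exI[of _ e]) simp
  next
    case False
    then have j1: "1 \<le> j" by simp
    have jN: "j < N" using less.prems by (simp add: N_def)
    show ?thesis
    proof (rule ccontr)
      assume ng: "\<not> goalL T S e j"
      define Bad where "Bad X \<longleftrightarrow> Inv T X \<and> idon e X \<and> length (iet_top X) = N
          \<and> icut X j = icut S j \<and> iet_right X = iet_right S \<and> \<not> goalL T X e j" for X
      have claim: "(\<forall>m. 1 \<le> m \<longrightarrow> m \<le> j \<longrightarrow> set (take m (iet_top X)) \<noteq> set (take m (iet_bot X)))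
          \<and> hd (iet_top X) \<noteq> hd (iet_bot X)
          \<and> iet_len X (hd (iet_top X)) \<noteq> iet_len X (hd (iet_bot X))
          \<and> (iet_len X (hd (iet_top X)) < iet_len X (hd (iet_bot X)) \<longrightarrow> hd (iet_bot X) \<in> set (take j (iet_top X)))
          \<and> Bad (rauzy_left X)" if B: "Bad X" for X
      proof -
        have IX: "Inv T X" and ieX: "idon e X" and lX: "length (iet_top X) = N"
          and ngX: "\<not> goalL T X e j" and cX: "icut X j = icut S j" and rX: "iet_right X = iet_right S"
          using B by (simp_all add: Bad_def)
        have wfX: "iet_wf X" using IX by (simp add: Inv_def)
        have jX: "j < length (iet_top X)" using lX jN by simp
        have nb: "\<forall>m. 1 \<le> m \<longrightarrow> m \<le> j \<longrightarrow> set (take m (iet_top X)) \<noteq> set (take m (iet_bot X))"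
        proof (intro allI impI)
          fix m assume m: "1 \<le> m" "m \<le> j"
          show "set (take m (iet_top X)) \<noteq> set (take m (iet_bot X))"
          proof
            assume blk: "set (take m (iet_top X)) = set (take m (iet_bot X))"
            obtain X1 where X1: "iet_step (X, e) (X1, e)" "Inv T X1" "idon e X1"
                "length (iet_top X1) = length (iet_top X) - m" "iet_right X1 = iet_right X" "icut X1 (j - m) = icut X j"
              using LP_split[OF IX ieX m jX blk] by blast
            have "length (iet_top X1) + (j - m) < length (iet_top S) + j" using X1(4) lX m jN by (simp add: N_def)
            moreover have "j - m < length (iet_top X1)" using X1(4) lX m jN by simp
            ultimately have "goalL T X1 e (j - m)" using less.hyps[OF _ X1(2) X1(3)] by simp
            then have "goalL T X e j" using goalL_prepend[OF X1(1) _ X1(5) X1(6)] by blast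
            then show False using ngX by simp
          qed
        qed
        have ne: "hd (iet_top X) \<noteq> hd (iet_bot X)"
        proof
          assume eq: "hd (iet_top X) = hd (iet_bot X)"
          have tne: "iet_top X \<noteq> []" "iet_bot X \<noteq> []" using wfX wf_set_bot[OF wfX] unfolding iet_wf_def by auto
          have "take 1 (iet_top X) = [hd (iet_top X)]" "take 1 (iet_bot X) = [hd (iet_bot X)]"
            using tne by (metis One_nat_def hd_Cons_tl take0 take_Suc_Cons)+
          then show False using nb j1 eq by force
        qed
        have neq: "iet_len X (hd (iet_top X)) \<noteq> iet_len X (hd (iet_bot X))"
        proof
          assume eq: "iet_len X (hd (iet_top X)) = iet_len X (hd (iet_bot X))"
          have r: "iet_step (X, e) (rauzy_left X, e)" "Inv T (rauzy_left X)" "idon e (rauzy_left X)"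
            "length (iet_top (rauzy_left X)) = length (iet_top X) - 1"
            "iet_right (rauzy_left X) = iet_right X" "icut (rauzy_left X) (j - 1) = icut X j"
            using LP_E[OF IX ieX j1 jX ne eq] by auto
          have "length (iet_top (rauzy_left X)) + (j - 1) < length (iet_top S) + j" using r(4) lX j1 jN by (simp add: N_def)
          moreover have "j - 1 < length (iet_top (rauzy_left X))" using r(4) lX j1 jN by simp
          ultimately have "goalL T (rauzy_left X) e (j - 1)" using less.hyps[OF _ r(2) r(3)] by simp
          then have "goalL T X e j" using goalL_prepend[OF r(1) _ r(5) r(6)] by blast
          then show False using ngX by simp
        qed
        have h4: "iet_len X (hd (iet_top X)) < iet_len X (hd (iet_bot X)) \<longrightarrow> hd (iet_bot X) \<in> set (take j (iet_top X))"
        proof (intro impI, rule ccontr)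
          assume lt: "iet_len X (hd (iet_top X)) < iet_len X (hd (iet_bot X))"
            and bo: "hd (iet_bot X) \<notin> set (take j (iet_top X))"
          have r: "iet_step (X, e) (rauzy_left X, e)" "Inv T (rauzy_left X)" "idon e (rauzy_left X)"
            "length (iet_top (rauzy_left X)) = length (iet_top X)"
            "iet_right (rauzy_left X) = iet_right X" "icut (rauzy_left X) (j - 1) = icut X j"
            using LP_Bout[OF IX ieX j1 jX ne lt bo] by auto
          have "length (iet_top (rauzy_left X)) + (j - 1) < length (iet_top S) + j" using r(4) lX j1 jN by (simp add: N_def)
          moreover have "j - 1 < length (iet_top (rauzy_left X))" using r(4) lX j1 jN by simp
          ultimately have "goalL T (rauzy_left X) e (j - 1)" using less.hyps[OF _ r(2) r(3)] by simp
          then have "goalL T X e j" using goalL_prepend[OF r(1) _ r(5) r(6)] by blast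
          then show False using ngX by simp
        qed
        have r: "iet_step (X, e) (rauzy_left X, e)" "Inv T (rauzy_left X)" "idon e (rauzy_left X)"
            "length (iet_top (rauzy_left X)) = length (iet_top X)"
            "iet_right (rauzy_left X) = iet_right X" "icut (rauzy_left X) j = icut X j"
          using LP_main[OF IX ieX j1 jX ne neq] h4 by auto
        have "\<not> goalL T (rauzy_left X) e j"
        proof
          assume "goalL T (rauzy_left X) e j"
          then have "goalL T X e j" using goalL_prepend[OF r(1) _ r(5) r(6)] by blast
          then show False using ngX by simp
        qed
        then have "Bad (rauzy_left X)" using r lX cX rX unfolding Bad_def by simp
        then show ?thesis using nb ne neq h4 by simp
      qed
      define Sq where "Sq n = (rauzy_left ^^ n) S" for n
      have bad: "Bad (Sq n)" for n
      proof (induction n)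
        case 0 then show ?case using less.prems ng by (simp add: Bad_def Sq_def N_def)
      next
        case (Suc n) then show ?case using claim[of "Sq n"] by (simp add: Sq_def)
      qed
      show False
      proof (rule noinf_left[of Sq N j])
        fix n
        have B: "Bad (Sq n)" by (rule bad)
        note c = claim[OF B]
        show "iet_wf (Sq n)" using B by (simp add: Bad_def Inv_def)
        show "Sq (Suc n) = rauzy_left (Sq n)" by (simp add: Sq_def)
        show "length (iet_top (Sq n)) = N" using B by (simp add: Bad_def)
        show "hd (iet_top (Sq n)) \<noteq> hd (iet_bot (Sq n))" using c by simp
        show "iet_len (Sq n) (hd (iet_top (Sq n))) \<noteq> iet_len (Sq n) (hd (iet_bot (Sq n)))" using c by simp
        show "iet_len (Sq n) (hd (iet_top (Sq n))) < iet_len (Sq n) (hd (iet_bot (Sq n))) \<Longrightarrow>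
          hd (iet_bot (Sq n)) \<in> set (take j (iet_top (Sq n)))" using c by simp
        fix m assume "1 \<le> m" "m \<le> j"
        then show "set (take m (iet_top (Sq n))) \<noteq> set (take m (iet_bot (Sq n)))" using c by blast
      next
        show "0 < j" using j1 by simp
        show "j \<le> N" using jN by simp
      qed
    qed
  qed
qed

lemma cyl_Nil: "cyl T [] = iet_dom T"
  by (simp add: cyl_def)

lemma cyl_snoc: "cyl T (w @ [c]) = {x \<in> cyl T w. (iet_map T ^^ length w) x \<in> ivl T c}"
  by (auto simp: cyl_def nth_append less_Suc_eq)

lemma cyl_Cons:
  assumes wf: "iet_wf T"
  shows "cyl T (c # w) = {x \<in> iet_dom T. x \<in> ivl T c \<and> iet_map T x \<in> cyl T w}"
proof -
  have "(\<forall>j<length (c # w). (iet_map T ^^ j) x \<in> ivl T ((c # w) ! j)) \<longleftrightarrow>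
        x \<in> ivl T c \<and> (\<forall>j<length w. (iet_map T ^^ j) (iet_map T x) \<in> ivl T (w ! j))" for x
    by (simp add: All_less_Suc2 funpow_Suc_right del: funpow.simps)
  then show ?thesis using map_dom[OF wf] by (auto simp: cyl_def)
qed

lemma cyl_interval:
  assumes wf: "iet_wf T"
  shows "\<exists>u v. cyl T w = {u..<v}"
proof (induction w)
  case Nil then show ?case by (auto simp: cyl_Nil iet_dom_def)
next
  case (Cons c w)
  obtain u v where uv: "cyl T w = {u..<v}" using Cons.IH by blast
  show ?case
  proof (cases "c \<in> set (iet_top T)")
    case False
    have "cyl T (c # w) = {}" using ivl_notin[OF False] by (auto simp: cyl_Cons[OF wf])
    then show ?thesis by (metis atLeastLessThan_empty order_refl)
  next
    case True
    define s where "s = iet_left T + off_top T c"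
    define t where "t = s + iet_len T c"
    define tau where "tau = off_bot T c - off_top T c"
    have m: "\<And>x. x \<in> ivl T c \<Longrightarrow> iet_map T x = x + tau"
      using map_ivl[OF wf True] by (simp add: tau_def)
    have "cyl T (c # w) = {x. x \<in> ivl T c \<and> x + tau \<in> {u..<v}}"
      using ivl_sub_dom[OF wf True] m unfolding cyl_Cons[OF wf] uv by auto
    also have "\<dots> = {max s (u - tau)..<min t (v - tau)}"
      by (auto simp: ivl_def s_def t_def)
    finally show ?thesis by blast
  qed
qed

lemma lang_cyl_ne:
  assumes wf: "iet_wf T" and w: "w \<in> iet_lang T"
  shows "cyl T w \<noteq> {}"
proof -
  obtain x i where x: "x \<in> iet_dom T" and P: "\<forall>j<length w. (iet_map T ^^ (i + j)) x \<in> ivl T (w ! j)"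
    using w by (auto simp: iet_lang_def)
  have e: "(iet_map T ^^ j) ((iet_map T ^^ i) x) = (iet_map T ^^ (i + j)) x" for j
    by (metis add.commute comp_apply funpow_add)
  have "(iet_map T ^^ i) x \<in> cyl T w"
    unfolding cyl_def using funpow_dom[OF wf x] P e by simp
  then show ?thesis by blast
qed

lemma lang_snoc: "w @ [c] \<in> iet_lang T \<Longrightarrow> w \<in> iet_lang T"
proof -
  assume "w @ [c] \<in> iet_lang T"
  then obtain x i where x: "x \<in> iet_dom T" and P: "\<forall>j<length (w @ [c]).
      (iet_map T ^^ (i + j)) x \<in> ivl T ((w @ [c]) ! j) \<and> (w @ [c]) ! j \<in> set (iet_top T)"
    unfolding iet_lang_def by blast
  have "\<forall>j<length w. (iet_map T ^^ (i + j)) x \<in> ivl T (w ! j) \<and> w ! j \<in> set (iet_top T)"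
  proof (intro allI impI)
    fix j assume j: "j < length w"
    have e: "(w @ [c]) ! j = w ! j" using j by (simp add: nth_append)
    have "j < length (w @ [c])" using j by simp
    then have "(iet_map T ^^ (i + j)) x \<in> ivl T ((w @ [c]) ! j) \<and> (w @ [c]) ! j \<in> set (iet_top T)" using P by blast
    then show "(iet_map T ^^ (i + j)) x \<in> ivl T (w ! j) \<and> w ! j \<in> set (iet_top T)" unfolding e .
  qed
  then show ?thesis using x unfolding iet_lang_def by blast
qed

lemma cyl_const:
  assumes wfT: "iet_wf T" and I: "Inv T S" and dS: "iet_dom S = cyl T w"
    and d: "d \<in> set (iet_top S)" and x: "x \<in> ivl S d" and y: "y \<in> ivl S d"
    and xc: "x \<in> cyl T (w @ [c])"
  shows "y \<in> cyl T (w @ [c])"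
proof -
  have wf: "iet_wf S" and tw: "tower T S" and sub: "iet_dom S \<subseteq> iet_dom T" using I by (auto simp: Inv_def)
  obtain h ws where h: "h > 0" "length ws = h" and
    P: "\<forall>x\<in>ivl S d. (\<forall>j<h. (iet_map T ^^ j) x \<in> ivl T (ws ! j))
        \<and> (\<forall>j. 0 < j \<and> j < h \<longrightarrow> (iet_map T ^^ j) x \<notin> iet_dom S) \<and> (iet_map T ^^ h) x = iet_map S x"
    using tw d unfolding tower_def by blast
  have xd: "x \<in> iet_dom S" "y \<in> iet_dom S" using ivl_sub_dom[OF wf d] x y by auto
  have yw: "y \<in> cyl T w" using xd dS by simp
  define n where "n = length w"
  have xn: "(iet_map T ^^ n) x \<in> ivl T c" using xc by (simp add: cyl_snoc n_def)
  have domT: "(iet_map T ^^ k) z \<in> iet_dom T" if "z \<in> iet_dom S" for z k using funpow_dom[OF wfT] sub that by blast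
  have "(iet_map T ^^ n) y \<in> ivl T c"
  proof (cases "n < h")
    case True
    have "(iet_map T ^^ n) x \<in> ivl T (ws ! n)" "(iet_map T ^^ n) y \<in> ivl T (ws ! n)" using P x y True by blast+
    then have "ws ! n = c" using ivl_unique[OF wfT _ xn domT[OF xd(1)]] by blast
    then show ?thesis using P y True by auto
  next
    case False
    have sh: "(iet_map T ^^ n) z = (iet_map T ^^ (n - h)) (iet_map S z)" if "z \<in> ivl S d" for z
    proof -
      have nn: "n = (n - h) + h" using False by simp
      have "(iet_map T ^^ n) z = (iet_map T ^^ ((n - h) + h)) z" using nn by simp
      also have "\<dots> = (iet_map T ^^ (n - h)) ((iet_map T ^^ h) z)" by (simp add: funpow_add)
      finally have "(iet_map T ^^ n) z = (iet_map T ^^ (n - h)) ((iet_map T ^^ h) z)" .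
      then show ?thesis using P that by simp
    qed
    have mx: "iet_map S x \<in> cyl T w" "iet_map S y \<in> cyl T w" using map_dom[OF wf] xd dS by auto
    have k: "n - h < length w" using h False by (simp add: n_def)
    have "(iet_map T ^^ (n - h)) (iet_map S x) \<in> ivl T (w ! (n - h))"
      "(iet_map T ^^ (n - h)) (iet_map S y) \<in> ivl T (w ! (n - h))" using mx k by (auto simp: cyl_def)
    then show ?thesis using ivl_unique[OF wfT _ xn domT[OF xd(1)]] sh[OF x] sh[OF y] by metis
  qed
  then show ?thesis using yw by (simp add: cyl_snoc n_def)
qed

lemma cyl_endpoints:
  assumes wfT: "iet_wf T" and I: "Inv T S" and dS: "iet_dom S = cyl T w"
    and J: "cyl T (w @ [c]) = {u..<v}" and uv: "u < v"
  shows "u \<in> Dt S \<and> (v = iet_right S \<or> v \<in> Dt S)"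
proof -
  have wf: "iet_wf S" using I by (simp add: Inv_def)
  have Jsub: "{u..<v} \<subseteq> iet_dom S" using J dS cyl_snoc[of T w c] by auto
  have const: "y \<in> {u..<v}" if "d \<in> set (iet_top S)" "x \<in> ivl S d" "y \<in> ivl S d" "x \<in> {u..<v}" for d x y
  proof -
    have "x \<in> cyl T (w @ [c])" using that(4) J by simp
    then have "y \<in> cyl T (w @ [c])" by (rule cyl_const[OF wfT I dS that(1,2,3)])
    then show ?thesis using J by simp
  qed
  have su: "iet_left S + off_top S d \<le> z" if "z \<in> ivl S d" for d z using that by (simp add: ivl_def)
  have uin: "u \<in> {u..<v}" using uv by simp
  obtain d where d: "d \<in> set (iet_top S)" "u \<in> ivl S d" using dom_cover[OF wf] Jsub uin by blast
  have sd: "iet_left S + off_top S d \<in> ivl S d" by (rule start_in_ivl[OF wf d(1)])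
  have "iet_left S + off_top S d \<in> {u..<v}" using const[OF d(1) d(2) sd uin] .
  then have "u = iet_left S + off_top S d" using su[OF d(2)] by simp
  then have uD: "u \<in> Dt S" using DtI[OF d(1)] by simp
  have vR: "v \<le> iet_right S"
  proof (rule ccontr)
    assume "\<not> v \<le> iet_right S"
    then have "max u (iet_right S) \<in> {u..<v}" using uv by auto
    then show False using Jsub by (auto simp: iet_dom_def)
  qed
  have "v = iet_right S \<or> v \<in> Dt S"
  proof (cases "v = iet_right S")
    case True then show ?thesis by simp
  next
    case False
    then have "v \<in> iet_dom S" using vR Jsub uin by (auto simp: iet_dom_def)
    then obtain d' where d': "d' \<in> set (iet_top S)" "v \<in> ivl S d'" using dom_cover[OF wf] by blast
    define s' where "s' = iet_left S + off_top S d'"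
    have s'i: "s' \<in> ivl S d'" unfolding s'_def by (rule start_in_ivl[OF wf d'(1)])
    have s'v: "s' \<le> v" using su[OF d'(2)] by (simp add: s'_def)
    have "s' = v"
    proof (rule ccontr)
      assume "s' \<noteq> v"
      then have lt: "s' < v" using s'v by simp
      show False
      proof (cases "u \<le> s'")
        case True
        then have "s' \<in> {u..<v}" using lt by simp
        then have "v \<in> {u..<v}" using const[OF d'(1) s'i d'(2)] by blast
        then show False by simp
      next
        case False
        then have "u \<in> ivl S d'" using d'(2) uv by (auto simp: ivl_def s'_def)
        then have "v \<in> {u..<v}" using const[OF d'(1) _ d'(2) uin] by blast
        then show False by simp
      qed
    qed
    then show ?thesis using DtI[OF d'(1)] by (simp add: s'_def)
  qed
  then show ?thesis using uD by simp
qed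

lemma Dt_icut: "iet_wf S \<Longrightarrow> x \<in> Dt S \<Longrightarrow> \<exists>i<length (iet_top S). x = icut S i"
proof -
  assume wf: "iet_wf S" and x: "x \<in> Dt S"
  obtain c where c: "c \<in> set (iet_top S)" "x = iet_left S + off_top S c" using Dt_obtain[OF x] by blast
  define i where "i = length (tw c (iet_top S))"
  have e: "tw c (iet_top S) = take i (iet_top S)" unfolding i_def by (rule takeWhile_eq_take)
  have "i < length (iet_top S)"
  proof (rule ccontr)
    assume "\<not> i < length (iet_top S)"
    then have "tw c (iet_top S) = iet_top S" using e by simp
    then show False using c(1) by (metis (mono_tags, lifting) set_takeWhileD)
  qed
  moreover have "x = icut S i" using c e by (simp add: icut_def off_top_def)
  ultimately show ?thesis by blast
qed

lemma right_icut: "iet_right S = icut S (length (iet_top S))"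
  by (simp add: icut_def iet_right_def)

lemma main_reach:
  assumes wfT: "iet_wf T"
  shows "w \<in> iet_lang T \<Longrightarrow> \<exists>S e. iet_step\<^sup>*\<^sup>* (T, id) (S, e) \<and> Inv T S \<and> idon e S \<and> iet_dom S = cyl T w"
proof (induction w rule: rev_induct)
  case Nil
  show ?case using Inv_refl[OF wfT] by (intro exI[of _ T] exI[of _ id]) (simp add: idon_def cyl_Nil)
next
  case (snoc c w)
  obtain S1 e1 where S1: "iet_step\<^sup>*\<^sup>* (T, id) (S1, e1)" "Inv T S1" "idon e1 S1" "iet_dom S1 = cyl T w"
    using snoc.IH lang_snoc[OF snoc.prems] by blast
  have wf1: "iet_wf S1" using S1(2) by (simp add: Inv_def)
  obtain u v where J: "cyl T (w @ [c]) = {u..<v}" using cyl_interval[OF wfT] by blast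
  have uv: "u < v" using lang_cyl_ne[OF wfT snoc.prems] J by (metis atLeastLessThan_empty not_le)
  have ep: "u \<in> Dt S1" "v = iet_right S1 \<or> v \<in> Dt S1" using cyl_endpoints[OF wfT S1(2) S1(4) J uv] by auto
  obtain i where i: "i \<le> length (iet_top S1)" "v = icut S1 i"
  proof (cases "v = iet_right S1")
    case True then show ?thesis using that right_icut by (metis order_refl)
  next
    case False
    then obtain i where "i < length (iet_top S1)" "v = icut S1 i" using ep(2) Dt_icut[OF wf1] by blast
    then show ?thesis using that[of i] by simp
  qed
  have "goalR T u S1 e1 i" by (rule RP[OF S1(2) S1(3) i(1) ep(1)]) (use uv i in simp)
  then obtain S2 e2 where S2: "iet_step\<^sup>*\<^sup>* (S1, e1) (S2, e2)" "Inv T S2" "idon e2 S2"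
      "iet_left S2 = iet_left S1" "iet_right S2 = v" "u \<in> Dt S2"
    unfolding goalR_def using i by auto
  have wf2: "iet_wf S2" using S2(2) by (simp add: Inv_def)
  obtain j where j: "j < length (iet_top S2)" "u = icut S2 j" using Dt_icut[OF wf2 S2(6)] by blast
  have "goalL T S2 e2 j" by (rule LP[OF S2(2) S2(3) j(1)])
  then obtain S3 e3 where S3: "iet_step\<^sup>*\<^sup>* (S2, e2) (S3, e3)" "Inv T S3" "idon e3 S3"
      "iet_left S3 = u" "iet_right S3 = v"
    unfolding goalL_def using j S2(5) by auto
  have "iet_dom S3 = cyl T (w @ [c])" using S3(4,5) J by (simp add: iet_dom_def)
  moreover have "iet_step\<^sup>*\<^sup>* (T, id) (S3, e3)" using S1(1) S2(1) S3(1) by (meson rtranclp_trans)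
  ultimately show ?case using S3(2,3) by blast
qed

theorem proposition4p17:
  fixes T :: "'a iet" and w :: "'a list"
  assumes "iet_wf T" and "w \<in> iet_lang T"
  shows "\<exists>S e. iet_reach (T, id) (S, e)
           \<and> bij_betw e (iet_dom S) (cyl T w)
           \<and> (\<forall>x\<in>cyl T w. \<exists>n>0. (iet_map T ^^ n) x \<in> cyl T w)
           \<and> (\<forall>x\<in>iet_dom S. e (iet_map S x) = first_return (iet_map T) (cyl T w) (e x))"
proof -
  obtain S e where S: "iet_step\<^sup>*\<^sup>* (T, id) (S, e)" "Inv T S" "idon e S" "iet_dom S = cyl T w"
    using main_reach[OF assms] by blast
  have wf: "iet_wf S" and tw: "tower T S" using S(2) by (auto simp: Inv_def)
  have ret: "\<exists>h>0. (iet_map T ^^ h) x = iet_map S x \<and> (\<forall>j. 0 < j \<and> j < h \<longrightarrow> (iet_map T ^^ j) x \<notin> iet_dom S)"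
    if x: "x \<in> iet_dom S" for x
  proof -
    obtain d where d: "d \<in> set (iet_top S)" "x \<in> ivl S d" using dom_cover[OF wf x] by blast
    obtain h ws where h: "h > 0" and
      P: "\<forall>x\<in>ivl S d. (\<forall>j<h. (iet_map T ^^ j) x \<in> ivl T (ws ! j))
        \<and> (\<forall>j. 0 < j \<and> j < h \<longrightarrow> (iet_map T ^^ j) x \<notin> iet_dom S) \<and> (iet_map T ^^ h) x = iet_map S x"
      using tw d(1) unfolding tower_def by blast
    have "(\<forall>j. 0 < j \<and> j < h \<longrightarrow> (iet_map T ^^ j) x \<notin> iet_dom S)" "(iet_map T ^^ h) x = iet_map S x"
      using bspec[OF P d(2)] by blast+
    then show ?thesis using h by blast
  qed
  have bij: "bij_betw e (iet_dom S) (cyl T w)"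
  proof -
    have "bij_betw id (iet_dom S) (cyl T w)" using S(4) by simp
    moreover have "\<And>x. x \<in> iet_dom S \<Longrightarrow> e x = id x" using S(3) by (simp add: idon_def)
    ultimately show ?thesis using bij_betw_cong by blast
  qed
  have rec: "\<forall>x\<in>cyl T w. \<exists>n>0. (iet_map T ^^ n) x \<in> cyl T w"
  proof
    fix x assume "x \<in> cyl T w"
    then have x: "x \<in> iet_dom S" using S(4) by simp
    obtain h where h: "h > 0" "(iet_map T ^^ h) x = iet_map S x" using ret[OF x] by blast
    then show "\<exists>n>0. (iet_map T ^^ n) x \<in> cyl T w" using map_dom[OF wf x] S(4) by auto
  qed
  have conj: "\<forall>x\<in>iet_dom S. e (iet_map S x) = first_return (iet_map T) (cyl T w) (e x)"
  proof
    fix x assume x: "x \<in> iet_dom S"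
    obtain h where h: "h > 0" "(iet_map T ^^ h) x = iet_map S x"
      "\<forall>j. 0 < j \<and> j < h \<longrightarrow> (iet_map T ^^ j) x \<notin> iet_dom S" using ret[OF x] by blast
    have Sx: "iet_map S x \<in> iet_dom S" using map_dom[OF wf x] .
    have ex: "e x = x" "e (iet_map S x) = iet_map S x" using S(3) x Sx by (auto simp: idon_def)
    have "return_time (iet_map T) (cyl T w) x = h"
      unfolding return_time_def
    proof (rule Least_equality)
      show "0 < h \<and> (iet_map T ^^ h) x \<in> cyl T w" using h Sx S(4) by simp
      fix n assume n: "0 < n \<and> (iet_map T ^^ n) x \<in> cyl T w"
      show "h \<le> n"
      proof (rule ccontr)
        assume "\<not> h \<le> n"
        then show False using h(3) n S(4) by auto
      qed
    qed
    then have "first_return (iet_map T) (cyl T w) x = iet_map S x" using h(2) by (simp add: first_return_def)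
    then show "e (iet_map S x) = first_return (iet_map T) (cyl T w) (e x)" using ex by simp
  qed
  show ?thesis unfolding iet_reach_def using S(1) bij rec conj by blast
qed


end
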